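(* Let $\mathfrak g=G(3)$ with the $\mathbb Z$-grading associated with the parabolic subalgebra $\mathfrak p_{12}^{\rm IV}$ (grading element $\mathsf Z_1+\mathsf Z_2$) and $\mathfrak m=\mathfrak g_-$ its negatively graded part. Then $H^{d,1}(\mathfrak m,\mathfrak g)=0$ for all $d\ge0$.
   Context: $G(3)$: complex exceptional simple Lie superalgebra of dimension $(17|14)$, $\mathfrak g_{\bar0}=G(2)\oplus A(1)$, $\mathfrak g_{\bar1}=\mathbb C^7\boxtimes\mathbb C^2$. With even roots $\pm2\delta,\pm\epsilon_i,\epsilon_i-\epsilon_j$ and odd roots $\pm\delta,\pm\delta\pm\epsilon_i$ ($\epsilon_1+\epsilon_2+\epsilon_3=0$), take simple roots $\alpha_1=\epsilon_2-\epsilon_1,\alpha_2=\epsilon_1-\delta,\alpha_3=\delta$ with dual basis $\mathsf Z_1,\mathsf Z_2,\mathsf Z_3$; the grading is $\mathfrak g_k=\{x:[\mathsf Z_1+\mathsf Z_2,x]=kx\}$, of depth $5$, with $\mathfrak g_-$ of dimension $(6|6)$. $H^{d,1}(\mathfrak m,\mathfrak g)$ is the degree-$d$ component of the first Chevalley–Eilenberg cohomology of $\mathfrak m$ with coefficients in the adjoint module $\mathfrak g$, where $\mathfrak g_j^*$ has degree $-j$. *)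

theory Defs
  imports Complex_Main
begin

text \<open>
  An explicit model of the exceptional simple Lie superalgebra G(3), of dimension (17|14),
  over the complex numbers.  Vectors are functions  nat => complex  supported on {0..<31};
  basis vector i is the indicator of i.  Indices 0..16 are even (g_0 = G(2) + A(1)),
  indices 17..30 are odd (g_1 = C^7 (x) C^2).

  Construction: G(2) is realised as the stabiliser in gl(C^7) of the 3-form
  e1^e2^e3 + e-1^e-2^e-3 + e0^(e1^e-1 + e2^e-2 + e3^e-3) written in a weight basis
  v_0, v_(e1), v_(e2), v_(e3), v_(-e1), v_(-e2), v_(-e3) of C^7;  A(1) = sl(2) acts on
  C^2 = span(s_+, s_-) (weights +delta, -delta);  the odd-odd bracket is
  [u(x)s, v(x)t] = om(s,t) P(u^v) + (2/3) B(u,v) Q(s,t), with B the invariant form on C^7,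
  om the symplectic form on C^2, P the G(2)-projection of so(7), Q(s,t) = s t in sl(2).
  Basis:
0: h1 = diag_V7(0,1,-1,0,-1,1,0) in Cartan of G2 (eps-values (1,-1,0))
1: h2 = diag_V7(0,0,1,-1,0,-1,1) in Cartan of G2 (eps-values (0,1,-1))
2: G2 root vector of root +e1
3: G2 root vector of root -e1
4: G2 root vector of root +e2
5: G2 root vector of root -e2
6: G2 root vector of root +e3
7: G2 root vector of root -e3
8: G2 root vector of root +e1-e2
9: G2 root vector of root +e1-e3
10: G2 root vector of root -e1+e2
11: G2 root vector of root +e2-e3
12: G2 root vector of root -e1+e3
13: G2 root vector of root -e2+e3
14: sl2 element H (eigenvalue 2delta on E)
15: sl2 element E (root 2delta)
16: sl2 element F (root -2delta)
17: odd vector v_(0) (x) s_(+), weight 0 + delta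
18: odd vector v_(0) (x) s_(-), weight 0 - delta
19: odd vector v_(e1) (x) s_(+), weight e1 + delta
20: odd vector v_(e1) (x) s_(-), weight e1 - delta
21: odd vector v_(e2) (x) s_(+), weight e2 + delta
22: odd vector v_(e2) (x) s_(-), weight e2 - delta
23: odd vector v_(e3) (x) s_(+), weight e3 + delta
24: odd vector v_(e3) (x) s_(-), weight e3 - delta
25: odd vector v_(-e1) (x) s_(+), weight -e1 + delta
26: odd vector v_(-e1) (x) s_(-), weight -e1 - delta
27: odd vector v_(-e2) (x) s_(+), weight -e2 + delta
28: odd vector v_(-e2) (x) s_(-), weight -e2 - delta
29: odd vector v_(-e3) (x) s_(+), weight -e3 + delta
30: odd vector v_(-e3) (x) s_(-), weight -e3 - delta

  The Cartan subalgebra is spanned by basis vectors 0, 1, 14; the roots are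
  +-2delta, +-e_i, e_i - e_j (even) and +-delta, +-delta +- e_i (odd), e1+e2+e3 = 0.
  With simple roots a1 = e2 - e1, a2 = e1 - delta, a3 = delta and dual basis Z1, Z2, Z3,
  the grading element Z1 + Z2 is the Cartan element taking the values
  e1 -> 1, e2 -> 2, e3 -> -3, delta -> 0, namely h1 + 3 h2 (basis vectors 0 and 1).
\<close>

type_synonym g3vec = "nat \<Rightarrow> complex"

text \<open>Nonzero structure constants (i, j, k, p, q):  [e_i, e_j] has e_k-coefficient p/q.\<close>
definition g3_table :: "(nat \<times> nat \<times> nat \<times> int \<times> int) list" where
  "g3_table = [
   (0, 2, 2, 1, 1),
   (0, 3, 3, -1, 1),
   (0, 4, 4, -1, 1),
   (0, 5, 5, 1, 1),
   (0, 8, 8, 2, 1),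
   (0, 9, 9, 1, 1),
   (0, 10, 10, -2, 1),
   (0, 11, 11, -1, 1),
   (0, 12, 12, -1, 1),
   (0, 13, 13, 1, 1),
   (0, 19, 19, 1, 1),
   (0, 20, 20, 1, 1),
   (0, 21, 21, -1, 1),
   (0, 22, 22, -1, 1),
   (0, 25, 25, -1, 1),
   (0, 26, 26, -1, 1),
   (0, 27, 27, 1, 1),
   (0, 28, 28, 1, 1),
   (1, 4, 4, 1, 1),
   (1, 5, 5, -1, 1),
   (1, 6, 6, -1, 1),
   (1, 7, 7, 1, 1),
   (1, 8, 8, -1, 1),
   (1, 9, 9, 1, 1),
   (1, 10, 10, 1, 1),
   (1, 11, 11, 2, 1),
   (1, 12, 12, -1, 1),
   (1, 13, 13, -2, 1),
   (1, 21, 21, 1, 1),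
   (1, 22, 22, 1, 1),
   (1, 23, 23, -1, 1),
   (1, 24, 24, -1, 1),
   (1, 27, 27, -1, 1),
   (1, 28, 28, -1, 1),
   (1, 29, 29, 1, 1),
   (1, 30, 30, 1, 1),
   (2, 0, 2, -1, 1),
   (2, 3, 0, 1, 1),
   (2, 3, 1, 1, 2),
   (2, 4, 7, -4, 1),
   (2, 5, 8, -3, 2),
   (2, 6, 5, -4, 1),
   (2, 7, 9, -3, 2),
   (2, 10, 4, -1, 1),
   (2, 12, 6, 1, 1),
   (2, 17, 19, 2, 1),
   (2, 18, 20, 2, 1),
   (2, 21, 29, 1, 1),
   (2, 22, 30, 1, 1),
   (2, 23, 27, -1, 1),
   (2, 24, 28, -1, 1),
   (2, 25, 17, 1, 1),
   (2, 26, 18, 1, 1),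
   (3, 0, 3, 1, 1),
   (3, 2, 0, -1, 1),
   (3, 2, 1, -1, 2),
   (3, 4, 10, -3, 2),
   (3, 5, 6, -1, 2),
   (3, 6, 12, 3, 2),
   (3, 7, 4, -1, 2),
   (3, 8, 5, -1, 1),
   (3, 9, 7, -1, 1),
   (3, 17, 25, 1, 1),
   (3, 18, 26, 1, 1),
   (3, 19, 17, 1, 2),
   (3, 20, 18, 1, 2),
   (3, 27, 23, -1, 2),
   (3, 28, 24, -1, 2),
   (3, 29, 21, 1, 2),
   (3, 30, 22, 1, 2),
   (4, 0, 4, 1, 1),
   (4, 1, 4, -1, 1),
   (4, 2, 7, 4, 1),
   (4, 3, 10, 3, 2),
   (4, 5, 0, 1, 2),
   (4, 5, 1, -1, 2),
   (4, 6, 3, -4, 1),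
   (4, 7, 11, 3, 2),
   (4, 8, 2, -1, 1),
   (4, 13, 6, -1, 1),
   (4, 17, 21, -2, 1),
   (4, 18, 22, -2, 1),
   (4, 19, 29, 1, 1),
   (4, 20, 30, 1, 1),
   (4, 23, 25, -1, 1),
   (4, 24, 26, -1, 1),
   (4, 27, 17, -1, 1),
   (4, 28, 18, -1, 1),
   (5, 0, 5, -1, 1),
   (5, 1, 5, 1, 1),
   (5, 2, 8, 3, 2),
   (5, 3, 6, 1, 2),
   (5, 4, 0, -1, 2),
   (5, 4, 1, 1, 2),
   (5, 6, 13, 3, 2),
   (5, 7, 2, -1, 2),
   (5, 10, 3, -1, 1),
   (5, 11, 7, -1, 1),
   (5, 17, 27, 1, 1),
   (5, 18, 28, 1, 1),
   (5, 21, 17, 1, 2),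
   (5, 22, 18, 1, 2),
   (5, 25, 23, 1, 2),
   (5, 26, 24, 1, 2),
   (5, 29, 19, -1, 2),
   (5, 30, 20, -1, 2),
   (6, 1, 6, 1, 1),
   (6, 2, 5, 4, 1),
   (6, 3, 12, -3, 2),
   (6, 4, 3, 4, 1),
   (6, 5, 13, -3, 2),
   (6, 7, 0, -1, 2),
   (6, 7, 1, -1, 1),
   (6, 9, 2, 1, 1),
   (6, 11, 4, -1, 1),
   (6, 17, 23, 2, 1),
   (6, 18, 24, 2, 1),
   (6, 19, 27, 1, 1),
   (6, 20, 28, 1, 1),
   (6, 21, 25, -1, 1),
   (6, 22, 26, -1, 1),
   (6, 29, 17, 1, 1),
   (6, 30, 18, 1, 1),
   (7, 1, 7, -1, 1),
   (7, 2, 9, 3, 2),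
   (7, 3, 4, 1, 2),
   (7, 4, 11, -3, 2),
   (7, 5, 2, 1, 2),
   (7, 6, 0, 1, 2),
   (7, 6, 1, 1, 1),
   (7, 12, 3, -1, 1),
   (7, 13, 5, -1, 1),
   (7, 17, 29, 1, 1),
   (7, 18, 30, 1, 1),
   (7, 23, 17, 1, 2),
   (7, 24, 18, 1, 2),
   (7, 25, 21, -1, 2),
   (7, 26, 22, -1, 2),
   (7, 27, 19, 1, 2),
   (7, 28, 20, 1, 2),
   (8, 0, 8, -2, 1),
   (8, 1, 8, 1, 1),
   (8, 3, 5, 1, 1),
   (8, 4, 2, 1, 1),
   (8, 10, 0, 1, 1),
   (8, 11, 9, -1, 1),
   (8, 12, 13, 1, 1),
   (8, 21, 19, -1, 1),
   (8, 22, 20, -1, 1),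
   (8, 25, 27, 1, 1),
   (8, 26, 28, 1, 1),
   (9, 0, 9, -1, 1),
   (9, 1, 9, -1, 1),
   (9, 3, 7, 1, 1),
   (9, 6, 2, -1, 1),
   (9, 10, 11, 1, 1),
   (9, 12, 0, 1, 1),
   (9, 12, 1, 1, 1),
   (9, 13, 8, -1, 1),
   (9, 23, 19, -1, 1),
   (9, 24, 20, -1, 1),
   (9, 25, 29, 1, 1),
   (9, 26, 30, 1, 1),
   (10, 0, 10, 2, 1),
   (10, 1, 10, -1, 1),
   (10, 2, 4, 1, 1),
   (10, 5, 3, 1, 1),
   (10, 8, 0, -1, 1),
   (10, 9, 11, -1, 1),
   (10, 13, 12, 1, 1),
   (10, 19, 21, -1, 1),
   (10, 20, 22, -1, 1),
   (10, 27, 25, 1, 1),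
   (10, 28, 26, 1, 1),
   (11, 0, 11, 1, 1),
   (11, 1, 11, -2, 1),
   (11, 5, 7, 1, 1),
   (11, 6, 4, 1, 1),
   (11, 8, 9, 1, 1),
   (11, 12, 10, -1, 1),
   (11, 13, 1, 1, 1),
   (11, 23, 21, -1, 1),
   (11, 24, 22, -1, 1),
   (11, 27, 29, 1, 1),
   (11, 28, 30, 1, 1),
   (12, 0, 12, 1, 1),
   (12, 1, 12, 1, 1),
   (12, 2, 6, -1, 1),
   (12, 7, 3, 1, 1),
   (12, 8, 13, -1, 1),
   (12, 9, 0, -1, 1),
   (12, 9, 1, -1, 1),
   (12, 11, 10, 1, 1),
   (12, 19, 23, -1, 1),
   (12, 20, 24, -1, 1),
   (12, 29, 25, 1, 1),
   (12, 30, 26, 1, 1),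
   (13, 0, 13, -1, 1),
   (13, 1, 13, 2, 1),
   (13, 4, 6, 1, 1),
   (13, 7, 5, 1, 1),
   (13, 9, 8, 1, 1),
   (13, 10, 12, -1, 1),
   (13, 11, 1, -1, 1),
   (13, 21, 23, -1, 1),
   (13, 22, 24, -1, 1),
   (13, 29, 27, 1, 1),
   (13, 30, 28, 1, 1),
   (14, 15, 15, 2, 1),
   (14, 16, 16, -2, 1),
   (14, 17, 17, 1, 1),
   (14, 18, 18, -1, 1),
   (14, 19, 19, 1, 1),
   (14, 20, 20, -1, 1),
   (14, 21, 21, 1, 1),
   (14, 22, 22, -1, 1),
   (14, 23, 23, 1, 1),
   (14, 24, 24, -1, 1),
   (14, 25, 25, 1, 1),
   (14, 26, 26, -1, 1),
   (14, 27, 27, 1, 1),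
   (14, 28, 28, -1, 1),
   (14, 29, 29, 1, 1),
   (14, 30, 30, -1, 1),
   (15, 14, 15, -2, 1),
   (15, 16, 14, 1, 1),
   (15, 18, 17, 1, 1),
   (15, 20, 19, 1, 1),
   (15, 22, 21, 1, 1),
   (15, 24, 23, 1, 1),
   (15, 26, 25, 1, 1),
   (15, 28, 27, 1, 1),
   (15, 30, 29, 1, 1),
   (16, 14, 16, 2, 1),
   (16, 15, 14, -1, 1),
   (16, 17, 18, 1, 1),
   (16, 19, 20, 1, 1),
   (16, 21, 22, 1, 1),
   (16, 23, 24, 1, 1),
   (16, 25, 26, 1, 1),
   (16, 27, 28, 1, 1),
   (16, 29, 30, 1, 1),
   (17, 2, 19, -2, 1),
   (17, 3, 25, -1, 1),
   (17, 4, 21, 2, 1),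
   (17, 5, 27, -1, 1),
   (17, 6, 23, -2, 1),
   (17, 7, 29, -1, 1),
   (17, 14, 17, -1, 1),
   (17, 16, 18, -1, 1),
   (17, 17, 15, -8, 3),
   (17, 18, 14, 4, 3),
   (17, 20, 2, 2, 3),
   (17, 22, 4, -2, 3),
   (17, 24, 6, 2, 3),
   (17, 26, 3, 4, 3),
   (17, 28, 5, 4, 3),
   (17, 30, 7, 4, 3),
   (18, 2, 20, -2, 1),
   (18, 3, 26, -1, 1),
   (18, 4, 22, 2, 1),
   (18, 5, 28, -1, 1),
   (18, 6, 24, -2, 1),
   (18, 7, 30, -1, 1),
   (18, 14, 18, 1, 1),
   (18, 15, 17, -1, 1),
   (18, 17, 14, 4, 3),
   (18, 18, 16, 8, 3),
   (18, 19, 2, -2, 3),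
   (18, 21, 4, 2, 3),
   (18, 23, 6, -2, 3),
   (18, 25, 3, -4, 3),
   (18, 27, 5, -4, 3),
   (18, 29, 7, -4, 3),
   (19, 0, 19, -1, 1),
   (19, 3, 17, -1, 2),
   (19, 4, 29, -1, 1),
   (19, 6, 27, -1, 1),
   (19, 10, 21, 1, 1),
   (19, 12, 23, 1, 1),
   (19, 14, 19, -1, 1),
   (19, 16, 20, -1, 1),
   (19, 18, 2, -2, 3),
   (19, 22, 7, 2, 3),
   (19, 24, 5, -2, 3),
   (19, 25, 15, 4, 3),
   (19, 26, 0, 2, 3),
   (19, 26, 1, 1, 3),
   (19, 26, 14, -2, 3),
   (19, 28, 8, -1, 1),
   (19, 30, 9, -1, 1),
   (20, 0, 20, -1, 1),
   (20, 3, 18, -1, 2),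
   (20, 4, 30, -1, 1),
   (20, 6, 28, -1, 1),
   (20, 10, 22, 1, 1),
   (20, 12, 24, 1, 1),
   (20, 14, 20, 1, 1),
   (20, 15, 19, -1, 1),
   (20, 17, 2, 2, 3),
   (20, 21, 7, -2, 3),
   (20, 23, 5, 2, 3),
   (20, 25, 0, -2, 3),
   (20, 25, 1, -1, 3),
   (20, 25, 14, -2, 3),
   (20, 26, 16, -4, 3),
   (20, 27, 8, 1, 1),
   (20, 29, 9, 1, 1),
   (21, 0, 21, 1, 1),
   (21, 1, 21, -1, 1),
   (21, 2, 29, -1, 1),
   (21, 5, 17, -1, 2),
   (21, 6, 25, 1, 1),
   (21, 8, 19, 1, 1),
   (21, 13, 23, 1, 1),
   (21, 14, 21, -1, 1),
   (21, 16, 22, -1, 1),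
   (21, 18, 4, 2, 3),
   (21, 20, 7, -2, 3),
   (21, 24, 3, 2, 3),
   (21, 26, 10, -1, 1),
   (21, 27, 15, 4, 3),
   (21, 28, 0, -1, 3),
   (21, 28, 1, 1, 3),
   (21, 28, 14, -2, 3),
   (21, 30, 11, -1, 1),
   (22, 0, 22, 1, 1),
   (22, 1, 22, -1, 1),
   (22, 2, 30, -1, 1),
   (22, 5, 18, -1, 2),
   (22, 6, 26, 1, 1),
   (22, 8, 20, 1, 1),
   (22, 13, 24, 1, 1),
   (22, 14, 22, 1, 1),
   (22, 15, 21, -1, 1),
   (22, 17, 4, -2, 3),
   (22, 19, 7, 2, 3),
   (22, 23, 3, -2, 3),
   (22, 25, 10, 1, 1),
   (22, 27, 0, 1, 3),
   (22, 27, 1, -1, 3),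
   (22, 27, 14, -2, 3),
   (22, 28, 16, -4, 3),
   (22, 29, 11, 1, 1),
   (23, 1, 23, 1, 1),
   (23, 2, 27, 1, 1),
   (23, 4, 25, 1, 1),
   (23, 7, 17, -1, 2),
   (23, 9, 19, 1, 1),
   (23, 11, 21, 1, 1),
   (23, 14, 23, -1, 1),
   (23, 16, 24, -1, 1),
   (23, 18, 6, -2, 3),
   (23, 20, 5, 2, 3),
   (23, 22, 3, -2, 3),
   (23, 26, 12, -1, 1),
   (23, 28, 13, -1, 1),
   (23, 29, 15, 4, 3),
   (23, 30, 0, -1, 3),
   (23, 30, 1, -2, 3),
   (23, 30, 14, -2, 3),
   (24, 1, 24, 1, 1),
   (24, 2, 28, 1, 1),
   (24, 4, 26, 1, 1),
   (24, 7, 18, -1, 2),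
   (24, 9, 20, 1, 1),
   (24, 11, 22, 1, 1),
   (24, 14, 24, 1, 1),
   (24, 15, 23, -1, 1),
   (24, 17, 6, 2, 3),
   (24, 19, 5, -2, 3),
   (24, 21, 3, 2, 3),
   (24, 25, 12, 1, 1),
   (24, 27, 13, 1, 1),
   (24, 29, 0, 1, 3),
   (24, 29, 1, 2, 3),
   (24, 29, 14, -2, 3),
   (24, 30, 16, -4, 3),
   (25, 0, 25, 1, 1),
   (25, 2, 17, -1, 1),
   (25, 5, 23, -1, 2),
   (25, 7, 21, 1, 2),
   (25, 8, 27, -1, 1),
   (25, 9, 29, -1, 1),
   (25, 14, 25, -1, 1),
   (25, 16, 26, -1, 1),
   (25, 18, 3, -4, 3),
   (25, 19, 15, 4, 3),
   (25, 20, 0, -2, 3),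
   (25, 20, 1, -1, 3),
   (25, 20, 14, -2, 3),
   (25, 22, 10, 1, 1),
   (25, 24, 12, 1, 1),
   (25, 28, 6, -1, 3),
   (25, 30, 4, -1, 3),
   (26, 0, 26, 1, 1),
   (26, 2, 18, -1, 1),
   (26, 5, 24, -1, 2),
   (26, 7, 22, 1, 2),
   (26, 8, 28, -1, 1),
   (26, 9, 30, -1, 1),
   (26, 14, 26, 1, 1),
   (26, 15, 25, -1, 1),
   (26, 17, 3, 4, 3),
   (26, 19, 0, 2, 3),
   (26, 19, 1, 1, 3),
   (26, 19, 14, -2, 3),
   (26, 20, 16, -4, 3),
   (26, 21, 10, -1, 1),
   (26, 23, 12, -1, 1),
   (26, 27, 6, 1, 3),
   (26, 29, 4, 1, 3),
   (27, 0, 27, -1, 1),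
   (27, 1, 27, 1, 1),
   (27, 3, 23, 1, 2),
   (27, 4, 17, 1, 1),
   (27, 7, 19, -1, 2),
   (27, 10, 25, -1, 1),
   (27, 11, 29, -1, 1),
   (27, 14, 27, -1, 1),
   (27, 16, 28, -1, 1),
   (27, 18, 5, -4, 3),
   (27, 20, 8, 1, 1),
   (27, 21, 15, 4, 3),
   (27, 22, 0, 1, 3),
   (27, 22, 1, -1, 3),
   (27, 22, 14, -2, 3),
   (27, 24, 13, 1, 1),
   (27, 26, 6, 1, 3),
   (27, 30, 2, -1, 3),
   (28, 0, 28, -1, 1),
   (28, 1, 28, 1, 1),
   (28, 3, 24, 1, 2),
   (28, 4, 18, 1, 1),
   (28, 7, 20, -1, 2),
   (28, 10, 26, -1, 1),
   (28, 11, 30, -1, 1),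
   (28, 14, 28, 1, 1),
   (28, 15, 27, -1, 1),
   (28, 17, 5, 4, 3),
   (28, 19, 8, -1, 1),
   (28, 21, 0, -1, 3),
   (28, 21, 1, 1, 3),
   (28, 21, 14, -2, 3),
   (28, 22, 16, -4, 3),
   (28, 23, 13, -1, 1),
   (28, 25, 6, -1, 3),
   (28, 29, 2, 1, 3),
   (29, 1, 29, -1, 1),
   (29, 3, 21, -1, 2),
   (29, 5, 19, 1, 2),
   (29, 6, 17, -1, 1),
   (29, 12, 25, -1, 1),
   (29, 13, 27, -1, 1),
   (29, 14, 29, -1, 1),
   (29, 16, 30, -1, 1),
   (29, 18, 7, -4, 3),
   (29, 20, 9, 1, 1),
   (29, 22, 11, 1, 1),
   (29, 23, 15, 4, 3),
   (29, 24, 0, 1, 3),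
   (29, 24, 1, 2, 3),
   (29, 24, 14, -2, 3),
   (29, 26, 4, 1, 3),
   (29, 28, 2, 1, 3),
   (30, 1, 30, -1, 1),
   (30, 3, 22, -1, 2),
   (30, 5, 20, 1, 2),
   (30, 6, 18, -1, 1),
   (30, 12, 26, -1, 1),
   (30, 13, 28, -1, 1),
   (30, 14, 30, 1, 1),
   (30, 15, 29, -1, 1),
   (30, 17, 7, 4, 3),
   (30, 19, 9, -1, 1),
   (30, 21, 11, -1, 1),
   (30, 23, 0, -1, 3),
   (30, 23, 1, -2, 3),
   (30, 23, 14, -2, 3),
   (30, 24, 16, -4, 3),
   (30, 25, 4, -1, 3),
   (30, 27, 2, -1, 3)
  ]"

definition g3_sc :: "nat \<Rightarrow> nat \<Rightarrow> nat \<Rightarrow> complex" where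
  "g3_sc i j k = sum_list (map (\<lambda>(a, b, c, p, q).
      if a = i \<and> b = j \<and> c = k then of_int p / of_int q else 0) g3_table)"

definition g3_space :: "g3vec set" where
  "g3_space = {x. \<forall>i\<ge>31. x i = 0}"

definition g3_par :: "nat \<Rightarrow> nat" where
  "g3_par i = (if i < 17 then 0 else 1)"

definition g3_hom :: "nat \<Rightarrow> g3vec set" where
  "g3_hom p = {x \<in> g3_space. \<forall>i. g3_par i \<noteq> p \<longrightarrow> x i = 0}"

definition g3_ppart :: "nat \<Rightarrow> g3vec \<Rightarrow> g3vec" where
  "g3_ppart p x = (\<lambda>i. if i < 31 \<and> g3_par i = p then x i else 0)"

definition g3_br :: "g3vec \<Rightarrow> g3vec \<Rightarrow> g3vec" where
  "g3_br x y = (\<lambda>k. if k < 31 then (\<Sum>i<31. \<Sum>j<31. x i * y j * g3_sc i j k) else 0)"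

definition g3_Z :: g3vec where
  "g3_Z = (\<lambda>i. if i = 0 then 1 else if i = 1 then 3 else 0)"

definition g3_grade :: "int \<Rightarrow> g3vec set" where
  "g3_grade k = {x \<in> g3_space. g3_br g3_Z x = (\<lambda>i. of_int k * x i)}"

definition g3_m :: "g3vec set" where
  "g3_m = {x. \<exists>S f. finite S \<and> S \<subseteq> {k. k < 0} \<and> (\<forall>k\<in>S. f k \<in> g3_grade k)
                 \<and> x = (\<lambda>i. \<Sum>k\<in>S. f k i)}"

text \<open>Degree-d 1-cochains: complex-linear maps m -> g sending m \<inter> g_j into g_(j+d)
  (g_j^* has degree -j).\<close>
definition g3_C1 :: "int \<Rightarrow> (g3vec \<Rightarrow> g3vec) set" where
  "g3_C1 d = {\<phi>. (\<forall>x\<in>g3_m. \<phi> x \<in> g3_space)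
     \<and> (\<forall>x\<in>g3_m. \<forall>y\<in>g3_m. \<phi> (\<lambda>i. x i + y i) = (\<lambda>i. \<phi> x i + \<phi> y i))
     \<and> (\<forall>x\<in>g3_m. \<forall>c::complex. \<phi> (\<lambda>i. c * x i) = (\<lambda>i. c * \<phi> x i))
     \<and> (\<forall>j<0. \<forall>x\<in>g3_grade j. \<phi> x \<in> g3_grade (j + d))}"

definition g3_d0 :: "g3vec \<Rightarrow> nat \<Rightarrow> g3vec \<Rightarrow> g3vec" where
  "g3_d0 v a x = (\<lambda>i. \<Sum>p\<in>{0,1::nat}. (-1) ^ (a * p) * g3_br x (g3_ppart p v) i)"

text \<open>Chevalley--Eilenberg differential on 1-cochains, evaluated on homogeneous x (parity a),
  y (parity b); phi is split into its parity components phi_p (phi_p(x) = parity-(a+p) part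
  of phi(x)):
  (d phi)(x,y) = sum_p [ (-1)^(a p) [x, phi_p y] - (-1)^(b (a+p)) [y, phi_p x] ] - phi [x,y].\<close>
definition g3_d1 :: "(g3vec \<Rightarrow> g3vec) \<Rightarrow> nat \<Rightarrow> nat \<Rightarrow> g3vec \<Rightarrow> g3vec \<Rightarrow> g3vec" where
  "g3_d1 \<phi> a b x y = (\<lambda>i.
      (\<Sum>p\<in>{0,1::nat}.
          (-1) ^ (a * p) * g3_br x (g3_ppart ((b + p) mod 2) (\<phi> y)) i
        - (-1) ^ (b * (a + p)) * g3_br y (g3_ppart ((a + p) mod 2) (\<phi> x)) i)
      - \<phi> (g3_br x y) i)"

definition g3_Z1 :: "int \<Rightarrow> (g3vec \<Rightarrow> g3vec) set" where
  "g3_Z1 d = {\<phi> \<in> g3_C1 d. \<forall>a\<in>{0,1}. \<forall>b\<in>{0,1}. \<forall>x\<in>g3_m \<inter> g3_hom a. \<forall>y\<in>g3_m \<inter> g3_hom b.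
                g3_d1 \<phi> a b x y = (\<lambda>_. 0)}"

definition g3_B1 :: "int \<Rightarrow> (g3vec \<Rightarrow> g3vec) set" where
  "g3_B1 d = {\<phi> \<in> g3_C1 d. \<exists>v\<in>g3_grade d. \<forall>a\<in>{0,1}. \<forall>x\<in>g3_m \<inter> g3_hom a. \<phi> x = g3_d0 v a x}"

end

theory Submission
  imports Defs
begin

type_synonym ent = "nat \<times> nat \<times> nat \<times> int \<times> int"

definition rowsI :: "(nat \<times> ent list) list" where
  "rowsI = [(0, [(0, 2, 2, 1, 1), (0, 3, 3, -1, 1), (0, 4, 4, -1, 1), (0, 5, 5, 1, 1), (0, 8, 8, 2, 1), (0, 9, 9, 1, 1), (0, 10, 10, -2, 1), (0, 11, 11, -1, 1), (0, 12, 12, -1, 1), (0, 13, 13, 1, 1), (0, 19, 19, 1, 1), (0, 20, 20, 1, 1), (0, 21, 21, -1, 1), (0, 22, 22, -1, 1), (0, 25, 25, -1, 1), (0, 26, 26, -1, 1), (0, 27, 27, 1, 1), (0, 28, 28, 1, 1)]),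
    (1, [(1, 4, 4, 1, 1), (1, 5, 5, -1, 1), (1, 6, 6, -1, 1), (1, 7, 7, 1, 1), (1, 8, 8, -1, 1), (1, 9, 9, 1, 1), (1, 10, 10, 1, 1), (1, 11, 11, 2, 1), (1, 12, 12, -1, 1), (1, 13, 13, -2, 1), (1, 21, 21, 1, 1), (1, 22, 22, 1, 1), (1, 23, 23, -1, 1), (1, 24, 24, -1, 1), (1, 27, 27, -1, 1), (1, 28, 28, -1, 1), (1, 29, 29, 1, 1), (1, 30, 30, 1, 1)]),
    (2, [(2, 0, 2, -1, 1), (2, 3, 0, 1, 1), (2, 3, 1, 1, 2), (2, 4, 7, -4, 1), (2, 5, 8, -3, 2), (2, 6, 5, -4, 1), (2, 7, 9, -3, 2), (2, 10, 4, -1, 1), (2, 12, 6, 1, 1), (2, 17, 19, 2, 1), (2, 18, 20, 2, 1), (2, 21, 29, 1, 1), (2, 22, 30, 1, 1), (2, 23, 27, -1, 1), (2, 24, 28, -1, 1), (2, 25, 17, 1, 1), (2, 26, 18, 1, 1)]),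
    (3, [(3, 0, 3, 1, 1), (3, 2, 0, -1, 1), (3, 2, 1, -1, 2), (3, 4, 10, -3, 2), (3, 5, 6, -1, 2), (3, 6, 12, 3, 2), (3, 7, 4, -1, 2), (3, 8, 5, -1, 1), (3, 9, 7, -1, 1), (3, 17, 25, 1, 1), (3, 18, 26, 1, 1), (3, 19, 17, 1, 2), (3, 20, 18, 1, 2), (3, 27, 23, -1, 2), (3, 28, 24, -1, 2), (3, 29, 21, 1, 2), (3, 30, 22, 1, 2)]),
    (4, [(4, 0, 4, 1, 1), (4, 1, 4, -1, 1), (4, 2, 7, 4, 1), (4, 3, 10, 3, 2), (4, 5, 0, 1, 2), (4, 5, 1, -1, 2), (4, 6, 3, -4, 1), (4, 7, 11, 3, 2), (4, 8, 2, -1, 1), (4, 13, 6, -1, 1), (4, 17, 21, -2, 1), (4, 18, 22, -2, 1), (4, 19, 29, 1, 1), (4, 20, 30, 1, 1), (4, 23, 25, -1, 1), (4, 24, 26, -1, 1), (4, 27, 17, -1, 1), (4, 28, 18, -1, 1)]),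
    (5, [(5, 0, 5, -1, 1), (5, 1, 5, 1, 1), (5, 2, 8, 3, 2), (5, 3, 6, 1, 2), (5, 4, 0, -1, 2), (5, 4, 1, 1, 2), (5, 6, 13, 3, 2), (5, 7, 2, -1, 2), (5, 10, 3, -1, 1), (5, 11, 7, -1, 1), (5, 17, 27, 1, 1), (5, 18, 28, 1, 1), (5, 21, 17, 1, 2), (5, 22, 18, 1, 2), (5, 25, 23, 1, 2), (5, 26, 24, 1, 2), (5, 29, 19, -1, 2), (5, 30, 20, -1, 2)]),
    (6, [(6, 1, 6, 1, 1), (6, 2, 5, 4, 1), (6, 3, 12, -3, 2), (6, 4, 3, 4, 1), (6, 5, 13, -3, 2), (6, 7, 0, -1, 2), (6, 7, 1, -1, 1), (6, 9, 2, 1, 1), (6, 11, 4, -1, 1), (6, 17, 23, 2, 1), (6, 18, 24, 2, 1), (6, 19, 27, 1, 1), (6, 20, 28, 1, 1), (6, 21, 25, -1, 1), (6, 22, 26, -1, 1), (6, 29, 17, 1, 1), (6, 30, 18, 1, 1)]),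
    (7, [(7, 1, 7, -1, 1), (7, 2, 9, 3, 2), (7, 3, 4, 1, 2), (7, 4, 11, -3, 2), (7, 5, 2, 1, 2), (7, 6, 0, 1, 2), (7, 6, 1, 1, 1), (7, 12, 3, -1, 1), (7, 13, 5, -1, 1), (7, 17, 29, 1, 1), (7, 18, 30, 1, 1), (7, 23, 17, 1, 2), (7, 24, 18, 1, 2), (7, 25, 21, -1, 2), (7, 26, 22, -1, 2), (7, 27, 19, 1, 2), (7, 28, 20, 1, 2)]),
    (8, [(8, 0, 8, -2, 1), (8, 1, 8, 1, 1), (8, 3, 5, 1, 1), (8, 4, 2, 1, 1), (8, 10, 0, 1, 1), (8, 11, 9, -1, 1), (8, 12, 13, 1, 1), (8, 21, 19, -1, 1), (8, 22, 20, -1, 1), (8, 25, 27, 1, 1), (8, 26, 28, 1, 1)]),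
    (9, [(9, 0, 9, -1, 1), (9, 1, 9, -1, 1), (9, 3, 7, 1, 1), (9, 6, 2, -1, 1), (9, 10, 11, 1, 1), (9, 12, 0, 1, 1), (9, 12, 1, 1, 1), (9, 13, 8, -1, 1), (9, 23, 19, -1, 1), (9, 24, 20, -1, 1), (9, 25, 29, 1, 1), (9, 26, 30, 1, 1)]),
    (10, [(10, 0, 10, 2, 1), (10, 1, 10, -1, 1), (10, 2, 4, 1, 1), (10, 5, 3, 1, 1), (10, 8, 0, -1, 1), (10, 9, 11, -1, 1), (10, 13, 12, 1, 1), (10, 19, 21, -1, 1), (10, 20, 22, -1, 1), (10, 27, 25, 1, 1), (10, 28, 26, 1, 1)]),
    (11, [(11, 0, 11, 1, 1), (11, 1, 11, -2, 1), (11, 5, 7, 1, 1), (11, 6, 4, 1, 1), (11, 8, 9, 1, 1), (11, 12, 10, -1, 1), (11, 13, 1, 1, 1), (11, 23, 21, -1, 1), (11, 24, 22, -1, 1), (11, 27, 29, 1, 1), (11, 28, 30, 1, 1)]),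
    (12, [(12, 0, 12, 1, 1), (12, 1, 12, 1, 1), (12, 2, 6, -1, 1), (12, 7, 3, 1, 1), (12, 8, 13, -1, 1), (12, 9, 0, -1, 1), (12, 9, 1, -1, 1), (12, 11, 10, 1, 1), (12, 19, 23, -1, 1), (12, 20, 24, -1, 1), (12, 29, 25, 1, 1), (12, 30, 26, 1, 1)]),
    (13, [(13, 0, 13, -1, 1), (13, 1, 13, 2, 1), (13, 4, 6, 1, 1), (13, 7, 5, 1, 1), (13, 9, 8, 1, 1), (13, 10, 12, -1, 1), (13, 11, 1, -1, 1), (13, 21, 23, -1, 1), (13, 22, 24, -1, 1), (13, 29, 27, 1, 1), (13, 30, 28, 1, 1)]),
    (14, [(14, 15, 15, 2, 1), (14, 16, 16, -2, 1), (14, 17, 17, 1, 1), (14, 18, 18, -1, 1), (14, 19, 19, 1, 1), (14, 20, 20, -1, 1), (14, 21, 21, 1, 1), (14, 22, 22, -1, 1), (14, 23, 23, 1, 1), (14, 24, 24, -1, 1), (14, 25, 25, 1, 1), (14, 26, 26, -1, 1), (14, 27, 27, 1, 1), (14, 28, 28, -1, 1), (14, 29, 29, 1, 1), (14, 30, 30, -1, 1)]),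
    (15, [(15, 14, 15, -2, 1), (15, 16, 14, 1, 1), (15, 18, 17, 1, 1), (15, 20, 19, 1, 1), (15, 22, 21, 1, 1), (15, 24, 23, 1, 1), (15, 26, 25, 1, 1), (15, 28, 27, 1, 1), (15, 30, 29, 1, 1)]),
    (16, [(16, 14, 16, 2, 1), (16, 15, 14, -1, 1), (16, 17, 18, 1, 1), (16, 19, 20, 1, 1), (16, 21, 22, 1, 1), (16, 23, 24, 1, 1), (16, 25, 26, 1, 1), (16, 27, 28, 1, 1), (16, 29, 30, 1, 1)]),
    (17, [(17, 2, 19, -2, 1), (17, 3, 25, -1, 1), (17, 4, 21, 2, 1), (17, 5, 27, -1, 1), (17, 6, 23, -2, 1), (17, 7, 29, -1, 1), (17, 14, 17, -1, 1), (17, 16, 18, -1, 1), (17, 17, 15, -8, 3), (17, 18, 14, 4, 3), (17, 20, 2, 2, 3), (17, 22, 4, -2, 3), (17, 24, 6, 2, 3), (17, 26, 3, 4, 3), (17, 28, 5, 4, 3), (17, 30, 7, 4, 3)]),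
    (18, [(18, 2, 20, -2, 1), (18, 3, 26, -1, 1), (18, 4, 22, 2, 1), (18, 5, 28, -1, 1), (18, 6, 24, -2, 1), (18, 7, 30, -1, 1), (18, 14, 18, 1, 1), (18, 15, 17, -1, 1), (18, 17, 14, 4, 3), (18, 18, 16, 8, 3), (18, 19, 2, -2, 3), (18, 21, 4, 2, 3), (18, 23, 6, -2, 3), (18, 25, 3, -4, 3), (18, 27, 5, -4, 3), (18, 29, 7, -4, 3)]),
    (19, [(19, 0, 19, -1, 1), (19, 3, 17, -1, 2), (19, 4, 29, -1, 1), (19, 6, 27, -1, 1), (19, 10, 21, 1, 1), (19, 12, 23, 1, 1), (19, 14, 19, -1, 1), (19, 16, 20, -1, 1), (19, 18, 2, -2, 3), (19, 22, 7, 2, 3), (19, 24, 5, -2, 3), (19, 25, 15, 4, 3), (19, 26, 0, 2, 3), (19, 26, 1, 1, 3), (19, 26, 14, -2, 3), (19, 28, 8, -1, 1), (19, 30, 9, -1, 1)]),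
    (20, [(20, 0, 20, -1, 1), (20, 3, 18, -1, 2), (20, 4, 30, -1, 1), (20, 6, 28, -1, 1), (20, 10, 22, 1, 1), (20, 12, 24, 1, 1), (20, 14, 20, 1, 1), (20, 15, 19, -1, 1), (20, 17, 2, 2, 3), (20, 21, 7, -2, 3), (20, 23, 5, 2, 3), (20, 25, 0, -2, 3), (20, 25, 1, -1, 3), (20, 25, 14, -2, 3), (20, 26, 16, -4, 3), (20, 27, 8, 1, 1), (20, 29, 9, 1, 1)]),
    (21, [(21, 0, 21, 1, 1), (21, 1, 21, -1, 1), (21, 2, 29, -1, 1), (21, 5, 17, -1, 2), (21, 6, 25, 1, 1), (21, 8, 19, 1, 1), (21, 13, 23, 1, 1), (21, 14, 21, -1, 1), (21, 16, 22, -1, 1), (21, 18, 4, 2, 3), (21, 20, 7, -2, 3), (21, 24, 3, 2, 3), (21, 26, 10, -1, 1), (21, 27, 15, 4, 3), (21, 28, 0, -1, 3), (21, 28, 1, 1, 3), (21, 28, 14, -2, 3), (21, 30, 11, -1, 1)]),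
    (22, [(22, 0, 22, 1, 1), (22, 1, 22, -1, 1), (22, 2, 30, -1, 1), (22, 5, 18, -1, 2), (22, 6, 26, 1, 1), (22, 8, 20, 1, 1), (22, 13, 24, 1, 1), (22, 14, 22, 1, 1), (22, 15, 21, -1, 1), (22, 17, 4, -2, 3), (22, 19, 7, 2, 3), (22, 23, 3, -2, 3), (22, 25, 10, 1, 1), (22, 27, 0, 1, 3), (22, 27, 1, -1, 3), (22, 27, 14, -2, 3), (22, 28, 16, -4, 3), (22, 29, 11, 1, 1)]),
    (23, [(23, 1, 23, 1, 1), (23, 2, 27, 1, 1), (23, 4, 25, 1, 1), (23, 7, 17, -1, 2), (23, 9, 19, 1, 1), (23, 11, 21, 1, 1), (23, 14, 23, -1, 1), (23, 16, 24, -1, 1), (23, 18, 6, -2, 3), (23, 20, 5, 2, 3), (23, 22, 3, -2, 3), (23, 26, 12, -1, 1), (23, 28, 13, -1, 1), (23, 29, 15, 4, 3), (23, 30, 0, -1, 3), (23, 30, 1, -2, 3), (23, 30, 14, -2, 3)]),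
    (24, [(24, 1, 24, 1, 1), (24, 2, 28, 1, 1), (24, 4, 26, 1, 1), (24, 7, 18, -1, 2), (24, 9, 20, 1, 1), (24, 11, 22, 1, 1), (24, 14, 24, 1, 1), (24, 15, 23, -1, 1), (24, 17, 6, 2, 3), (24, 19, 5, -2, 3), (24, 21, 3, 2, 3), (24, 25, 12, 1, 1), (24, 27, 13, 1, 1), (24, 29, 0, 1, 3), (24, 29, 1, 2, 3), (24, 29, 14, -2, 3), (24, 30, 16, -4, 3)]),
    (25, [(25, 0, 25, 1, 1), (25, 2, 17, -1, 1), (25, 5, 23, -1, 2), (25, 7, 21, 1, 2), (25, 8, 27, -1, 1), (25, 9, 29, -1, 1), (25, 14, 25, -1, 1), (25, 16, 26, -1, 1), (25, 18, 3, -4, 3), (25, 19, 15, 4, 3), (25, 20, 0, -2, 3), (25, 20, 1, -1, 3), (25, 20, 14, -2, 3), (25, 22, 10, 1, 1), (25, 24, 12, 1, 1), (25, 28, 6, -1, 3), (25, 30, 4, -1, 3)]),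
    (26, [(26, 0, 26, 1, 1), (26, 2, 18, -1, 1), (26, 5, 24, -1, 2), (26, 7, 22, 1, 2), (26, 8, 28, -1, 1), (26, 9, 30, -1, 1), (26, 14, 26, 1, 1), (26, 15, 25, -1, 1), (26, 17, 3, 4, 3), (26, 19, 0, 2, 3), (26, 19, 1, 1, 3), (26, 19, 14, -2, 3), (26, 20, 16, -4, 3), (26, 21, 10, -1, 1), (26, 23, 12, -1, 1), (26, 27, 6, 1, 3), (26, 29, 4, 1, 3)]),
    (27, [(27, 0, 27, -1, 1), (27, 1, 27, 1, 1), (27, 3, 23, 1, 2), (27, 4, 17, 1, 1), (27, 7, 19, -1, 2), (27, 10, 25, -1, 1), (27, 11, 29, -1, 1), (27, 14, 27, -1, 1), (27, 16, 28, -1, 1), (27, 18, 5, -4, 3), (27, 20, 8, 1, 1), (27, 21, 15, 4, 3), (27, 22, 0, 1, 3), (27, 22, 1, -1, 3), (27, 22, 14, -2, 3), (27, 24, 13, 1, 1), (27, 26, 6, 1, 3), (27, 30, 2, -1, 3)]),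
    (28, [(28, 0, 28, -1, 1), (28, 1, 28, 1, 1), (28, 3, 24, 1, 2), (28, 4, 18, 1, 1), (28, 7, 20, -1, 2), (28, 10, 26, -1, 1), (28, 11, 30, -1, 1), (28, 14, 28, 1, 1), (28, 15, 27, -1, 1), (28, 17, 5, 4, 3), (28, 19, 8, -1, 1), (28, 21, 0, -1, 3), (28, 21, 1, 1, 3), (28, 21, 14, -2, 3), (28, 22, 16, -4, 3), (28, 23, 13, -1, 1), (28, 25, 6, -1, 3), (28, 29, 2, 1, 3)]),
    (29, [(29, 1, 29, -1, 1), (29, 3, 21, -1, 2), (29, 5, 19, 1, 2), (29, 6, 17, -1, 1), (29, 12, 25, -1, 1), (29, 13, 27, -1, 1), (29, 14, 29, -1, 1), (29, 16, 30, -1, 1), (29, 18, 7, -4, 3), (29, 20, 9, 1, 1), (29, 22, 11, 1, 1), (29, 23, 15, 4, 3), (29, 24, 0, 1, 3), (29, 24, 1, 2, 3), (29, 24, 14, -2, 3), (29, 26, 4, 1, 3), (29, 28, 2, 1, 3)]),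
    (30, [(30, 1, 30, -1, 1), (30, 3, 22, -1, 2), (30, 5, 20, 1, 2), (30, 6, 18, -1, 1), (30, 12, 26, -1, 1), (30, 13, 28, -1, 1), (30, 14, 30, 1, 1), (30, 15, 29, -1, 1), (30, 17, 7, 4, 3), (30, 19, 9, -1, 1), (30, 21, 11, -1, 1), (30, 23, 0, -1, 3), (30, 23, 1, -2, 3), (30, 23, 14, -2, 3), (30, 24, 16, -4, 3), (30, 25, 4, -1, 3), (30, 27, 2, -1, 3)])]"

definition trow :: "nat \<Rightarrow> ent list" where
  "trow i = (case map_of rowsI i of None \<Rightarrow> [] | Some r \<Rightarrow> r)"

definition grdL :: "int list" where "grdL = [0, 0, 1, -1, 2, -2, -3, 3, -1, 4, 1, 5, -4, -5, 0, 0, 0, 0, 0, 1, 1, 2, 2, -3, -3, -1, -1, -2, -2, 3, 3]"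

definition grd :: "nat \<Rightarrow> int" where "grd n = grdL ! n"

lemma grd_simps [simp]:
  "grd 0 = 0"
  "grd 1 = 0"
  "grd 2 = 1"
  "grd 3 = -1"
  "grd 4 = 2"
  "grd 5 = -2"
  "grd 6 = -3"
  "grd 7 = 3"
  "grd 8 = -1"
  "grd 9 = 4"
  "grd 10 = 1"
  "grd 11 = 5"
  "grd 12 = -4"
  "grd 13 = -5"
  "grd 14 = 0"
  "grd 15 = 0"
  "grd 16 = 0"
  "grd 17 = 0"
  "grd 18 = 0"
  "grd 19 = 1"
  "grd 20 = 1"
  "grd 21 = 2"
  "grd 22 = 2"
  "grd 23 = -3"
  "grd 24 = -3"
  "grd 25 = -1"
  "grd 26 = -1"
  "grd 27 = -2"
  "grd 28 = -2"
  "grd 29 = 3"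
  "grd 30 = 3"
  by (simp_all add: grd_def grdL_def)

lemma par_simps [simp]:
  "g3_par 0 = 0"
  "g3_par 1 = 0"
  "g3_par 2 = 0"
  "g3_par 3 = 0"
  "g3_par 4 = 0"
  "g3_par 5 = 0"
  "g3_par 6 = 0"
  "g3_par 7 = 0"
  "g3_par 8 = 0"
  "g3_par 9 = 0"
  "g3_par 10 = 0"
  "g3_par 11 = 0"
  "g3_par 12 = 0"
  "g3_par 13 = 0"
  "g3_par 14 = 0"
  "g3_par 15 = 0"
  "g3_par 16 = 0"
  "g3_par 17 = 1"
  "g3_par 18 = 1"
  "g3_par 19 = 1"
  "g3_par 20 = 1"
  "g3_par 21 = 1"
  "g3_par 22 = 1"
  "g3_par 23 = 1"
  "g3_par 24 = 1"
  "g3_par 25 = 1"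
  "g3_par 26 = 1"
  "g3_par 27 = 1"
  "g3_par 28 = 1"
  "g3_par 29 = 1"
  "g3_par 30 = 1"
  by (simp_all add: g3_par_def)

lemma trow_0: "trow 0 = [(0, 2, 2, 1, 1), (0, 3, 3, -1, 1), (0, 4, 4, -1, 1), (0, 5, 5, 1, 1), (0, 8, 8, 2, 1), (0, 9, 9, 1, 1), (0, 10, 10, -2, 1), (0, 11, 11, -1, 1), (0, 12, 12, -1, 1), (0, 13, 13, 1, 1), (0, 19, 19, 1, 1), (0, 20, 20, 1, 1), (0, 21, 21, -1, 1), (0, 22, 22, -1, 1), (0, 25, 25, -1, 1), (0, 26, 26, -1, 1), (0, 27, 27, 1, 1), (0, 28, 28, 1, 1)]"
  by (simp add: trow_def rowsI_def)

lemma trow_1: "trow 1 = [(1, 4, 4, 1, 1), (1, 5, 5, -1, 1), (1, 6, 6, -1, 1), (1, 7, 7, 1, 1), (1, 8, 8, -1, 1), (1, 9, 9, 1, 1), (1, 10, 10, 1, 1), (1, 11, 11, 2, 1), (1, 12, 12, -1, 1), (1, 13, 13, -2, 1), (1, 21, 21, 1, 1), (1, 22, 22, 1, 1), (1, 23, 23, -1, 1), (1, 24, 24, -1, 1), (1, 27, 27, -1, 1), (1, 28, 28, -1, 1), (1, 29, 29, 1, 1), (1, 30, 30, 1, 1)]"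
  by (simp add: trow_def rowsI_def)

lemma trow_2: "trow 2 = [(2, 0, 2, -1, 1), (2, 3, 0, 1, 1), (2, 3, 1, 1, 2), (2, 4, 7, -4, 1), (2, 5, 8, -3, 2), (2, 6, 5, -4, 1), (2, 7, 9, -3, 2), (2, 10, 4, -1, 1), (2, 12, 6, 1, 1), (2, 17, 19, 2, 1), (2, 18, 20, 2, 1), (2, 21, 29, 1, 1), (2, 22, 30, 1, 1), (2, 23, 27, -1, 1), (2, 24, 28, -1, 1), (2, 25, 17, 1, 1), (2, 26, 18, 1, 1)]"
  by (simp add: trow_def rowsI_def)

lemma trow_3: "trow 3 = [(3, 0, 3, 1, 1), (3, 2, 0, -1, 1), (3, 2, 1, -1, 2), (3, 4, 10, -3, 2), (3, 5, 6, -1, 2), (3, 6, 12, 3, 2), (3, 7, 4, -1, 2), (3, 8, 5, -1, 1), (3, 9, 7, -1, 1), (3, 17, 25, 1, 1), (3, 18, 26, 1, 1), (3, 19, 17, 1, 2), (3, 20, 18, 1, 2), (3, 27, 23, -1, 2), (3, 28, 24, -1, 2), (3, 29, 21, 1, 2), (3, 30, 22, 1, 2)]"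
  by (simp add: trow_def rowsI_def)

lemma trow_4: "trow 4 = [(4, 0, 4, 1, 1), (4, 1, 4, -1, 1), (4, 2, 7, 4, 1), (4, 3, 10, 3, 2), (4, 5, 0, 1, 2), (4, 5, 1, -1, 2), (4, 6, 3, -4, 1), (4, 7, 11, 3, 2), (4, 8, 2, -1, 1), (4, 13, 6, -1, 1), (4, 17, 21, -2, 1), (4, 18, 22, -2, 1), (4, 19, 29, 1, 1), (4, 20, 30, 1, 1), (4, 23, 25, -1, 1), (4, 24, 26, -1, 1), (4, 27, 17, -1, 1), (4, 28, 18, -1, 1)]"
  by (simp add: trow_def rowsI_def)

lemma trow_5: "trow 5 = [(5, 0, 5, -1, 1), (5, 1, 5, 1, 1), (5, 2, 8, 3, 2), (5, 3, 6, 1, 2), (5, 4, 0, -1, 2), (5, 4, 1, 1, 2), (5, 6, 13, 3, 2), (5, 7, 2, -1, 2), (5, 10, 3, -1, 1), (5, 11, 7, -1, 1), (5, 17, 27, 1, 1), (5, 18, 28, 1, 1), (5, 21, 17, 1, 2), (5, 22, 18, 1, 2), (5, 25, 23, 1, 2), (5, 26, 24, 1, 2), (5, 29, 19, -1, 2), (5, 30, 20, -1, 2)]"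
  by (simp add: trow_def rowsI_def)

lemma trow_6: "trow 6 = [(6, 1, 6, 1, 1), (6, 2, 5, 4, 1), (6, 3, 12, -3, 2), (6, 4, 3, 4, 1), (6, 5, 13, -3, 2), (6, 7, 0, -1, 2), (6, 7, 1, -1, 1), (6, 9, 2, 1, 1), (6, 11, 4, -1, 1), (6, 17, 23, 2, 1), (6, 18, 24, 2, 1), (6, 19, 27, 1, 1), (6, 20, 28, 1, 1), (6, 21, 25, -1, 1), (6, 22, 26, -1, 1), (6, 29, 17, 1, 1), (6, 30, 18, 1, 1)]"
  by (simp add: trow_def rowsI_def)

lemma trow_7: "trow 7 = [(7, 1, 7, -1, 1), (7, 2, 9, 3, 2), (7, 3, 4, 1, 2), (7, 4, 11, -3, 2), (7, 5, 2, 1, 2), (7, 6, 0, 1, 2), (7, 6, 1, 1, 1), (7, 12, 3, -1, 1), (7, 13, 5, -1, 1), (7, 17, 29, 1, 1), (7, 18, 30, 1, 1), (7, 23, 17, 1, 2), (7, 24, 18, 1, 2), (7, 25, 21, -1, 2), (7, 26, 22, -1, 2), (7, 27, 19, 1, 2), (7, 28, 20, 1, 2)]"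
  by (simp add: trow_def rowsI_def)

lemma trow_8: "trow 8 = [(8, 0, 8, -2, 1), (8, 1, 8, 1, 1), (8, 3, 5, 1, 1), (8, 4, 2, 1, 1), (8, 10, 0, 1, 1), (8, 11, 9, -1, 1), (8, 12, 13, 1, 1), (8, 21, 19, -1, 1), (8, 22, 20, -1, 1), (8, 25, 27, 1, 1), (8, 26, 28, 1, 1)]"
  by (simp add: trow_def rowsI_def)

lemma trow_9: "trow 9 = [(9, 0, 9, -1, 1), (9, 1, 9, -1, 1), (9, 3, 7, 1, 1), (9, 6, 2, -1, 1), (9, 10, 11, 1, 1), (9, 12, 0, 1, 1), (9, 12, 1, 1, 1), (9, 13, 8, -1, 1), (9, 23, 19, -1, 1), (9, 24, 20, -1, 1), (9, 25, 29, 1, 1), (9, 26, 30, 1, 1)]"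
  by (simp add: trow_def rowsI_def)

lemma trow_10: "trow 10 = [(10, 0, 10, 2, 1), (10, 1, 10, -1, 1), (10, 2, 4, 1, 1), (10, 5, 3, 1, 1), (10, 8, 0, -1, 1), (10, 9, 11, -1, 1), (10, 13, 12, 1, 1), (10, 19, 21, -1, 1), (10, 20, 22, -1, 1), (10, 27, 25, 1, 1), (10, 28, 26, 1, 1)]"
  by (simp add: trow_def rowsI_def)

lemma trow_11: "trow 11 = [(11, 0, 11, 1, 1), (11, 1, 11, -2, 1), (11, 5, 7, 1, 1), (11, 6, 4, 1, 1), (11, 8, 9, 1, 1), (11, 12, 10, -1, 1), (11, 13, 1, 1, 1), (11, 23, 21, -1, 1), (11, 24, 22, -1, 1), (11, 27, 29, 1, 1), (11, 28, 30, 1, 1)]"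
  by (simp add: trow_def rowsI_def)

lemma trow_12: "trow 12 = [(12, 0, 12, 1, 1), (12, 1, 12, 1, 1), (12, 2, 6, -1, 1), (12, 7, 3, 1, 1), (12, 8, 13, -1, 1), (12, 9, 0, -1, 1), (12, 9, 1, -1, 1), (12, 11, 10, 1, 1), (12, 19, 23, -1, 1), (12, 20, 24, -1, 1), (12, 29, 25, 1, 1), (12, 30, 26, 1, 1)]"
  by (simp add: trow_def rowsI_def)

lemma trow_13: "trow 13 = [(13, 0, 13, -1, 1), (13, 1, 13, 2, 1), (13, 4, 6, 1, 1), (13, 7, 5, 1, 1), (13, 9, 8, 1, 1), (13, 10, 12, -1, 1), (13, 11, 1, -1, 1), (13, 21, 23, -1, 1), (13, 22, 24, -1, 1), (13, 29, 27, 1, 1), (13, 30, 28, 1, 1)]"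
  by (simp add: trow_def rowsI_def)

lemma trow_14: "trow 14 = [(14, 15, 15, 2, 1), (14, 16, 16, -2, 1), (14, 17, 17, 1, 1), (14, 18, 18, -1, 1), (14, 19, 19, 1, 1), (14, 20, 20, -1, 1), (14, 21, 21, 1, 1), (14, 22, 22, -1, 1), (14, 23, 23, 1, 1), (14, 24, 24, -1, 1), (14, 25, 25, 1, 1), (14, 26, 26, -1, 1), (14, 27, 27, 1, 1), (14, 28, 28, -1, 1), (14, 29, 29, 1, 1), (14, 30, 30, -1, 1)]"
  by (simp add: trow_def rowsI_def)

lemma trow_15: "trow 15 = [(15, 14, 15, -2, 1), (15, 16, 14, 1, 1), (15, 18, 17, 1, 1), (15, 20, 19, 1, 1), (15, 22, 21, 1, 1), (15, 24, 23, 1, 1), (15, 26, 25, 1, 1), (15, 28, 27, 1, 1), (15, 30, 29, 1, 1)]"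
  by (simp add: trow_def rowsI_def)

lemma trow_16: "trow 16 = [(16, 14, 16, 2, 1), (16, 15, 14, -1, 1), (16, 17, 18, 1, 1), (16, 19, 20, 1, 1), (16, 21, 22, 1, 1), (16, 23, 24, 1, 1), (16, 25, 26, 1, 1), (16, 27, 28, 1, 1), (16, 29, 30, 1, 1)]"
  by (simp add: trow_def rowsI_def)

lemma trow_17: "trow 17 = [(17, 2, 19, -2, 1), (17, 3, 25, -1, 1), (17, 4, 21, 2, 1), (17, 5, 27, -1, 1), (17, 6, 23, -2, 1), (17, 7, 29, -1, 1), (17, 14, 17, -1, 1), (17, 16, 18, -1, 1), (17, 17, 15, -8, 3), (17, 18, 14, 4, 3), (17, 20, 2, 2, 3), (17, 22, 4, -2, 3), (17, 24, 6, 2, 3), (17, 26, 3, 4, 3), (17, 28, 5, 4, 3), (17, 30, 7, 4, 3)]"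
  by (simp add: trow_def rowsI_def)

lemma trow_18: "trow 18 = [(18, 2, 20, -2, 1), (18, 3, 26, -1, 1), (18, 4, 22, 2, 1), (18, 5, 28, -1, 1), (18, 6, 24, -2, 1), (18, 7, 30, -1, 1), (18, 14, 18, 1, 1), (18, 15, 17, -1, 1), (18, 17, 14, 4, 3), (18, 18, 16, 8, 3), (18, 19, 2, -2, 3), (18, 21, 4, 2, 3), (18, 23, 6, -2, 3), (18, 25, 3, -4, 3), (18, 27, 5, -4, 3), (18, 29, 7, -4, 3)]"
  by (simp add: trow_def rowsI_def)

lemma trow_19: "trow 19 = [(19, 0, 19, -1, 1), (19, 3, 17, -1, 2), (19, 4, 29, -1, 1), (19, 6, 27, -1, 1), (19, 10, 21, 1, 1), (19, 12, 23, 1, 1), (19, 14, 19, -1, 1), (19, 16, 20, -1, 1), (19, 18, 2, -2, 3), (19, 22, 7, 2, 3), (19, 24, 5, -2, 3), (19, 25, 15, 4, 3), (19, 26, 0, 2, 3), (19, 26, 1, 1, 3), (19, 26, 14, -2, 3), (19, 28, 8, -1, 1), (19, 30, 9, -1, 1)]"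
  by (simp add: trow_def rowsI_def)

lemma trow_20: "trow 20 = [(20, 0, 20, -1, 1), (20, 3, 18, -1, 2), (20, 4, 30, -1, 1), (20, 6, 28, -1, 1), (20, 10, 22, 1, 1), (20, 12, 24, 1, 1), (20, 14, 20, 1, 1), (20, 15, 19, -1, 1), (20, 17, 2, 2, 3), (20, 21, 7, -2, 3), (20, 23, 5, 2, 3), (20, 25, 0, -2, 3), (20, 25, 1, -1, 3), (20, 25, 14, -2, 3), (20, 26, 16, -4, 3), (20, 27, 8, 1, 1), (20, 29, 9, 1, 1)]"
  by (simp add: trow_def rowsI_def)

lemma trow_21: "trow 21 = [(21, 0, 21, 1, 1), (21, 1, 21, -1, 1), (21, 2, 29, -1, 1), (21, 5, 17, -1, 2), (21, 6, 25, 1, 1), (21, 8, 19, 1, 1), (21, 13, 23, 1, 1), (21, 14, 21, -1, 1), (21, 16, 22, -1, 1), (21, 18, 4, 2, 3), (21, 20, 7, -2, 3), (21, 24, 3, 2, 3), (21, 26, 10, -1, 1), (21, 27, 15, 4, 3), (21, 28, 0, -1, 3), (21, 28, 1, 1, 3), (21, 28, 14, -2, 3), (21, 30, 11, -1, 1)]"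
  by (simp add: trow_def rowsI_def)

lemma trow_22: "trow 22 = [(22, 0, 22, 1, 1), (22, 1, 22, -1, 1), (22, 2, 30, -1, 1), (22, 5, 18, -1, 2), (22, 6, 26, 1, 1), (22, 8, 20, 1, 1), (22, 13, 24, 1, 1), (22, 14, 22, 1, 1), (22, 15, 21, -1, 1), (22, 17, 4, -2, 3), (22, 19, 7, 2, 3), (22, 23, 3, -2, 3), (22, 25, 10, 1, 1), (22, 27, 0, 1, 3), (22, 27, 1, -1, 3), (22, 27, 14, -2, 3), (22, 28, 16, -4, 3), (22, 29, 11, 1, 1)]"
  by (simp add: trow_def rowsI_def)

lemma trow_23: "trow 23 = [(23, 1, 23, 1, 1), (23, 2, 27, 1, 1), (23, 4, 25, 1, 1), (23, 7, 17, -1, 2), (23, 9, 19, 1, 1), (23, 11, 21, 1, 1), (23, 14, 23, -1, 1), (23, 16, 24, -1, 1), (23, 18, 6, -2, 3), (23, 20, 5, 2, 3), (23, 22, 3, -2, 3), (23, 26, 12, -1, 1), (23, 28, 13, -1, 1), (23, 29, 15, 4, 3), (23, 30, 0, -1, 3), (23, 30, 1, -2, 3), (23, 30, 14, -2, 3)]"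
  by (simp add: trow_def rowsI_def)

lemma trow_24: "trow 24 = [(24, 1, 24, 1, 1), (24, 2, 28, 1, 1), (24, 4, 26, 1, 1), (24, 7, 18, -1, 2), (24, 9, 20, 1, 1), (24, 11, 22, 1, 1), (24, 14, 24, 1, 1), (24, 15, 23, -1, 1), (24, 17, 6, 2, 3), (24, 19, 5, -2, 3), (24, 21, 3, 2, 3), (24, 25, 12, 1, 1), (24, 27, 13, 1, 1), (24, 29, 0, 1, 3), (24, 29, 1, 2, 3), (24, 29, 14, -2, 3), (24, 30, 16, -4, 3)]"
  by (simp add: trow_def rowsI_def)

lemma trow_25: "trow 25 = [(25, 0, 25, 1, 1), (25, 2, 17, -1, 1), (25, 5, 23, -1, 2), (25, 7, 21, 1, 2), (25, 8, 27, -1, 1), (25, 9, 29, -1, 1), (25, 14, 25, -1, 1), (25, 16, 26, -1, 1), (25, 18, 3, -4, 3), (25, 19, 15, 4, 3), (25, 20, 0, -2, 3), (25, 20, 1, -1, 3), (25, 20, 14, -2, 3), (25, 22, 10, 1, 1), (25, 24, 12, 1, 1), (25, 28, 6, -1, 3), (25, 30, 4, -1, 3)]"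
  by (simp add: trow_def rowsI_def)

lemma trow_26: "trow 26 = [(26, 0, 26, 1, 1), (26, 2, 18, -1, 1), (26, 5, 24, -1, 2), (26, 7, 22, 1, 2), (26, 8, 28, -1, 1), (26, 9, 30, -1, 1), (26, 14, 26, 1, 1), (26, 15, 25, -1, 1), (26, 17, 3, 4, 3), (26, 19, 0, 2, 3), (26, 19, 1, 1, 3), (26, 19, 14, -2, 3), (26, 20, 16, -4, 3), (26, 21, 10, -1, 1), (26, 23, 12, -1, 1), (26, 27, 6, 1, 3), (26, 29, 4, 1, 3)]"
  by (simp add: trow_def rowsI_def)

lemma trow_27: "trow 27 = [(27, 0, 27, -1, 1), (27, 1, 27, 1, 1), (27, 3, 23, 1, 2), (27, 4, 17, 1, 1), (27, 7, 19, -1, 2), (27, 10, 25, -1, 1), (27, 11, 29, -1, 1), (27, 14, 27, -1, 1), (27, 16, 28, -1, 1), (27, 18, 5, -4, 3), (27, 20, 8, 1, 1), (27, 21, 15, 4, 3), (27, 22, 0, 1, 3), (27, 22, 1, -1, 3), (27, 22, 14, -2, 3), (27, 24, 13, 1, 1), (27, 26, 6, 1, 3), (27, 30, 2, -1, 3)]"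
  by (simp add: trow_def rowsI_def)

lemma trow_28: "trow 28 = [(28, 0, 28, -1, 1), (28, 1, 28, 1, 1), (28, 3, 24, 1, 2), (28, 4, 18, 1, 1), (28, 7, 20, -1, 2), (28, 10, 26, -1, 1), (28, 11, 30, -1, 1), (28, 14, 28, 1, 1), (28, 15, 27, -1, 1), (28, 17, 5, 4, 3), (28, 19, 8, -1, 1), (28, 21, 0, -1, 3), (28, 21, 1, 1, 3), (28, 21, 14, -2, 3), (28, 22, 16, -4, 3), (28, 23, 13, -1, 1), (28, 25, 6, -1, 3), (28, 29, 2, 1, 3)]"
  by (simp add: trow_def rowsI_def)

lemma trow_29: "trow 29 = [(29, 1, 29, -1, 1), (29, 3, 21, -1, 2), (29, 5, 19, 1, 2), (29, 6, 17, -1, 1), (29, 12, 25, -1, 1), (29, 13, 27, -1, 1), (29, 14, 29, -1, 1), (29, 16, 30, -1, 1), (29, 18, 7, -4, 3), (29, 20, 9, 1, 1), (29, 22, 11, 1, 1), (29, 23, 15, 4, 3), (29, 24, 0, 1, 3), (29, 24, 1, 2, 3), (29, 24, 14, -2, 3), (29, 26, 4, 1, 3), (29, 28, 2, 1, 3)]"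
  by (simp add: trow_def rowsI_def)

lemma trow_30: "trow 30 = [(30, 1, 30, -1, 1), (30, 3, 22, -1, 2), (30, 5, 20, 1, 2), (30, 6, 18, -1, 1), (30, 12, 26, -1, 1), (30, 13, 28, -1, 1), (30, 14, 30, 1, 1), (30, 15, 29, -1, 1), (30, 17, 7, 4, 3), (30, 19, 9, -1, 1), (30, 21, 11, -1, 1), (30, 23, 0, -1, 3), (30, 23, 1, -2, 3), (30, 23, 14, -2, 3), (30, 24, 16, -4, 3), (30, 25, 4, -1, 3), (30, 27, 2, -1, 3)]"
  by (simp add: trow_def rowsI_def)


lemma grd_Suc0 [simp]: "grd (Suc 0) = 0" by (simp add: grd_def grdL_def)
lemma par_Suc0 [simp]: "g3_par (Suc 0) = 0" by (simp add: g3_par_def)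
lemma trow_Suc0: "trow (Suc 0) = [(1, 4, 4, 1, 1), (1, 5, 5, -1, 1), (1, 6, 6, -1, 1), (1, 7, 7, 1, 1), (1, 8, 8, -1, 1), (1, 9, 9, 1, 1), (1, 10, 10, 1, 1), (1, 11, 11, 2, 1), (1, 12, 12, -1, 1), (1, 13, 13, -2, 1), (1, 21, 21, 1, 1), (1, 22, 22, 1, 1), (1, 23, 23, -1, 1), (1, 24, 24, -1, 1), (1, 27, 27, -1, 1), (1, 28, 28, -1, 1), (1, 29, 29, 1, 1), (1, 30, 30, 1, 1)]"
  by (simp add: trow_def rowsI_def)

lemmas trow_simps = trow_Suc0 trow_0 trow_1 trow_2 trow_3 trow_4 trow_5 trow_6 trow_7 trow_8 trow_9 trow_10 trow_11 trow_12 trow_13 trow_14 trow_15 trow_16 trow_17 trow_18 trow_19 trow_20 trow_21 trow_22 trow_23 trow_24 trow_25 trow_26 trow_27 trow_28 trow_29 trow_30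

lemma lt1: "{..<1::nat} = {0}" by auto
lemma all31: "(\<forall>i<(31::nat). P i) \<longleftrightarrow> (P 0 \<and> P 1 \<and> P 2 \<and> P 3 \<and> P 4 \<and> P 5 \<and> P 6 \<and> P 7 \<and> P 8 \<and> P 9 \<and> P 10 \<and> P 11 \<and> P 12 \<and> P 13 \<and> P 14 \<and> P 15 \<and> P 16 \<and> P 17 \<and> P 18 \<and> P 19 \<and> P 20 \<and> P 21 \<and> P 22 \<and> P 23 \<and> P 24 \<and> P 25 \<and> P 26 \<and> P 27 \<and> P 28 \<and> P 29 \<and> P 30)"
proof -
  have "(\<forall>i<(31::nat). P i) \<longleftrightarrow> (\<forall>i\<in>{..<31::nat}. P i)" by auto
  also have "\<dots> \<longleftrightarrow> (P 0 \<and> P 1 \<and> P 2 \<and> P 3 \<and> P 4 \<and> P 5 \<and> P 6 \<and> P 7 \<and> P 8 \<and> P 9 \<and> P 10 \<and> P 11 \<and> P 12 \<and> P 13 \<and> P 14 \<and> P 15 \<and> P 16 \<and> P 17 \<and> P 18 \<and> P 19 \<and> P 20 \<and> P 21 \<and> P 22 \<and> P 23 \<and> P 24 \<and> P 25 \<and> P 26 \<and> P 27 \<and> P 28 \<and> P 29 \<and> P 30)"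
    by (simp only: lessThan_nat_numeral pred_numeral_simps ball_simps Num.BitM.simps lt1 numeral_One simp_thms conj_assoc) (simp only: conj_ac)
  finally show ?thesis .
qed


definition rs :: "nat \<Rightarrow> nat \<Rightarrow> (nat \<Rightarrow> 'a::field) \<Rightarrow> 'a" where
  "rs i k y = sum_list (map (\<lambda>(a,b,c,p,q). if a = i \<and> c = k \<and> b < 31 then y b * (of_int p / of_int q) else 0) (trow i))"

definition rs2 :: "nat \<Rightarrow> nat \<Rightarrow> (nat \<Rightarrow> 'a::field) \<Rightarrow> 'a" where
  "rs2 i j y = sum_list (map (\<lambda>(a,b,c,p,q). if a = i \<and> b = j \<and> c < 31 then y c * (of_int p / of_int q) else 0) (trow i))"

definition DD :: "(nat \<Rightarrow> nat \<Rightarrow> 'a::field) \<Rightarrow> nat \<Rightarrow> nat \<Rightarrow> nat \<Rightarrow> 'a" where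
  "DD F i j k = (\<Sum>p\<in>{0,1::nat}. (-1) ^ (g3_par i * p) * rs i k (\<lambda>l. if l < 31 \<and> g3_par l = (g3_par j + p) mod 2 then F j l else 0)
       - (-1) ^ (g3_par j * (g3_par i + p)) * rs j k (\<lambda>l. if l < 31 \<and> g3_par l = (g3_par i + p) mod 2 then F i l else 0))
     - rs2 i j (\<lambda>l. if grd l < 0 then F l k else 0)"

definition TT :: "(nat \<Rightarrow> 'a::field) \<Rightarrow> nat \<Rightarrow> nat \<Rightarrow> 'a" where
  "TT v i n = (\<Sum>p\<in>{0,1::nat}. (-1) ^ (g3_par i * p) * rs i n (\<lambda>l. if l < 31 \<and> g3_par l = p then v l else 0))"

definition ev :: "nat \<Rightarrow> g3vec" where
  "ev i = (\<lambda>n. if n = i then 1 else 0)"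

lemma sum_list_zero: "(\<forall>e\<in>set T. g e = 0) \<Longrightarrow> sum_list (map g T) = (0::'b::comm_monoid_add)"
  by (induction T) auto

lemma rows_ok: "list_all (\<lambda>(j,r). list_all (\<lambda>e. fst e = j) r) rowsI"
  by (simp add: rowsI_def)

lemma rows_dist: "distinct (map fst rowsI)"
  by (simp add: rowsI_def)

lemma tab_concat: "g3_table = concat (map snd rowsI)"
  unfolding g3_table_def rowsI_def by (rule sym) simp

lemma sum_rows_aux:
  assumes "\<forall>e. fst e \<noteq> i \<longrightarrow> g e = 0" "list_all (\<lambda>(j,r). list_all (\<lambda>e. fst e = j) r) L" "i \<notin> fst ` set L"
  shows "sum_list (map g (concat (map snd L))) = (0::'b::comm_monoid_add)"
  using assms
proof (induction L)
  case Nil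
  then show ?case by simp
next
  case (Cons x L)
  obtain j r where x: "x = (j, r)" by force
  have "sum_list (map g r) = 0"
    using Cons.prems x by (intro sum_list_zero) (auto simp: list_all_iff)
  then show ?case using Cons x by simp
qed

lemma sum_rows:
  assumes "\<forall>e. fst e \<noteq> i \<longrightarrow> g e = 0" "list_all (\<lambda>(j,r). list_all (\<lambda>e. fst e = j) r) L" "distinct (map fst L)"
  shows "sum_list (map g (concat (map snd L))) = (sum_list (map g (case map_of L i of None \<Rightarrow> [] | Some r \<Rightarrow> r)) :: 'b::comm_monoid_add)"
  using assms
proof (induction L)
  case Nil
  then show ?case by simp
next
  case (Cons x L)
  obtain j r where x: "x = (j, r)" by force
  show ?case
  proof (cases "j = i")
    case True
    have "sum_list (map g (concat (map snd L))) = 0"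
      using Cons.prems True x by (intro sum_rows_aux) auto
    then show ?thesis using True x by simp
  next
    case False
    have "sum_list (map g r) = 0"
      using Cons.prems False x by (intro sum_list_zero) (auto simp: list_all_iff)
    then show ?thesis using False x Cons by simp
  qed
qed

lemma trow_sub: "e \<in> set (trow i) \<Longrightarrow> e \<in> set g3_table"
proof -
  assume e: "e \<in> set (trow i)"
  then obtain r where r: "map_of rowsI i = Some r" "e \<in> set r"
    unfolding trow_def by (cases "map_of rowsI i") auto
  from r(1) have "(i, r) \<in> set rowsI" by (rule map_of_SomeD)
  then show ?thesis unfolding tab_concat using r by force
qed

lemma sc_row: "g3_sc i j k = sum_list (map (\<lambda>(a,b,c,p,q). if a = i \<and> b = j \<and> c = k then of_int p / of_int q else 0) (trow i))"
  unfolding g3_sc_def tab_concat trow_def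
  by (rule sum_rows[OF _ rows_ok rows_dist]) auto

lemma sum_tab1:
  fixes y :: "nat \<Rightarrow> 'a::field" and T :: "ent list"
  shows "(\<Sum>l<31. y l * sum_list (map (\<lambda>(a,b,c,p,q). if a = i \<and> b = l \<and> c = k then of_int p / of_int q else 0) T))
   = sum_list (map (\<lambda>(a,b,c,p,q). if a = i \<and> c = k \<and> b < 31 then y b * (of_int p / of_int q) else (0::'a::field)) T)"
proof (induction T)
  case Nil
  then show ?case by simp
next
  case (Cons e T)
  obtain a b c p q where e: "e = (a,b,c,p,q)" by (cases e) auto
  have h: "(\<Sum>l<31. y l * (if a = i \<and> b = l \<and> c = k then of_int p / of_int q else 0))
      = (if a = i \<and> c = k \<and> b < 31 then y b * (of_int p / of_int q) else (0::'a))"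
  proof (cases "a = i \<and> c = k")
    case True
    have "(\<Sum>l<31. y l * (if a = i \<and> b = l \<and> c = k then of_int p / of_int q else 0))
        = (\<Sum>l<31. if b = l then y l * (of_int p / of_int q) else (0::'a))"
      using True by (intro sum.cong) auto
    also have "\<dots> = (if b < 31 then y b * (of_int p / of_int q) else 0)"
      by (simp add: sum.delta)
    finally show ?thesis using True by simp
  next
    case False
    then show ?thesis by auto
  qed
  show ?case
    by (simp add: e distrib_left sum.distrib h Cons.IH)
qed

lemma sum_tab2:
  fixes y :: "nat \<Rightarrow> 'a::field" and T :: "ent list"
  shows "(\<Sum>l<31. y l * sum_list (map (\<lambda>(a,b,c,p,q). if a = i \<and> b = j \<and> c = l then of_int p / of_int q else 0) T))
   = sum_list (map (\<lambda>(a,b,c,p,q). if a = i \<and> b = j \<and> c < 31 then y c * (of_int p / of_int q) else (0::'a::field)) T)"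
proof (induction T)
  case Nil
  then show ?case by simp
next
  case (Cons e T)
  obtain a b c p q where e: "e = (a,b,c,p,q)" by (cases e) auto
  have h: "(\<Sum>l<31. y l * (if a = i \<and> b = j \<and> c = l then of_int p / of_int q else 0))
      = (if a = i \<and> b = j \<and> c < 31 then y c * (of_int p / of_int q) else (0::'a))"
  proof (cases "a = i \<and> b = j")
    case True
    have "(\<Sum>l<31. y l * (if a = i \<and> b = j \<and> c = l then of_int p / of_int q else 0))
        = (\<Sum>l<31. if c = l then y l * (of_int p / of_int q) else (0::'a))"
      using True by (intro sum.cong) auto
    also have "\<dots> = (if c < 31 then y c * (of_int p / of_int q) else 0)"
      by (simp add: sum.delta)
    finally show ?thesis using True by simp
  next
    case False
    then show ?thesis by auto
  qed
  show ?case
    by (simp add: e distrib_left sum.distrib h Cons.IH)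
qed

lemma sum_rs: "(\<Sum>l<31. y l * g3_sc i l k) = rs i k y"
  by (simp add: sc_row rs_def sum_tab1)

lemma sum_rs2: "(\<Sum>l<31. y l * g3_sc i j l) = rs2 i j y"
  by (simp add: sc_row rs2_def sum_tab2)

lemma br_gen: "n < 31 \<Longrightarrow> g3_br x y n = (\<Sum>i<31. x i * rs i n y)"
  unfolding g3_br_def by (simp add: sum_rs[symmetric] sum_distrib_left mult.assoc)

lemma br_out: "\<not> n < 31 \<Longrightarrow> g3_br x y n = 0"
  by (simp add: g3_br_def)

lemma br_ev: "i < 31 \<Longrightarrow> n < 31 \<Longrightarrow> g3_br (ev i) y n = rs i n y"
  by (simp add: br_gen ev_def if_distrib[of "\<lambda>x. x * _"] sum.delta' cong: if_cong)

lemma br_evev: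
  assumes ij: "i < 31" "j < 31"
  shows "g3_br (ev i) (ev j) n = (if n < 31 then g3_sc i j n else 0)"
proof (cases "n < 31")
  case True
  have "g3_br (ev i) (ev j) n = rs i n (ev j)" using ij(1) True by (rule br_ev)
  also have "\<dots> = (\<Sum>l<31. ev j l * g3_sc i l n)" by (rule sum_rs[symmetric])
  also have "\<dots> = g3_sc i j n" using ij by (simp add: ev_def if_distrib[of "\<lambda>x. x * _"] sum.delta' cong: if_cong)
  finally show ?thesis using True by simp
next
  case False
  then show ?thesis by (simp add: br_out)
qed


lemma Zsum: "(\<Sum>i<31. g3_Z i * f i) = f 0 + 3 * (f 1 :: complex)"
proof -
  have "(\<Sum>i<31. g3_Z i * f i) = (\<Sum>i<(31::nat). (if i = 0 then f 0 else 0) + (if i = 1 then 3 * f 1 else 0))"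
    by (intro sum.cong) (auto simp: g3_Z_def)
  also have "\<dots> = f 0 + 3 * f 1" by (simp add: sum.distrib sum.delta)
  finally show ?thesis .
qed

lemma diag_all: "\<forall>n<31. rs 0 n x + 3 * rs 1 n x = of_int (grd n) * (x n :: complex)"
  by (simp only: all31) (simp add: rs_def trow_0 trow_1 trow_Suc0)

lemma brZ: "n < 31 \<Longrightarrow> g3_br g3_Z x n = of_int (grd n) * x n"
  using diag_all by (simp add: br_gen Zsum)

lemma grd_range_all: "\<forall>n<31. -5 \<le> grd n \<and> grd n \<le> 5"
  by (simp only: all31) simp

lemma grd_range: "n < 31 \<Longrightarrow> -5 \<le> grd n \<and> grd n \<le> 5"
  using grd_range_all by blast

lemma par_range_all: "\<forall>n<31. g3_par n = 0 \<or> g3_par n = 1"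
  by (simp add: g3_par_def)

lemma grade_iff: "x \<in> g3_grade k \<longleftrightarrow> x \<in> g3_space \<and> (\<forall>n<31. grd n \<noteq> k \<longrightarrow> x n = 0)"
proof
  assume x: "x \<in> g3_grade k"
  then have sp: "x \<in> g3_space" and eq: "g3_br g3_Z x = (\<lambda>i. of_int k * x i)"
    by (auto simp: g3_grade_def)
  have "x n = 0" if "n < 31" "grd n \<noteq> k" for n
  proof -
    have "of_int (grd n) * x n = of_int k * x n"
      using fun_cong[OF eq, of n] brZ[OF that(1)] by simp
    then have "(of_int (grd n) - of_int k) * x n = 0" by (simp add: algebra_simps)
    moreover have "(of_int (grd n) - of_int k :: complex) \<noteq> 0" using that(2) by simp
    ultimately show ?thesis by simp
  qed
  then show "x \<in> g3_space \<and> (\<forall>n<31. grd n \<noteq> k \<longrightarrow> x n = 0)" using sp by blast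
next
  assume h: "x \<in> g3_space \<and> (\<forall>n<31. grd n \<noteq> k \<longrightarrow> x n = 0)"
  have "g3_br g3_Z x n = of_int k * x n" for n
  proof (cases "n < 31")
    case True
    have "x n = 0 \<or> grd n = k" using h True by blast
    then show ?thesis using brZ[OF True, of x] by auto
  next
    case False
    have "x n = 0" using h False by (simp add: g3_space_def)
    then show ?thesis using False by (simp add: br_out)
  qed
  then have "g3_br g3_Z x = (\<lambda>i. of_int k * x i)" by (rule ext)
  then show "x \<in> g3_grade k" using h by (simp add: g3_grade_def)
qed

lemma zero_grade: "(\<lambda>_. 0) \<in> g3_grade k"
  by (simp add: grade_iff g3_space_def)

lemma m_iff: "x \<in> g3_m \<longleftrightarrow> x \<in> g3_space \<and> (\<forall>n<31. 0 \<le> grd n \<longrightarrow> x n = 0)"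
proof
  assume "x \<in> g3_m"
  then obtain S f where S: "finite S" "S \<subseteq> {k. k < 0}" "\<forall>k\<in>S. f k \<in> g3_grade k"
    and x: "x = (\<lambda>i. \<Sum>k\<in>S. f k i)" unfolding g3_m_def by blast
  have x1: "x n = 0" if n: "31 \<le> n" for n
  proof -
    have "f k n = 0" if k: "k \<in> S" for k
    proof -
      have "f k \<in> g3_space" using S(3) k grade_iff by blast
      then show ?thesis using n by (simp add: g3_space_def)
    qed
    then show ?thesis unfolding x by simp
  qed
  have x2: "x n = 0" if n: "n < 31" "0 \<le> grd n" for n
  proof -
    have "f k n = 0" if k: "k \<in> S" for k
    proof -
      have "k < 0" using S(2) k by blast
      then have "grd n \<noteq> k" using n by simp
      then show ?thesis using S(3) k n grade_iff by blast
    qed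
    then show ?thesis unfolding x by simp
  qed
  show "x \<in> g3_space \<and> (\<forall>n<31. 0 \<le> grd n \<longrightarrow> x n = 0)"
    using x1 x2 by (simp add: g3_space_def)
next
  assume h: "x \<in> g3_space \<and> (\<forall>n<31. 0 \<le> grd n \<longrightarrow> x n = 0)"
  define f where "f = (\<lambda>k::int. \<lambda>n. if n < 31 \<and> grd n = k then x n else 0)"
  have fk: "f k \<in> g3_grade k" for k
  proof -
    have "f k \<in> g3_space" by (simp add: f_def g3_space_def)
    moreover have "\<forall>n<31. grd n \<noteq> k \<longrightarrow> f k n = 0" by (simp add: f_def)
    ultimately show ?thesis using grade_iff by blast
  qed
  have "x n = (\<Sum>k\<in>{-5..<0::int}. f k n)" for n
  proof (cases "n < 31 \<and> grd n < 0")
    case True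
    then have "grd n \<in> {-5..<0}" using grd_range[of n] by auto
    then show ?thesis using True by (simp add: f_def sum.delta)
  next
    case False
    have "x n = 0"
    proof (cases "n < 31")
      case True
      then show ?thesis using h False by simp
    next
      case False
      then show ?thesis using h by (simp add: g3_space_def)
    qed
    moreover have "(\<Sum>k\<in>{-5..<0::int}. f k n) = 0" using False by (intro sum.neutral) (auto simp: f_def)
    ultimately show ?thesis by simp
  qed
  then have "x = (\<lambda>n. \<Sum>k\<in>{-5..<0::int}. f k n)" by (rule ext)
  moreover have "finite {-5..<0::int}" "{-5..<0::int} \<subseteq> {k. k < 0}" "\<forall>k\<in>{-5..<0::int}. f k \<in> g3_grade k"
    using fk by auto
  ultimately show "x \<in> g3_m" unfolding g3_m_def by blast
qed

lemma ev_space: "i < 31 \<Longrightarrow> ev i \<in> g3_space"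
  by (simp add: ev_def g3_space_def)

lemma ev_grade: "i < 31 \<Longrightarrow> ev i \<in> g3_grade (grd i)"
  by (simp add: grade_iff ev_space) (simp add: ev_def)

lemma ev_m:
  assumes "i < 31" "grd i < 0"
  shows "ev i \<in> g3_m"
proof -
  have "\<forall>n<31. 0 \<le> grd n \<longrightarrow> ev i n = 0" unfolding ev_def using assms(2) by auto
  then show ?thesis using ev_space[OF assms(1)] m_iff by blast
qed

lemma ev_hom: "i < 31 \<Longrightarrow> ev i \<in> g3_hom (g3_par i)"
  by (simp add: g3_hom_def ev_space) (simp add: ev_def)

definition Ms :: "nat set" where "Ms = {i\<in>{..<31}. grd i < 0}"

lemma Ms_finite: "finite Ms" by (simp add: Ms_def)

lemma psum_m:
  assumes A: "A \<subseteq> Ms"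
  shows "(\<lambda>n. \<Sum>i\<in>A. c i * ev i n) \<in> g3_m"
proof -
  have z: "(\<Sum>i\<in>A. c i * ev i n) = 0" if "31 \<le> n \<or> 0 \<le> grd n" for n
  proof (rule sum.neutral, rule ballI)
    fix i assume "i \<in> A"
    then have "i < 31" "grd i < 0" using A by (auto simp: Ms_def)
    then have "n \<noteq> i" using that by auto
    then show "c i * ev i n = 0" by (simp add: ev_def)
  qed
  have "(\<lambda>n. \<Sum>i\<in>A. c i * ev i n) \<in> g3_space" unfolding g3_space_def using z by simp
  moreover have "\<forall>n<31. 0 \<le> grd n \<longrightarrow> (\<Sum>i\<in>A. c i * ev i n) = 0" using z by simp
  ultimately show ?thesis using m_iff by blast
qed

lemma phi_sum:
  assumes phi: "\<phi> \<in> g3_C1 d" and A: "A \<subseteq> Ms"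
  shows "\<phi> (\<lambda>n. \<Sum>i\<in>A. c i * ev i n) = (\<lambda>n. \<Sum>i\<in>A. c i * \<phi> (ev i) n)"
proof -
  have fin: "finite A" using A Ms_finite finite_subset by blast
  from phi have add: "\<forall>x\<in>g3_m. \<forall>y\<in>g3_m. \<phi> (\<lambda>i. x i + y i) = (\<lambda>i. \<phi> x i + \<phi> y i)"
    and sc: "\<forall>x\<in>g3_m. \<forall>c::complex. \<phi> (\<lambda>i. c * x i) = (\<lambda>i. c * \<phi> x i)"
    by (auto simp: g3_C1_def)
  show ?thesis using fin A
  proof (induction A rule: finite_induct)
    case empty
    have z: "(\<lambda>_. 0::complex) \<in> g3_m" by (simp add: m_iff g3_space_def)
    have h: "\<forall>c::complex. \<phi> (\<lambda>i. c * 0) = (\<lambda>i. c * \<phi> (\<lambda>_. 0) i)" using bspec[OF sc z] by simp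
    show ?case using h[rule_format, of 0] by simp
  next
    case (insert a A)
    have aM: "a < 31" "grd a < 0" using insert.prems by (auto simp: Ms_def)
    have m1: "(\<lambda>n. c a * ev a n) \<in> g3_m" using sc ev_m[OF aM] psum_m[of "{a}" c] insert.prems by auto
    have m2: "(\<lambda>n. \<Sum>i\<in>A. c i * ev i n) \<in> g3_m" using psum_m[of A c] insert.prems by auto
    have "\<phi> (\<lambda>n. \<Sum>i\<in>insert a A. c i * ev i n) = \<phi> (\<lambda>n. c a * ev a n + (\<Sum>i\<in>A. c i * ev i n))"
      using insert.hyps by simp
    also have "\<dots> = (\<lambda>n. \<phi> (\<lambda>n. c a * ev a n) n + \<phi> (\<lambda>n. \<Sum>i\<in>A. c i * ev i n) n)"
      using bspec[OF bspec[OF add m1] m2] by simp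
    also have "\<phi> (\<lambda>n. c a * ev a n) = (\<lambda>n. c a * \<phi> (ev a) n)"
      using bspec[OF sc ev_m[OF aM]] by blast
    also have "\<phi> (\<lambda>n. \<Sum>i\<in>A. c i * ev i n) = (\<lambda>n. \<Sum>i\<in>A. c i * \<phi> (ev i) n)"
      using insert by auto
    finally show ?case using insert.hyps by simp
  qed
qed

lemma m_expand:
  assumes x: "x \<in> g3_m"
  shows "x = (\<lambda>n. \<Sum>i\<in>Ms. x i * ev i n)"
proof -
  have "x n = (\<Sum>i\<in>Ms. x i * ev i n)" for n
  proof (cases "n \<in> Ms")
    case True
    have "(\<Sum>i\<in>Ms. x i * ev i n) = (\<Sum>i\<in>Ms. if i = n then x i else 0)"
      by (rule sum.cong) (auto simp: ev_def)
    also have "\<dots> = x n" using True Ms_finite by simp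
    finally show ?thesis by simp
  next
    case False
    have "x n = 0"
    proof (cases "n < 31")
      case True
      then have "0 \<le> grd n" using False by (auto simp: Ms_def)
      then show ?thesis using x True by (simp add: m_iff)
    next
      case False
      then show ?thesis using x by (simp add: m_iff g3_space_def)
    qed
    moreover have "(\<Sum>i\<in>Ms. x i * ev i n) = 0"
      using False by (intro sum.neutral ballI) (auto simp: ev_def)
    ultimately show ?thesis by simp
  qed
  then show ?thesis by (rule ext)
qed

lemma phi_lin:
  assumes "\<phi> \<in> g3_C1 d" "x \<in> g3_m"
  shows "\<phi> x = (\<lambda>n. \<Sum>i\<in>Ms. x i * \<phi> (ev i) n)"
proof -
  have "\<phi> x = \<phi> (\<lambda>n. \<Sum>i\<in>Ms. x i * ev i n)" using m_expand[OF assms(2)] by simp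
  also have "\<dots> = (\<lambda>n. \<Sum>i\<in>Ms. x i * \<phi> (ev i) n)" using phi_sum[OF assms(1)] by blast
  finally show ?thesis .
qed

lemma tab_graded0: "list_all (\<lambda>(a,b,c,p,q). grd c = grd a + grd b) g3_table"
  unfolding g3_table_def by simp

lemma row_graded: "(a,b,c,p,q) \<in> set (trow i) \<Longrightarrow> grd c = grd a + grd b"
proof -
  assume "(a,b,c,p,q) \<in> set (trow i)"
  then have "(a,b,c,p,q) \<in> set g3_table" by (rule trow_sub)
  then show ?thesis using tab_graded0 unfolding list_all_iff by fastforce
qed

lemma sc_grade: "g3_sc i j l \<noteq> 0 \<Longrightarrow> grd l = grd i + grd j"
proof (rule ccontr)
  assume ne: "g3_sc i j l \<noteq> 0" and g: "grd l \<noteq> grd i + grd j"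
  have "g3_sc i j l = 0" unfolding sc_row
  proof (rule sum_list_zero, rule ballI)
    fix e assume e: "e \<in> set (trow i)"
    obtain a b c p q where ee: "e = (a,b,c,p,q)" by (cases e) auto
    have "grd c = grd a + grd b" using e ee row_graded by simp
    then show "(case e of (a,b,c,p,q) \<Rightarrow> if a = i \<and> b = j \<and> c = l then of_int p / of_int q else 0) = (0::complex)"
      using g ee by auto
  qed
  then show False using ne by simp
qed

lemma rs_vanish:
  assumes "\<forall>b. grd b = grd k - grd i \<longrightarrow> y b = 0"
  shows "rs i k y = 0"
  unfolding rs_def
proof (rule sum_list_zero, rule ballI)
  fix e assume e: "e \<in> set (trow i)"
  obtain a b c p q where ee: "e = (a,b,c,p,q)" by (cases e) auto
  have "grd c = grd a + grd b" using e ee row_graded by simp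
  then show "(case e of (a,b,c,p,q) \<Rightarrow> if a = i \<and> c = k \<and> b < 31 then y b * (of_int p / of_int q) else 0) = 0"
    using assms ee by auto
qed

lemma TT_zero:
  assumes v: "\<forall>l. grd l \<noteq> d \<longrightarrow> v l = 0" and n: "grd n \<noteq> grd i + d"
  shows "TT v i n = 0"
proof -
  have "rs i n (\<lambda>l. if l < 31 \<and> g3_par l = p then v l else 0) = 0" for p
    by (rule rs_vanish) (use v n in auto)
  then show ?thesis by (simp add: TT_def)
qed


lemma Re_mq: "Re (z * (of_int p / of_int q)) = Re z * (of_int p / of_int q)"
proof -
  have "(of_int p / of_int q :: complex) = complex_of_real (of_int p / of_int q)" by simp
  then show ?thesis by simp
qed

lemma Im_mq: "Im (z * (of_int p / of_int q)) = Im z * (of_int p / of_int q)"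
proof -
  have "(of_int p / of_int q :: complex) = complex_of_real (of_int p / of_int q)" by simp
  then show ?thesis by simp
qed

lemma Re_rsT:
  fixes T :: "ent list" and y :: "nat \<Rightarrow> complex"
  shows "Re (sum_list (map (\<lambda>(a,b,c,p,q). if a = i \<and> c = k \<and> b < 31 then y b * (of_int p / of_int q) else 0) T))
    = sum_list (map (\<lambda>(a,b,c,p,q). if a = i \<and> c = k \<and> b < 31 then Re (y b) * (of_int p / of_int q) else 0) T)"
  by (induction T) (auto simp: Re_mq)

lemma Im_rsT:
  fixes T :: "ent list" and y :: "nat \<Rightarrow> complex"
  shows "Im (sum_list (map (\<lambda>(a,b,c,p,q). if a = i \<and> c = k \<and> b < 31 then y b * (of_int p / of_int q) else 0) T))
    = sum_list (map (\<lambda>(a,b,c,p,q). if a = i \<and> c = k \<and> b < 31 then Im (y b) * (of_int p / of_int q) else 0) T)"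
  by (induction T) (auto simp: Im_mq)

lemma Re_rs2T:
  fixes T :: "ent list" and y :: "nat \<Rightarrow> complex"
  shows "Re (sum_list (map (\<lambda>(a,b,c,p,q). if a = i \<and> b = j \<and> c < 31 then y c * (of_int p / of_int q) else 0) T))
    = sum_list (map (\<lambda>(a,b,c,p,q). if a = i \<and> b = j \<and> c < 31 then Re (y c) * (of_int p / of_int q) else 0) T)"
  by (induction T) (auto simp: Re_mq)

lemma Im_rs2T:
  fixes T :: "ent list" and y :: "nat \<Rightarrow> complex"
  shows "Im (sum_list (map (\<lambda>(a,b,c,p,q). if a = i \<and> b = j \<and> c < 31 then y c * (of_int p / of_int q) else 0) T))
    = sum_list (map (\<lambda>(a,b,c,p,q). if a = i \<and> b = j \<and> c < 31 then Im (y c) * (of_int p / of_int q) else 0) T)"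
  by (induction T) (auto simp: Im_mq)

lemma Re_rs: "Re (rs i k y) = rs i k (\<lambda>l. Re (y l))"
  unfolding rs_def by (rule Re_rsT)

lemma Im_rs: "Im (rs i k y) = rs i k (\<lambda>l. Im (y l))"
  unfolding rs_def by (rule Im_rsT)

lemma Re_rs2: "Re (rs2 i j y) = rs2 i j (\<lambda>l. Re (y l))"
  unfolding rs2_def by (rule Re_rs2T)

lemma Im_rs2: "Im (rs2 i j y) = rs2 i j (\<lambda>l. Im (y l))"
  unfolding rs2_def by (rule Im_rs2T)

lemma sgn_real: "((-1::complex) ^ n) = complex_of_real ((-1) ^ n)"
  by simp

lemma Re_sgn: "Re ((-1::complex) ^ n * z) = (-1) ^ n * Re z"
  unfolding sgn_real by simp

lemma Im_sgn: "Im ((-1::complex) ^ n * z) = (-1) ^ n * Im z"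
  unfolding sgn_real by simp

lemma Re_if0: "Re (if P then z else 0) = (if P then Re z else 0)"
  by simp

lemma Im_if0: "Im (if P then z else 0) = (if P then Im z else 0)"
  by simp

lemma Re_DD: "Re (DD F i j k) = DD (\<lambda>a b. Re (F a b)) i j k"
  unfolding DD_def by (simp add: Re_rs Re_rs2 Re_sgn Re_if0 del: Re_divide_numeral)

lemma Im_DD: "Im (DD F i j k) = DD (\<lambda>a b. Im (F a b)) i j k"
  unfolding DD_def by (simp add: Im_rs Im_rs2 Im_sgn Im_if0)

lemma Re_TT: "Re (TT v i n) = TT (\<lambda>l. Re (v l)) i n"
  unfolding TT_def by (simp add: Re_rs Re_sgn Re_if0)

lemma Im_TT: "Im (TT v i n) = TT (\<lambda>l. Im (v l)) i n"
  unfolding TT_def by (simp add: Im_rs Im_sgn Im_if0)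

lemma par01: "g3_par i \<in> {0, 1}"
  by (simp add: g3_par_def)

lemma brm:
  assumes i: "i < 31" "grd i < 0" and j: "j < 31" "grd j < 0"
  shows "g3_br (ev i) (ev j) \<in> g3_m"
proof -
  have "g3_br (ev i) (ev j) n = 0" if "31 \<le> n \<or> 0 \<le> grd n" for n
  proof (cases "n < 31")
    case True
    then have "0 \<le> grd n" using that by simp
    then have "grd n \<noteq> grd i + grd j" using i j by simp
    then have "g3_sc i j n = 0" using sc_grade by blast
    then show ?thesis using br_evev[OF i(1) j(1)] True by simp
  next
    case False
    then show ?thesis using br_evev[OF i(1) j(1)] by simp
  qed
  then show ?thesis unfolding m_iff g3_space_def by simp
qed

lemma cocyc:
  assumes phi: "\<phi> \<in> g3_Z1 d" and i: "i < 31" "grd i < 0" and j: "j < 31" "grd j < 0" and k: "k < 31"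
  shows "DD (\<lambda>a b. \<phi> (ev a) b) i j k = 0"
proof -
  have C1: "\<phi> \<in> g3_C1 d"
    and Z: "\<forall>a\<in>{0,1}. \<forall>b\<in>{0,1}. \<forall>x\<in>g3_m \<inter> g3_hom a. \<forall>y\<in>g3_m \<inter> g3_hom b. g3_d1 \<phi> a b x y = (\<lambda>_. 0)"
    using phi by (auto simp: g3_Z1_def)
  have xi: "ev i \<in> g3_m \<inter> g3_hom (g3_par i)" using ev_m[OF i] ev_hom[OF i(1)] by blast
  have yj: "ev j \<in> g3_m \<inter> g3_hom (g3_par j)" using ev_m[OF j] ev_hom[OF j(1)] by blast
  have "g3_d1 \<phi> (g3_par i) (g3_par j) (ev i) (ev j) = (\<lambda>_. 0)"
    using Z par01[of i] par01[of j] xi yj by blast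
  then have z: "g3_d1 \<phi> (g3_par i) (g3_par j) (ev i) (ev j) k = 0" by simp
  have "\<phi> (g3_br (ev i) (ev j)) = (\<lambda>n. \<Sum>l\<in>Ms. g3_br (ev i) (ev j) l * \<phi> (ev l) n)"
    by (rule phi_lin[OF C1 brm[OF i j]])
  then have "\<phi> (g3_br (ev i) (ev j)) k = (\<Sum>l\<in>Ms. g3_br (ev i) (ev j) l * \<phi> (ev l) k)" by simp
  also have "\<dots> = (\<Sum>l\<in>Ms. \<phi> (ev l) k * g3_sc i j l)"
    by (rule sum.cong) (auto simp: Ms_def br_evev[OF i(1) j(1)])
  also have "\<dots> = (\<Sum>l<31. if grd l < 0 then \<phi> (ev l) k * g3_sc i j l else 0)"
    unfolding Ms_def by (rule sum.inter_filter) simp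
  also have "\<dots> = (\<Sum>l<31. (if grd l < 0 then \<phi> (ev l) k else 0) * g3_sc i j l)"
    by (rule sum.cong) auto
  also have "\<dots> = rs2 i j (\<lambda>l. if grd l < 0 then \<phi> (ev l) k else 0)"
    by (rule sum_rs2)
  finally have pb: "\<phi> (g3_br (ev i) (ev j)) k = rs2 i j (\<lambda>l. if grd l < 0 then \<phi> (ev l) k else 0)" .
  have "g3_d1 \<phi> (g3_par i) (g3_par j) (ev i) (ev j) k = DD (\<lambda>a b. \<phi> (ev a) b) i j k"
    unfolding g3_d1_def DD_def g3_ppart_def
    by (simp only: br_ev[OF i(1) k] br_ev[OF j(1) k] pb)
  then show ?thesis using z by simp
qed

lemma d0_expand:
  assumes x: "x \<in> g3_m" "x \<in> g3_hom a" and n: "n < 31"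
  shows "g3_d0 v a x n = (\<Sum>i\<in>Ms. x i * TT v i n)"
proof -
  have hom: "x i = 0" if "g3_par i \<noteq> a" for i using x(2) that by (simp add: g3_hom_def)
  have g: "x i = 0" if "i < 31" "i \<notin> Ms" for i
    using x(1) that by (auto simp: m_iff Ms_def not_less)
  have "g3_d0 v a x n = (\<Sum>p\<in>{0,1::nat}. (-1) ^ (a * p) * (\<Sum>i<31. x i * rs i n (g3_ppart p v)))"
    by (simp add: g3_d0_def br_gen[OF n])
  also have "\<dots> = (\<Sum>i<31. x i * (\<Sum>p\<in>{0,1::nat}. (-1) ^ (a * p) * rs i n (g3_ppart p v)))"
    by (simp add: sum_distrib_left sum.distrib algebra_simps)
  also have "\<dots> = (\<Sum>i\<in>Ms. x i * TT v i n)"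
  proof (rule sum.mono_neutral_cong_right)
    show "finite {..<31::nat}" by simp
    show "Ms \<subseteq> {..<31}" by (auto simp: Ms_def)
    show "\<forall>i\<in>{..<31} - Ms. x i * (\<Sum>p\<in>{0,1::nat}. (-1) ^ (a * p) * rs i n (g3_ppart p v)) = 0"
      using g by auto
    show "x i * (\<Sum>p\<in>{0,1::nat}. (-1) ^ (a * p) * rs i n (g3_ppart p v)) = x i * TT v i n" if "i \<in> Ms" for i
    proof (cases "g3_par i = a")
      case True
      then show ?thesis by (simp add: TT_def g3_ppart_def)
    next
      case False
      then show ?thesis using hom by simp
    qed
  qed
  finally show ?thesis .
qed


lemma core_0:
  fixes F :: "nat \<Rightarrow> nat \<Rightarrow> real"
  assumes dd: "d = 0"
    and G0: "\<And>i k. i < 31 \<Longrightarrow> grd i < 0 \<Longrightarrow> k < 31 \<Longrightarrow> grd k \<noteq> grd i + d \<Longrightarrow> F i k = 0"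
    and C: "\<And>i j k. i < 31 \<Longrightarrow> grd i < 0 \<Longrightarrow> j < 31 \<Longrightarrow> grd j < 0 \<Longrightarrow> k < 31 \<Longrightarrow> DD F i j k = 0"
  shows "\<exists>v. (\<forall>l. (31 \<le> l \<or> grd l \<noteq> d) \<longrightarrow> v l = 0) \<and>
      (\<forall>i<31. \<forall>n<31. grd i < 0 \<longrightarrow> grd n = grd i + d \<longrightarrow> F i n = TT v i n)"
proof -
  have G: "\<And>i k. i < 31 \<Longrightarrow> grd i < 0 \<Longrightarrow> k < 31 \<Longrightarrow> grd k \<noteq> grd i + 0 \<Longrightarrow> F i k = 0"
    using G0 dd by blast
  define v where "v = (\<lambda>l::nat. if l = 0 then (1) * F 3 3 else if l = 1 then (1) * F 6 6 else if l = 14 then (1) * F 6 6 + (-1) * F 23 23 else if l = 15 then (-1) * F 24 23 else if l = 16 then (-1) * F 23 24 else if l = 17 then (1) * F 3 25 else if l = 18 then (1) * F 3 26 else (0::real))"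
  note ev = DD_def TT_def rs_def rs2_def trow_3 trow_5 trow_6 trow_8 trow_12 trow_13 trow_23 trow_24 trow_25 trow_26 trow_27 trow_28
  note [simp] = ev G algebra_simps
  note e_3_5_6 = C[of 3 5 6, simplified]
  note e_3_5_23 = C[of 3 5 23, simplified]
  note e_3_5_24 = C[of 3 5 24, simplified]
  note e_3_6_12 = C[of 3 6 12, simplified]
  note e_3_8_5 = C[of 3 8 5, simplified]
  note e_3_8_27 = C[of 3 8 27, simplified]
  note e_3_8_28 = C[of 3 8 28, simplified]
  note e_3_12_13 = C[of 3 12 13, simplified]
  note e_3_23_12 = C[of 3 23 12, simplified]
  note e_3_24_12 = C[of 3 24 12, simplified]
  note e_3_25_5 = C[of 3 25 5, simplified]
  note e_3_26_5 = C[of 3 26 5, simplified]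
  note e_3_27_23 = C[of 3 27 23, simplified]
  note e_3_27_24 = C[of 3 27 24, simplified]
  note e_3_28_23 = C[of 3 28 23, simplified]
  note e_3_28_24 = C[of 3 28 24, simplified]
  note e_5_6_13 = C[of 5 6 13, simplified]
  note e_5_8_6 = C[of 5 8 6, simplified]
  note e_5_8_23 = C[of 5 8 23, simplified]
  note e_5_8_24 = C[of 5 8 24, simplified]
  note e_5_25_23 = C[of 5 25 23, simplified]
  note e_5_25_24 = C[of 5 25 24, simplified]
  note e_5_26_23 = C[of 5 26 23, simplified]
  note e_5_26_24 = C[of 5 26 24, simplified]
  note e_6_25_12 = C[of 6 25 12, simplified]
  note e_6_26_12 = C[of 6 26 12, simplified]
  note e_6_27_13 = C[of 6 27 13, simplified]
  note e_6_28_13 = C[of 6 28 13, simplified]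
  note e_23_26_12 = C[of 23 26 12, simplified]
  have t_3_3: "F 3 3 = TT v 3 3" by (simp add: v_def; linarith)
  have t_3_8: "F 3 8 = TT v 3 8" by (simp add: v_def; use e_3_12_13 in linarith)
  have t_3_25: "F 3 25 = TT v 3 25" by (simp add: v_def; linarith)
  have t_3_26: "F 3 26 = TT v 3 26" by (simp add: v_def; linarith)
  have t_5_5: "F 5 5 = TT v 5 5" by (simp add: v_def; use e_3_5_6 in linarith)
  have t_5_27: "F 5 27 = TT v 5 27" by (simp add: v_def; use e_3_8_27 in linarith)
  have t_5_28: "F 5 28 = TT v 5 28" by (simp add: v_def; use e_3_8_28 in linarith)
  have t_6_6: "F 6 6 = TT v 6 6" by (simp add: v_def; linarith)
  have t_6_23: "F 6 23 = TT v 6 23" by (simp add: v_def; use e_3_8_27 e_3_5_23 in linarith)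
  have t_6_24: "F 6 24 = TT v 6 24" by (simp add: v_def; use e_3_8_28 e_3_5_24 in linarith)
  have t_8_3: "F 8 3 = TT v 8 3" by (simp add: v_def; use e_5_8_6 in linarith)
  have t_8_8: "F 8 8 = TT v 8 8" by (simp add: v_def; use e_3_5_6 e_3_8_5 in linarith)
  have t_8_25: "F 8 25 = TT v 8 25" by (simp add: v_def; use e_5_8_23 in linarith)
  have t_8_26: "F 8 26 = TT v 8 26" by (simp add: v_def; use e_5_8_24 in linarith)
  have t_12_12: "F 12 12 = TT v 12 12" by (simp add: v_def; use e_3_6_12 in linarith)
  have t_13_13: "F 13 13 = TT v 13 13" by (simp add: v_def; use e_3_5_6 e_5_6_13 in linarith)
  have t_23_6: "F 23 6 = TT v 23 6" by (simp add: v_def; use e_3_23_12 in linarith)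
  have t_23_23: "F 23 23 = TT v 23 23" by (simp add: v_def; linarith)
  have t_23_24: "F 23 24 = TT v 23 24" by (simp add: v_def; linarith)
  have t_24_6: "F 24 6 = TT v 24 6" by (simp add: v_def; use e_3_24_12 in linarith)
  have t_24_23: "F 24 23 = TT v 24 23" by (simp add: v_def; linarith)
  have t_24_24: "F 24 24 = TT v 24 24" by (simp add: v_def; use e_3_5_6 e_3_6_12 e_5_26_24 e_23_26_12 in linarith)
  have t_25_3: "F 25 3 = TT v 25 3" by (simp add: v_def; use e_3_8_28 e_6_25_12 e_3_5_24 in linarith)
  have t_25_8: "F 25 8 = TT v 25 8" by (simp add: v_def; use e_3_25_5 in linarith)
  have t_25_25: "F 25 25 = TT v 25 25" by (simp add: v_def; use e_3_5_6 e_5_25_23 in linarith)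
  have t_25_26: "F 25 26 = TT v 25 26" by (simp add: v_def; use e_5_25_24 in linarith)
  have t_26_3: "F 26 3 = TT v 26 3" by (simp add: v_def; use e_3_8_27 e_6_26_12 e_3_5_23 in linarith)
  have t_26_8: "F 26 8 = TT v 26 8" by (simp add: v_def; use e_3_26_5 in linarith)
  have t_26_25: "F 26 25 = TT v 26 25" by (simp add: v_def; use e_5_26_23 in linarith)
  have t_26_26: "F 26 26 = TT v 26 26" by (simp add: v_def; use e_3_6_12 e_23_26_12 in linarith)
  have t_27_5: "F 27 5 = TT v 27 5" by (simp add: v_def; use e_3_8_28 e_3_5_24 e_6_27_13 in linarith)
  have t_27_27: "F 27 27 = TT v 27 27" by (simp add: v_def; use e_3_27_23 in linarith)
  have t_27_28: "F 27 28 = TT v 27 28" by (simp add: v_def; use e_3_27_24 in linarith)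
  have t_28_5: "F 28 5 = TT v 28 5" by (simp add: v_def; use e_3_8_27 e_3_5_23 e_6_28_13 in linarith)
  have t_28_27: "F 28 27 = TT v 28 27" by (simp add: v_def; use e_3_28_23 in linarith)
  have t_28_28: "F 28 28 = TT v 28 28" by (simp add: v_def; use e_3_5_6 e_3_6_12 e_3_28_24 e_5_26_24 e_23_26_12 in linarith)
  have sup: "\<forall>l. (31 \<le> l \<or> grd l \<noteq> 0) \<longrightarrow> v l = 0" by (auto simp: v_def)
  have tg: "\<forall>i<31. \<forall>n<31. grd i < 0 \<longrightarrow> grd n = grd i + 0 \<longrightarrow> F i n = TT v i n"
    by (simp only: all31) (simp del: ev add: t_3_3 t_3_8 t_3_25 t_3_26 t_5_5 t_5_27 t_5_28 t_6_6 t_6_23 t_6_24 t_8_3 t_8_8 t_8_25 t_8_26 t_12_12 t_13_13 t_23_6 t_23_23 t_23_24 t_24_6 t_24_23 t_24_24 t_25_3 t_25_8 t_25_25 t_25_26 t_26_3 t_26_8 t_26_25 t_26_26 t_27_5 t_27_27 t_27_28 t_28_5 t_28_27 t_28_28)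
  show ?thesis unfolding dd using sup tg by blast
qed



lemma core_1:
  fixes F :: "nat \<Rightarrow> nat \<Rightarrow> real"
  assumes dd: "d = 1"
    and G0: "\<And>i k. i < 31 \<Longrightarrow> grd i < 0 \<Longrightarrow> k < 31 \<Longrightarrow> grd k \<noteq> grd i + d \<Longrightarrow> F i k = 0"
    and C: "\<And>i j k. i < 31 \<Longrightarrow> grd i < 0 \<Longrightarrow> j < 31 \<Longrightarrow> grd j < 0 \<Longrightarrow> k < 31 \<Longrightarrow> DD F i j k = 0"
  shows "\<exists>v. (\<forall>l. (31 \<le> l \<or> grd l \<noteq> d) \<longrightarrow> v l = 0) \<and>
      (\<forall>i<31. \<forall>n<31. grd i < 0 \<longrightarrow> grd n = grd i + d \<longrightarrow> F i n = TT v i n)"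
proof -
  have G: "\<And>i k. i < 31 \<Longrightarrow> grd i < 0 \<Longrightarrow> k < 31 \<Longrightarrow> grd k \<noteq> grd i + 1 \<Longrightarrow> F i k = 0"
    using G0 dd by blast
  define v where "v = (\<lambda>l::nat. if l = 2 then (-1) * F 3 0 else if l = 10 then (-1) * F 5 3 else if l = 19 then (2) * F 3 17 else if l = 20 then (2) * F 3 18 else (0::real))"
  note ev = DD_def TT_def rs_def rs2_def trow_3 trow_5 trow_6 trow_8 trow_12 trow_13 trow_23 trow_24 trow_25 trow_26 trow_27 trow_28
  note [simp] = ev G algebra_simps
  note e_3_5_27 = C[of 3 5 27, simplified]
  note e_3_5_28 = C[of 3 5 28, simplified]
  note e_3_6_6 = C[of 3 6 6, simplified]
  note e_3_6_23 = C[of 3 6 23, simplified]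
  note e_3_6_24 = C[of 3 6 24, simplified]
  note e_3_8_3 = C[of 3 8 3, simplified]
  note e_3_8_8 = C[of 3 8 8, simplified]
  note e_3_13_13 = C[of 3 13 13, simplified]
  note e_3_23_6 = C[of 3 23 6, simplified]
  note e_3_23_23 = C[of 3 23 23, simplified]
  note e_3_23_24 = C[of 3 23 24, simplified]
  note e_3_24_6 = C[of 3 24 6, simplified]
  note e_3_24_23 = C[of 3 24 23, simplified]
  note e_3_24_24 = C[of 3 24 24, simplified]
  note e_3_25_3 = C[of 3 25 3, simplified]
  note e_3_26_3 = C[of 3 26 3, simplified]
  note e_5_6_12 = C[of 5 6 12, simplified]
  note e_5_12_13 = C[of 5 12 13, simplified]
  note e_5_23_12 = C[of 5 23 12, simplified]
  note e_5_24_12 = C[of 5 24 12, simplified]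
  note e_5_27_23 = C[of 5 27 23, simplified]
  note e_5_27_24 = C[of 5 27 24, simplified]
  note e_5_28_23 = C[of 5 28 23, simplified]
  note e_5_28_24 = C[of 5 28 24, simplified]
  note e_6_8_6 = C[of 6 8 6, simplified]
  note e_6_8_23 = C[of 6 8 23, simplified]
  note e_6_8_24 = C[of 6 8 24, simplified]
  note e_6_25_6 = C[of 6 25 6, simplified]
  note e_6_25_23 = C[of 6 25 23, simplified]
  note e_6_25_24 = C[of 6 25 24, simplified]
  note e_6_26_6 = C[of 6 26 6, simplified]
  note e_6_26_23 = C[of 6 26 23, simplified]
  note e_6_26_24 = C[of 6 26 24, simplified]
  note e_6_27_12 = C[of 6 27 12, simplified]
  note e_6_28_12 = C[of 6 28 12, simplified]
  note e_8_23_23 = C[of 8 23 23, simplified]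
  note e_8_23_24 = C[of 8 23 24, simplified]
  note e_8_24_23 = C[of 8 24 23, simplified]
  note e_12_27_13 = C[of 12 27 13, simplified]
  note e_12_28_13 = C[of 12 28 13, simplified]
  note e_23_23_13 = C[of 23 23 13, simplified]
  note e_23_24_13 = C[of 23 24 13, simplified]
  note e_23_25_24 = C[of 23 25 24, simplified]
  note e_23_26_24 = C[of 23 26 24, simplified]
  note e_24_24_13 = C[of 24 24 13, simplified]
  note e_24_25_23 = C[of 24 25 23, simplified]
  note e_24_26_23 = C[of 24 26 23, simplified]
  note e_25_25_25 = C[of 25 25 25, simplified]
  note e_26_26_26 = C[of 26 26 26, simplified]
  have t_3_0: "F 3 0 = TT v 3 0" by (simp add: v_def; linarith)
  have t_3_1: "F 3 (Suc 0) = TT v 3 (Suc 0)" by (simp add: v_def; use e_3_13_13 in linarith)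
  have t_3_14: "F 3 14 = TT v 3 14" by (simp add: v_def; use e_3_23_23 e_23_24_13 e_3_24_24 in linarith)
  have t_3_15: "F 3 15 = TT v 3 15" by (simp add: v_def; use e_3_24_23 e_24_24_13 in linarith)
  have t_3_16: "F 3 16 = TT v 3 16" by (simp add: v_def; use e_3_23_24 e_23_23_13 in linarith)
  have t_3_17: "F 3 17 = TT v 3 17" by (simp add: v_def; linarith)
  have t_3_18: "F 3 18 = TT v 3 18" by (simp add: v_def; linarith)
  have t_5_3: "F 5 3 = TT v 5 3" by (simp add: v_def; linarith)
  have t_5_8: "F 5 8 = TT v 5 8" by (simp add: v_def; use e_3_13_13 e_3_8_8 in linarith)
  have t_5_25: "F 5 25 = TT v 5 25" by (simp add: v_def; use e_5_24_12 in linarith)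
  have t_5_26: "F 5 26 = TT v 5 26" by (simp add: v_def; use e_5_23_12 in linarith)
  have t_6_5: "F 6 5 = TT v 6 5" by (simp add: v_def; use e_3_6_6 e_3_8_8 e_5_12_13 in linarith)
  have t_6_27: "F 6 27 = TT v 6 27" by (simp add: v_def; use e_3_5_27 in linarith)
  have t_6_28: "F 6 28 = TT v 6 28" by (simp add: v_def; use e_3_5_28 in linarith)
  have t_8_0: "F 8 0 = TT v 8 0" by (simp add: v_def; use e_3_8_3 in linarith)
  have t_8_1: "F 8 (Suc 0) = TT v 8 (Suc 0)" by (simp add: v_def; use e_6_8_6 in linarith)
  have t_8_14: "F 8 14 = TT v 8 14" by (simp add: v_def; use e_8_23_23 e_6_8_6 in linarith)
  have t_8_15: "F 8 15 = TT v 8 15" by (simp add: v_def; use e_8_24_23 in linarith)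
  have t_8_16: "F 8 16 = TT v 8 16" by (simp add: v_def; use e_8_23_24 in linarith)
  have t_8_17: "F 8 17 = TT v 8 17" by (simp add: v_def; use e_6_8_23 in linarith)
  have t_8_18: "F 8 18 = TT v 8 18" by (simp add: v_def; use e_6_8_24 in linarith)
  have t_12_6: "F 12 6 = TT v 12 6" by (simp add: v_def; use e_3_13_13 e_3_8_8 e_5_12_13 in linarith)
  have t_12_23: "F 12 23 = TT v 12 23" by (simp add: v_def; use e_3_5_27 e_3_6_23 in linarith)
  have t_12_24: "F 12 24 = TT v 12 24" by (simp add: v_def; use e_3_5_28 e_3_6_24 in linarith)
  have t_13_12: "F 13 12 = TT v 13 12" by (simp add: v_def; use e_5_6_12 in linarith)
  have t_23_5: "F 23 5 = TT v 23 5" by (simp add: v_def; use e_3_23_6 in linarith)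
  have t_23_27: "F 23 27 = TT v 23 27" by (simp add: v_def; use e_3_13_13 e_23_24_13 e_3_24_24 e_3_23_23 in linarith)
  have t_23_28: "F 23 28 = TT v 23 28" by (simp add: v_def; use e_23_23_13 in linarith)
  have t_24_5: "F 24 5 = TT v 24 5" by (simp add: v_def; use e_3_24_6 in linarith)
  have t_24_27: "F 24 27 = TT v 24 27" by (simp add: v_def; use e_24_24_13 in linarith)
  have t_24_28: "F 24 28 = TT v 24 28" by (simp add: v_def; use e_3_13_13 e_3_24_24 e_3_23_23 e_23_24_13 in linarith)
  have t_25_0: "F 25 0 = TT v 25 0" by (simp add: v_def; use e_3_25_3 in linarith)
  have t_25_1: "F 25 (Suc 0) = TT v 25 (Suc 0)" by (simp add: v_def; use e_3_5_28 e_6_25_6 in linarith)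
  have t_25_14: "F 25 14 = TT v 25 14" by (simp add: v_def; use e_3_25_3 e_25_25_25 in linarith)
  have t_25_15: "F 25 15 = TT v 25 15" by (simp add: v_def; use e_3_5_27 e_3_24_6 e_3_6_23 e_24_25_23 in linarith)
  have t_25_16: "F 25 16 = TT v 25 16" by (simp add: v_def; use e_23_25_24 in linarith)
  have t_25_17: "F 25 17 = TT v 25 17" by (simp add: v_def; use e_6_25_23 e_3_6_6 e_3_8_8 e_5_12_13 in linarith)
  have t_25_18: "F 25 18 = TT v 25 18" by (simp add: v_def; use e_6_25_24 in linarith)
  have t_26_0: "F 26 0 = TT v 26 0" by (simp add: v_def; use e_3_26_3 in linarith)
  have t_26_1: "F 26 (Suc 0) = TT v 26 (Suc 0)" by (simp add: v_def; use e_3_5_27 e_6_26_6 in linarith)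
  have t_26_14: "F 26 14 = TT v 26 14" by (simp add: v_def; use e_3_26_3 e_26_26_26 in linarith)
  have t_26_15: "F 26 15 = TT v 26 15" by (simp add: v_def; use e_24_26_23 in linarith)
  have t_26_16: "F 26 16 = TT v 26 16" by (simp add: v_def; use e_3_5_28 e_3_23_6 e_3_6_24 e_23_26_24 in linarith)
  have t_26_17: "F 26 17 = TT v 26 17" by (simp add: v_def; use e_6_26_23 in linarith)
  have t_26_18: "F 26 18 = TT v 26 18" by (simp add: v_def; use e_3_6_6 e_6_26_24 e_3_8_8 e_5_12_13 in linarith)
  have t_27_3: "F 27 3 = TT v 27 3" by (simp add: v_def; use e_6_27_12 in linarith)
  have t_27_8: "F 27 8 = TT v 27 8" by (simp add: v_def; use e_3_5_28 e_3_6_24 e_12_27_13 in linarith)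
  have t_27_25: "F 27 25 = TT v 27 25" by (simp add: v_def; use e_5_27_23 in linarith)
  have t_27_26: "F 27 26 = TT v 27 26" by (simp add: v_def; use e_5_27_24 in linarith)
  have t_28_3: "F 28 3 = TT v 28 3" by (simp add: v_def; use e_6_28_12 in linarith)
  have t_28_8: "F 28 8 = TT v 28 8" by (simp add: v_def; use e_3_5_27 e_3_6_23 e_12_28_13 in linarith)
  have t_28_25: "F 28 25 = TT v 28 25" by (simp add: v_def; use e_5_28_23 in linarith)
  have t_28_26: "F 28 26 = TT v 28 26" by (simp add: v_def; use e_5_28_24 in linarith)
  have sup: "\<forall>l. (31 \<le> l \<or> grd l \<noteq> 1) \<longrightarrow> v l = 0" by (auto simp: v_def)
  have tg: "\<forall>i<31. \<forall>n<31. grd i < 0 \<longrightarrow> grd n = grd i + 1 \<longrightarrow> F i n = TT v i n"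
    by (simp only: all31) (simp del: ev add: t_3_0 t_3_1 t_3_14 t_3_15 t_3_16 t_3_17 t_3_18 t_5_3 t_5_8 t_5_25 t_5_26 t_6_5 t_6_27 t_6_28 t_8_0 t_8_1 t_8_14 t_8_15 t_8_16 t_8_17 t_8_18 t_12_6 t_12_23 t_12_24 t_13_12 t_23_5 t_23_27 t_23_28 t_24_5 t_24_27 t_24_28 t_25_0 t_25_1 t_25_14 t_25_15 t_25_16 t_25_17 t_25_18 t_26_0 t_26_1 t_26_14 t_26_15 t_26_16 t_26_17 t_26_18 t_27_3 t_27_8 t_27_25 t_27_26 t_28_3 t_28_8 t_28_25 t_28_26)
  show ?thesis unfolding dd using sup tg by blast
qed



lemma core_2:
  fixes F :: "nat \<Rightarrow> nat \<Rightarrow> real"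
  assumes dd: "d = 2"
    and G0: "\<And>i k. i < 31 \<Longrightarrow> grd i < 0 \<Longrightarrow> k < 31 \<Longrightarrow> grd k \<noteq> grd i + d \<Longrightarrow> F i k = 0"
    and C: "\<And>i j k. i < 31 \<Longrightarrow> grd i < 0 \<Longrightarrow> j < 31 \<Longrightarrow> grd j < 0 \<Longrightarrow> k < 31 \<Longrightarrow> DD F i j k = 0"
  shows "\<exists>v. (\<forall>l. (31 \<le> l \<or> grd l \<noteq> d) \<longrightarrow> v l = 0) \<and>
      (\<forall>i<31. \<forall>n<31. grd i < 0 \<longrightarrow> grd n = grd i + d \<longrightarrow> F i n = TT v i n)"
proof -
  have G: "\<And>i k. i < 31 \<Longrightarrow> grd i < 0 \<Longrightarrow> k < 31 \<Longrightarrow> grd k \<noteq> grd i + 2 \<Longrightarrow> F i k = 0"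
    using G0 dd by blast
  define v where "v = (\<lambda>l::nat. if l = 4 then (-2 / 3) * F 3 10 else if l = 21 then (2) * F 5 17 else if l = 22 then (2) * F 5 18 else (0::real))"
  note ev = DD_def TT_def rs_def rs2_def trow_3 trow_5 trow_6 trow_8 trow_12 trow_13 trow_23 trow_24 trow_25 trow_26 trow_27 trow_28
  note [simp] = ev G algebra_simps
  note e_3_5_8 = C[of 3 5 8, simplified]
  note e_3_5_25 = C[of 3 5 25, simplified]
  note e_3_5_26 = C[of 3 5 26, simplified]
  note e_3_6_27 = C[of 3 6 27, simplified]
  note e_3_6_28 = C[of 3 6 28, simplified]
  note e_3_8_1 = C[of 3 8 1, simplified]
  note e_3_8_14 = C[of 3 8 14, simplified]
  note e_3_8_15 = C[of 3 8 15, simplified]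
  note e_3_8_16 = C[of 3 8 16, simplified]
  note e_3_8_17 = C[of 3 8 17, simplified]
  note e_3_8_18 = C[of 3 8 18, simplified]
  note e_3_12_6 = C[of 3 12 6, simplified]
  note e_3_13_12 = C[of 3 13 12, simplified]
  note e_3_23_5 = C[of 3 23 5, simplified]
  note e_3_23_27 = C[of 3 23 27, simplified]
  note e_3_24_5 = C[of 3 24 5, simplified]
  note e_3_25_14 = C[of 3 25 14, simplified]
  note e_3_25_15 = C[of 3 25 15, simplified]
  note e_3_25_18 = C[of 3 25 18, simplified]
  note e_3_26_17 = C[of 3 26 17, simplified]
  note e_3_27_3 = C[of 3 27 3, simplified]
  note e_3_28_3 = C[of 3 28 3, simplified]
  note e_5_8_3 = C[of 5 8 3, simplified]
  note e_5_12_12 = C[of 5 12 12, simplified]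
  note e_5_23_6 = C[of 5 23 6, simplified]
  note e_5_24_6 = C[of 5 24 6, simplified]
  note e_6_8_5 = C[of 6 8 5, simplified]
  note e_6_25_5 = C[of 6 25 5, simplified]
  note e_6_26_5 = C[of 6 26 5, simplified]
  note e_6_27_6 = C[of 6 27 6, simplified]
  note e_6_27_23 = C[of 6 27 23, simplified]
  note e_6_27_24 = C[of 6 27 24, simplified]
  note e_6_28_6 = C[of 6 28 6, simplified]
  note e_6_28_23 = C[of 6 28 23, simplified]
  note e_6_28_24 = C[of 6 28 24, simplified]
  note e_8_12_6 = C[of 8 12 6, simplified]
  note e_8_12_23 = C[of 8 12 23, simplified]
  note e_8_12_24 = C[of 8 12 24, simplified]
  note e_8_23_27 = C[of 8 23 27, simplified]
  note e_8_23_28 = C[of 8 23 28, simplified]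
  note e_8_24_27 = C[of 8 24 27, simplified]
  note e_8_24_28 = C[of 8 24 28, simplified]
  note e_8_25_14 = C[of 8 25 14, simplified]
  note e_8_25_15 = C[of 8 25 15, simplified]
  note e_8_25_16 = C[of 8 25 16, simplified]
  note e_8_26_14 = C[of 8 26 14, simplified]
  note e_8_26_15 = C[of 8 26 15, simplified]
  note e_8_26_16 = C[of 8 26 16, simplified]
  note e_13_25_12 = C[of 13 25 12, simplified]
  note e_13_26_12 = C[of 13 26 12, simplified]
  note e_25_25_15 = C[of 25 25 15, simplified]
  note e_26_26_16 = C[of 26 26 16, simplified]
  have t_3_2: "F 3 2 = TT v 3 2" by (simp add: v_def; use e_3_23_27 in linarith)
  have t_3_10: "F 3 10 = TT v 3 10" by (simp add: v_def; linarith)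
  have t_3_19: "F 3 19 = TT v 3 19" by (simp add: v_def; use e_3_25_15 in linarith)
  have t_3_20: "F 3 20 = TT v 3 20" by (simp add: v_def; use e_3_25_14 in linarith)
  have t_5_0: "F 5 0 = TT v 5 0" by (simp add: v_def; use e_3_13_12 e_5_12_12 e_3_8_1 e_8_12_6 in linarith)
  have t_5_1: "F 5 (Suc 0) = TT v 5 (Suc 0)" by (simp add: v_def; use e_3_8_1 e_3_13_12 e_8_12_6 in linarith)
  have t_5_14: "F 5 14 = TT v 5 14" by (simp add: v_def; use e_3_8_14 in linarith)
  have t_5_15: "F 5 15 = TT v 5 15" by (simp add: v_def; use e_3_8_15 in linarith)
  have t_5_16: "F 5 16 = TT v 5 16" by (simp add: v_def; use e_3_8_16 in linarith)
  have t_5_17: "F 5 17 = TT v 5 17" by (simp add: v_def; linarith)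
  have t_5_18: "F 5 18 = TT v 5 18" by (simp add: v_def; linarith)
  have t_6_3: "F 6 3 = TT v 6 3" by (simp add: v_def; use e_3_13_12 e_6_8_5 e_8_12_6 in linarith)
  have t_6_8: "F 6 8 = TT v 6 8" by (simp add: v_def; use e_3_5_8 e_3_23_27 in linarith)
  have t_6_25: "F 6 25 = TT v 6 25" by (simp add: v_def; use e_3_5_25 in linarith)
  have t_6_26: "F 6 26 = TT v 6 26" by (simp add: v_def; use e_3_5_26 in linarith)
  have t_8_2: "F 8 2 = TT v 8 2" by (simp add: v_def; use e_3_13_12 e_8_12_6 in linarith)
  have t_8_10: "F 8 10 = TT v 8 10" by (simp add: v_def; use e_5_8_3 in linarith)
  have t_8_19: "F 8 19 = TT v 8 19" by (simp add: v_def; use e_3_8_17 in linarith)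
  have t_8_20: "F 8 20 = TT v 8 20" by (simp add: v_def; use e_3_8_18 in linarith)
  have t_12_5: "F 12 5 = TT v 12 5" by (simp add: v_def; use e_3_12_6 e_3_23_27 in linarith)
  have t_12_27: "F 12 27 = TT v 12 27" by (simp add: v_def; use e_3_6_27 e_3_25_15 in linarith)
  have t_12_28: "F 12 28 = TT v 12 28" by (simp add: v_def; use e_3_6_28 e_3_25_14 in linarith)
  have t_13_6: "F 13 6 = TT v 13 6" by (simp add: v_def; use e_3_13_12 in linarith)
  have t_13_23: "F 13 23 = TT v 13 23" by (simp add: v_def; use e_3_8_17 e_8_12_23 in linarith)
  have t_13_24: "F 13 24 = TT v 13 24" by (simp add: v_def; use e_3_8_18 e_8_12_24 in linarith)
  have t_23_3: "F 23 3 = TT v 23 3" by (simp add: v_def; use e_5_23_6 in linarith)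
  have t_23_8: "F 23 8 = TT v 23 8" by (simp add: v_def; use e_3_23_5 e_3_25_14 in linarith)
  have t_23_25: "F 23 25 = TT v 23 25" by (simp add: v_def; use e_3_13_12 e_8_12_6 e_8_23_27 in linarith)
  have t_23_26: "F 23 26 = TT v 23 26" by (simp add: v_def; use e_8_23_28 in linarith)
  have t_24_3: "F 24 3 = TT v 24 3" by (simp add: v_def; use e_5_24_6 in linarith)
  have t_24_8: "F 24 8 = TT v 24 8" by (simp add: v_def; use e_3_24_5 e_3_25_15 in linarith)
  have t_24_25: "F 24 25 = TT v 24 25" by (simp add: v_def; use e_8_24_27 in linarith)
  have t_24_26: "F 24 26 = TT v 24 26" by (simp add: v_def; use e_3_13_12 e_8_12_6 e_8_24_28 in linarith)
  have t_25_2: "F 25 2 = TT v 25 2" by (simp add: v_def; use e_6_25_5 in linarith)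
  have t_25_10: "F 25 10 = TT v 25 10" by (simp add: v_def; use e_3_8_18 e_13_25_12 e_8_12_24 in linarith)
  have t_25_19: "F 25 19 = TT v 25 19" by (simp add: v_def; use e_25_25_15 in linarith)
  have t_25_20: "F 25 20 = TT v 25 20" by (simp add: v_def; use e_3_25_18 in linarith)
  have t_26_2: "F 26 2 = TT v 26 2" by (simp add: v_def; use e_6_26_5 in linarith)
  have t_26_10: "F 26 10 = TT v 26 10" by (simp add: v_def; use e_3_8_17 e_13_26_12 e_8_12_23 in linarith)
  have t_26_19: "F 26 19 = TT v 26 19" by (simp add: v_def; use e_3_26_17 in linarith)
  have t_26_20: "F 26 20 = TT v 26 20" by (simp add: v_def; use e_26_26_16 in linarith)
  have t_27_0: "F 27 0 = TT v 27 0" by (simp add: v_def; use e_5_23_6 e_3_27_3 in linarith)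
  have t_27_1: "F 27 (Suc 0) = TT v 27 (Suc 0)" by (simp add: v_def; use e_3_5_26 e_6_27_6 in linarith)
  have t_27_14: "F 27 14 = TT v 27 14" by (simp add: v_def; use e_3_8_18 e_8_25_14 in linarith)
  have t_27_15: "F 27 15 = TT v 27 15" by (simp add: v_def; use e_3_8_17 e_8_25_15 in linarith)
  have t_27_16: "F 27 16 = TT v 27 16" by (simp add: v_def; use e_8_25_16 in linarith)
  have t_27_17: "F 27 17 = TT v 27 17" by (simp add: v_def; use e_3_13_12 e_6_8_5 e_6_27_23 e_8_12_6 in linarith)
  have t_27_18: "F 27 18 = TT v 27 18" by (simp add: v_def; use e_6_27_24 in linarith)
  have t_28_0: "F 28 0 = TT v 28 0" by (simp add: v_def; use e_5_24_6 e_3_28_3 in linarith)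
  have t_28_1: "F 28 (Suc 0) = TT v 28 (Suc 0)" by (simp add: v_def; use e_3_5_25 e_6_28_6 in linarith)
  have t_28_14: "F 28 14 = TT v 28 14" by (simp add: v_def; use e_3_8_17 e_8_26_14 in linarith)
  have t_28_15: "F 28 15 = TT v 28 15" by (simp add: v_def; use e_8_26_15 in linarith)
  have t_28_16: "F 28 16 = TT v 28 16" by (simp add: v_def; use e_3_8_18 e_8_26_16 in linarith)
  have t_28_17: "F 28 17 = TT v 28 17" by (simp add: v_def; use e_6_28_23 in linarith)
  have t_28_18: "F 28 18 = TT v 28 18" by (simp add: v_def; use e_3_13_12 e_8_12_6 e_6_8_5 e_6_28_24 in linarith)
  have sup: "\<forall>l. (31 \<le> l \<or> grd l \<noteq> 2) \<longrightarrow> v l = 0" by (auto simp: v_def)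
  have tg: "\<forall>i<31. \<forall>n<31. grd i < 0 \<longrightarrow> grd n = grd i + 2 \<longrightarrow> F i n = TT v i n"
    by (simp only: all31) (simp del: ev add: t_3_2 t_3_10 t_3_19 t_3_20 t_5_0 t_5_1 t_5_14 t_5_15 t_5_16 t_5_17 t_5_18 t_6_3 t_6_8 t_6_25 t_6_26 t_8_2 t_8_10 t_8_19 t_8_20 t_12_5 t_12_27 t_12_28 t_13_6 t_13_23 t_13_24 t_23_3 t_23_8 t_23_25 t_23_26 t_24_3 t_24_8 t_24_25 t_24_26 t_25_2 t_25_10 t_25_19 t_25_20 t_26_2 t_26_10 t_26_19 t_26_20 t_27_0 t_27_1 t_27_14 t_27_15 t_27_16 t_27_17 t_27_18 t_28_0 t_28_1 t_28_14 t_28_15 t_28_16 t_28_17 t_28_18)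
  show ?thesis unfolding dd using sup tg by blast
qed



lemma core_3:
  fixes F :: "nat \<Rightarrow> nat \<Rightarrow> real"
  assumes dd: "d = 3"
    and G0: "\<And>i k. i < 31 \<Longrightarrow> grd i < 0 \<Longrightarrow> k < 31 \<Longrightarrow> grd k \<noteq> grd i + d \<Longrightarrow> F i k = 0"
    and C: "\<And>i j k. i < 31 \<Longrightarrow> grd i < 0 \<Longrightarrow> j < 31 \<Longrightarrow> grd j < 0 \<Longrightarrow> k < 31 \<Longrightarrow> DD F i j k = 0"
  shows "\<exists>v. (\<forall>l. (31 \<le> l \<or> grd l \<noteq> d) \<longrightarrow> v l = 0) \<and>
      (\<forall>i<31. \<forall>n<31. grd i < 0 \<longrightarrow> grd n = grd i + d \<longrightarrow> F i n = TT v i n)"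
proof -
  have G: "\<And>i k. i < 31 \<Longrightarrow> grd i < 0 \<Longrightarrow> k < 31 \<Longrightarrow> grd k \<noteq> grd i + 3 \<Longrightarrow> F i k = 0"
    using G0 dd by blast
  define v where "v = (\<lambda>l::nat. if l = 7 then (-2) * F 3 4 else if l = 29 then (2) * F 3 21 else if l = 30 then (2) * F 3 22 else (0::real))"
  note ev = DD_def TT_def rs_def rs2_def trow_3 trow_5 trow_6 trow_8 trow_12 trow_13 trow_23 trow_24 trow_25 trow_26 trow_27 trow_28
  note [simp] = ev G algebra_simps
  note e_3_5_0 = C[of 3 5 0, simplified]
  note e_3_5_14 = C[of 3 5 14, simplified]
  note e_3_5_15 = C[of 3 5 15, simplified]
  note e_3_5_16 = C[of 3 5 16, simplified]
  note e_3_6_8 = C[of 3 6 8, simplified]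
  note e_3_8_2 = C[of 3 8 2, simplified]
  note e_3_8_19 = C[of 3 8 19, simplified]
  note e_3_8_20 = C[of 3 8 20, simplified]
  note e_3_13_6 = C[of 3 13 6, simplified]
  note e_3_13_23 = C[of 3 13 23, simplified]
  note e_3_13_24 = C[of 3 13 24, simplified]
  note e_3_23_3 = C[of 3 23 3, simplified]
  note e_3_23_25 = C[of 3 23 25, simplified]
  note e_3_23_26 = C[of 3 23 26, simplified]
  note e_3_24_3 = C[of 3 24 3, simplified]
  note e_3_24_25 = C[of 3 24 25, simplified]
  note e_3_24_26 = C[of 3 24 26, simplified]
  note e_3_25_10 = C[of 3 25 10, simplified]
  note e_3_26_10 = C[of 3 26 10, simplified]
  note e_3_27_14 = C[of 3 27 14, simplified]
  note e_3_27_15 = C[of 3 27 15, simplified]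
  note e_3_27_16 = C[of 3 27 16, simplified]
  note e_3_28_14 = C[of 3 28 14, simplified]
  note e_3_28_15 = C[of 3 28 15, simplified]
  note e_3_28_16 = C[of 3 28 16, simplified]
  note e_5_8_1 = C[of 5 8 1, simplified]
  note e_5_8_17 = C[of 5 8 17, simplified]
  note e_5_8_18 = C[of 5 8 18, simplified]
  note e_5_12_6 = C[of 5 12 6, simplified]
  note e_5_12_23 = C[of 5 12 23, simplified]
  note e_5_12_24 = C[of 5 12 24, simplified]
  note e_5_13_12 = C[of 5 13 12, simplified]
  note e_5_27_3 = C[of 5 27 3, simplified]
  note e_5_27_8 = C[of 5 27 8, simplified]
  note e_5_28_3 = C[of 5 28 3, simplified]
  note e_5_28_8 = C[of 5 28 8, simplified]
  note e_6_8_8 = C[of 6 8 8, simplified]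
  note e_6_23_6 = C[of 6 23 6, simplified]
  note e_6_24_6 = C[of 6 24 6, simplified]
  note e_6_25_3 = C[of 6 25 3, simplified]
  note e_6_26_3 = C[of 6 26 3, simplified]
  note e_8_25_19 = C[of 8 25 19, simplified]
  note e_8_26_20 = C[of 8 26 20, simplified]
  note e_12_27_23 = C[of 12 27 23, simplified]
  note e_12_27_24 = C[of 12 27 24, simplified]
  note e_12_28_23 = C[of 12 28 23, simplified]
  note e_12_28_24 = C[of 12 28 24, simplified]
  note e_13_25_24 = C[of 13 25 24, simplified]
  note e_13_26_23 = C[of 13 26 23, simplified]
  have t_3_4: "F 3 4 = TT v 3 4" by (simp add: v_def; linarith)
  have t_3_21: "F 3 21 = TT v 3 21" by (simp add: v_def; linarith)
  have t_3_22: "F 3 22 = TT v 3 22" by (simp add: v_def; linarith)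
  have t_5_2: "F 5 2 = TT v 5 2" by (simp add: v_def; use e_3_8_2 in linarith)
  have t_5_10: "F 5 10 = TT v 5 10" by (simp add: v_def; use e_5_13_12 in linarith)
  have t_5_19: "F 5 19 = TT v 5 19" by (simp add: v_def; use e_3_8_19 in linarith)
  have t_5_20: "F 5 20 = TT v 5 20" by (simp add: v_def; use e_3_8_20 in linarith)
  have t_6_0: "F 6 0 = TT v 6 0" by (simp add: v_def; use e_3_8_2 e_3_5_0 in linarith)
  have t_6_1: "F 6 (Suc 0) = TT v 6 (Suc 0)" by (simp add: v_def; use e_3_8_2 e_3_5_0 e_6_8_8 in linarith)
  have t_6_14: "F 6 14 = TT v 6 14" by (simp add: v_def; use e_3_5_14 in linarith)
  have t_6_15: "F 6 15 = TT v 6 15" by (simp add: v_def; use e_3_5_15 in linarith)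
  have t_6_16: "F 6 16 = TT v 6 16" by (simp add: v_def; use e_3_5_16 in linarith)
  have t_6_17: "F 6 17 = TT v 6 17" by (simp add: v_def; use e_3_26_10 e_6_26_3 in linarith)
  have t_6_18: "F 6 18 = TT v 6 18" by (simp add: v_def; use e_3_25_10 e_6_25_3 in linarith)
  have t_8_4: "F 8 4 = TT v 8 4" by (simp add: v_def; use e_5_8_1 in linarith)
  have t_8_21: "F 8 21 = TT v 8 21" by (simp add: v_def; use e_5_8_17 in linarith)
  have t_8_22: "F 8 22 = TT v 8 22" by (simp add: v_def; use e_5_8_18 in linarith)
  have t_12_3: "F 12 3 = TT v 12 3" by (simp add: v_def; use e_3_8_2 e_5_12_6 in linarith)
  have t_12_8: "F 12 8 = TT v 12 8" by (simp add: v_def; use e_3_6_8 in linarith)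
  have t_12_25: "F 12 25 = TT v 12 25" by (simp add: v_def; use e_3_8_19 e_5_12_23 in linarith)
  have t_12_26: "F 12 26 = TT v 12 26" by (simp add: v_def; use e_3_8_20 e_5_12_24 in linarith)
  have t_13_5: "F 13 5 = TT v 13 5" by (simp add: v_def; use e_3_13_6 in linarith)
  have t_13_27: "F 13 27 = TT v 13 27" by (simp add: v_def; use e_3_13_23 in linarith)
  have t_13_28: "F 13 28 = TT v 13 28" by (simp add: v_def; use e_3_13_24 in linarith)
  have t_23_0: "F 23 0 = TT v 23 0" by (simp add: v_def; use e_3_23_3 in linarith)
  have t_23_1: "F 23 (Suc 0) = TT v 23 (Suc 0)" by (simp add: v_def; use e_3_25_10 e_6_25_3 e_6_23_6 in linarith)
  have t_23_14: "F 23 14 = TT v 23 14" by (simp add: v_def; use e_3_27_14 in linarith)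
  have t_23_15: "F 23 15 = TT v 23 15" by (simp add: v_def; use e_3_27_15 in linarith)
  have t_23_16: "F 23 16 = TT v 23 16" by (simp add: v_def; use e_3_27_16 in linarith)
  have t_23_17: "F 23 17 = TT v 23 17" by (simp add: v_def; use e_3_23_25 in linarith)
  have t_23_18: "F 23 18 = TT v 23 18" by (simp add: v_def; use e_3_23_26 in linarith)
  have t_24_0: "F 24 0 = TT v 24 0" by (simp add: v_def; use e_3_24_3 in linarith)
  have t_24_1: "F 24 (Suc 0) = TT v 24 (Suc 0)" by (simp add: v_def; use e_3_26_10 e_6_26_3 e_6_24_6 in linarith)
  have t_24_14: "F 24 14 = TT v 24 14" by (simp add: v_def; use e_3_28_14 in linarith)
  have t_24_15: "F 24 15 = TT v 24 15" by (simp add: v_def; use e_3_28_15 in linarith)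
  have t_24_16: "F 24 16 = TT v 24 16" by (simp add: v_def; use e_3_28_16 in linarith)
  have t_24_17: "F 24 17 = TT v 24 17" by (simp add: v_def; use e_3_24_25 in linarith)
  have t_24_18: "F 24 18 = TT v 24 18" by (simp add: v_def; use e_3_24_26 in linarith)
  have t_25_4: "F 25 4 = TT v 25 4" by (simp add: v_def; use e_3_25_10 in linarith)
  have t_25_21: "F 25 21 = TT v 25 21" by (simp add: v_def; use e_3_8_2 e_8_25_19 e_12_27_23 e_5_12_6 in linarith)
  have t_25_22: "F 25 22 = TT v 25 22" by (simp add: v_def; use e_13_25_24 in linarith)
  have t_26_4: "F 26 4 = TT v 26 4" by (simp add: v_def; use e_3_26_10 in linarith)
  have t_26_21: "F 26 21 = TT v 26 21" by (simp add: v_def; use e_13_26_23 in linarith)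
  have t_26_22: "F 26 22 = TT v 26 22" by (simp add: v_def; use e_3_8_2 e_8_26_20 e_5_12_6 e_12_28_24 in linarith)
  have t_27_2: "F 27 2 = TT v 27 2" by (simp add: v_def; use e_3_8_20 e_5_27_8 in linarith)
  have t_27_10: "F 27 10 = TT v 27 10" by (simp add: v_def; use e_5_27_3 in linarith)
  have t_27_19: "F 27 19 = TT v 27 19" by (simp add: v_def; use e_3_8_2 e_12_27_23 e_5_12_6 in linarith)
  have t_27_20: "F 27 20 = TT v 27 20" by (simp add: v_def; use e_12_27_24 in linarith)
  have t_28_2: "F 28 2 = TT v 28 2" by (simp add: v_def; use e_3_8_19 e_5_28_8 in linarith)
  have t_28_10: "F 28 10 = TT v 28 10" by (simp add: v_def; use e_5_28_3 in linarith)
  have t_28_19: "F 28 19 = TT v 28 19" by (simp add: v_def; use e_12_28_23 in linarith)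
  have t_28_20: "F 28 20 = TT v 28 20" by (simp add: v_def; use e_3_8_2 e_5_12_6 e_12_28_24 in linarith)
  have sup: "\<forall>l. (31 \<le> l \<or> grd l \<noteq> 3) \<longrightarrow> v l = 0" by (auto simp: v_def)
  have tg: "\<forall>i<31. \<forall>n<31. grd i < 0 \<longrightarrow> grd n = grd i + 3 \<longrightarrow> F i n = TT v i n"
    by (simp only: all31) (simp del: ev add: t_3_4 t_3_21 t_3_22 t_5_2 t_5_10 t_5_19 t_5_20 t_6_0 t_6_1 t_6_14 t_6_15 t_6_16 t_6_17 t_6_18 t_8_4 t_8_21 t_8_22 t_12_3 t_12_8 t_12_25 t_12_26 t_13_5 t_13_27 t_13_28 t_23_0 t_23_1 t_23_14 t_23_15 t_23_16 t_23_17 t_23_18 t_24_0 t_24_1 t_24_14 t_24_15 t_24_16 t_24_17 t_24_18 t_25_4 t_25_21 t_25_22 t_26_4 t_26_21 t_26_22 t_27_2 t_27_10 t_27_19 t_27_20 t_28_2 t_28_10 t_28_19 t_28_20)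
  show ?thesis unfolding dd using sup tg by blast
qed



lemma core_4:
  fixes F :: "nat \<Rightarrow> nat \<Rightarrow> real"
  assumes dd: "d = 4"
    and G0: "\<And>i k. i < 31 \<Longrightarrow> grd i < 0 \<Longrightarrow> k < 31 \<Longrightarrow> grd k \<noteq> grd i + d \<Longrightarrow> F i k = 0"
    and C: "\<And>i j k. i < 31 \<Longrightarrow> grd i < 0 \<Longrightarrow> j < 31 \<Longrightarrow> grd j < 0 \<Longrightarrow> k < 31 \<Longrightarrow> DD F i j k = 0"
  shows "\<exists>v. (\<forall>l. (31 \<le> l \<or> grd l \<noteq> d) \<longrightarrow> v l = 0) \<and>
      (\<forall>i<31. \<forall>n<31. grd i < 0 \<longrightarrow> grd n = grd i + d \<longrightarrow> F i n = TT v i n)"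
proof -
  have G: "\<And>i k. i < 31 \<Longrightarrow> grd i < 0 \<Longrightarrow> k < 31 \<Longrightarrow> grd k \<noteq> grd i + 4 \<Longrightarrow> F i k = 0"
    using G0 dd by blast
  define v where "v = (\<lambda>l::nat. if l = 9 then (-1) * F 3 7 else (0::real))"
  note ev = DD_def TT_def rs_def rs2_def trow_3 trow_5 trow_6 trow_8 trow_12 trow_13 trow_23 trow_24 trow_25 trow_26 trow_27 trow_28
  note [simp] = ev G algebra_simps
  note e_3_5_2 = C[of 3 5 2, simplified]
  note e_3_5_10 = C[of 3 5 10, simplified]
  note e_3_6_14 = C[of 3 6 14, simplified]
  note e_3_6_15 = C[of 3 6 15, simplified]
  note e_3_6_16 = C[of 3 6 16, simplified]
  note e_3_12_3 = C[of 3 12 3, simplified]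
  note e_3_13_5 = C[of 3 13 5, simplified]
  note e_3_13_27 = C[of 3 13 27, simplified]
  note e_3_13_28 = C[of 3 13 28, simplified]
  note e_3_23_17 = C[of 3 23 17, simplified]
  note e_3_23_18 = C[of 3 23 18, simplified]
  note e_3_24_17 = C[of 3 24 17, simplified]
  note e_3_24_18 = C[of 3 24 18, simplified]
  note e_3_25_21 = C[of 3 25 21, simplified]
  note e_3_25_22 = C[of 3 25 22, simplified]
  note e_3_26_21 = C[of 3 26 21, simplified]
  note e_3_26_22 = C[of 3 26 22, simplified]
  note e_3_27_10 = C[of 3 27 10, simplified]
  note e_3_28_10 = C[of 3 28 10, simplified]
  note e_5_6_25 = C[of 5 6 25, simplified]
  note e_5_6_26 = C[of 5 6 26, simplified]
  note e_5_12_5 = C[of 5 12 5, simplified]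
  note e_5_12_27 = C[of 5 12 27, simplified]
  note e_5_12_28 = C[of 5 12 28, simplified]
  note e_5_13_6 = C[of 5 13 6, simplified]
  note e_5_23_8 = C[of 5 23 8, simplified]
  note e_5_23_25 = C[of 5 23 25, simplified]
  note e_5_24_8 = C[of 5 24 8, simplified]
  note e_5_27_14 = C[of 5 27 14, simplified]
  note e_5_27_15 = C[of 5 27 15, simplified]
  note e_5_27_18 = C[of 5 27 18, simplified]
  note e_5_28_17 = C[of 5 28 17, simplified]
  note e_6_8_1 = C[of 6 8 1, simplified]
  note e_6_8_17 = C[of 6 8 17, simplified]
  note e_6_8_18 = C[of 6 8 18, simplified]
  note e_6_25_14 = C[of 6 25 14, simplified]
  note e_6_25_15 = C[of 6 25 15, simplified]
  note e_6_27_3 = C[of 6 27 3, simplified]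
  note e_6_28_3 = C[of 6 28 3, simplified]
  note e_13_25_5 = C[of 13 25 5, simplified]
  note e_13_26_5 = C[of 13 26 5, simplified]
  note e_27_27_15 = C[of 27 27 15, simplified]
  note e_28_28_16 = C[of 28 28 16, simplified]
  have t_3_7: "F 3 7 = TT v 3 7" by (simp add: v_def; linarith)
  have t_3_29: "F 3 29 = TT v 3 29" by (simp add: v_def; use e_3_13_27 in linarith)
  have t_3_30: "F 3 30 = TT v 3 30" by (simp add: v_def; use e_3_13_28 in linarith)
  have t_5_4: "F 5 4 = TT v 5 4" by (simp add: v_def; use e_5_23_25 in linarith)
  have t_5_21: "F 5 21 = TT v 5 21" by (simp add: v_def; use e_5_27_15 in linarith)
  have t_5_22: "F 5 22 = TT v 5 22" by (simp add: v_def; use e_5_27_14 in linarith)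
  have t_6_2: "F 6 2 = TT v 6 2" by (simp add: v_def; use e_3_5_2 in linarith)
  have t_6_10: "F 6 10 = TT v 6 10" by (simp add: v_def; use e_3_5_10 e_5_23_25 in linarith)
  have t_6_19: "F 6 19 = TT v 6 19" by (simp add: v_def; use e_6_25_15 in linarith)
  have t_6_20: "F 6 20 = TT v 6 20" by (simp add: v_def; use e_6_25_14 in linarith)
  have t_8_7: "F 8 7 = TT v 8 7" by (simp add: v_def; use e_6_8_1 in linarith)
  have t_8_29: "F 8 29 = TT v 8 29" by (simp add: v_def; use e_6_8_17 in linarith)
  have t_8_30: "F 8 30 = TT v 8 30" by (simp add: v_def; use e_6_8_18 in linarith)
  have t_12_0: "F 12 0 = TT v 12 0" by (simp add: v_def; use e_3_12_3 in linarith)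
  have t_12_1: "F 12 (Suc 0) = TT v 12 (Suc 0)" by (simp add: v_def; use e_3_12_3 e_5_12_5 in linarith)
  have t_12_14: "F 12 14 = TT v 12 14" by (simp add: v_def; use e_3_6_14 in linarith)
  have t_12_15: "F 12 15 = TT v 12 15" by (simp add: v_def; use e_3_6_15 in linarith)
  have t_12_16: "F 12 16 = TT v 12 16" by (simp add: v_def; use e_3_6_16 in linarith)
  have t_12_17: "F 12 17 = TT v 12 17" by (simp add: v_def; use e_5_12_27 in linarith)
  have t_12_18: "F 12 18 = TT v 12 18" by (simp add: v_def; use e_5_12_28 in linarith)
  have t_13_3: "F 13 3 = TT v 13 3" by (simp add: v_def; use e_5_13_6 e_5_23_25 in linarith)
  have t_13_8: "F 13 8 = TT v 13 8" by (simp add: v_def; use e_3_13_5 in linarith)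
  have t_13_25: "F 13 25 = TT v 13 25" by (simp add: v_def; use e_5_6_25 e_5_27_15 in linarith)
  have t_13_26: "F 13 26 = TT v 13 26" by (simp add: v_def; use e_5_6_26 e_5_27_14 in linarith)
  have t_23_2: "F 23 2 = TT v 23 2" by (simp add: v_def; use e_5_23_8 in linarith)
  have t_23_10: "F 23 10 = TT v 23 10" by (simp add: v_def; use e_3_27_10 e_6_27_3 in linarith)
  have t_23_19: "F 23 19 = TT v 23 19" by (simp add: v_def; use e_3_23_17 in linarith)
  have t_23_20: "F 23 20 = TT v 23 20" by (simp add: v_def; use e_3_23_18 in linarith)
  have t_24_2: "F 24 2 = TT v 24 2" by (simp add: v_def; use e_5_24_8 in linarith)
  have t_24_10: "F 24 10 = TT v 24 10" by (simp add: v_def; use e_3_28_10 e_6_28_3 in linarith)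
  have t_24_19: "F 24 19 = TT v 24 19" by (simp add: v_def; use e_3_24_17 in linarith)
  have t_24_20: "F 24 20 = TT v 24 20" by (simp add: v_def; use e_3_24_18 in linarith)
  have t_25_7: "F 25 7 = TT v 25 7" by (simp add: v_def; use e_13_25_5 in linarith)
  have t_25_29: "F 25 29 = TT v 25 29" by (simp add: v_def; use e_3_25_21 in linarith)
  have t_25_30: "F 25 30 = TT v 25 30" by (simp add: v_def; use e_3_25_22 in linarith)
  have t_26_7: "F 26 7 = TT v 26 7" by (simp add: v_def; use e_13_26_5 in linarith)
  have t_26_29: "F 26 29 = TT v 26 29" by (simp add: v_def; use e_3_26_21 in linarith)
  have t_26_30: "F 26 30 = TT v 26 30" by (simp add: v_def; use e_3_26_22 in linarith)
  have t_27_4: "F 27 4 = TT v 27 4" by (simp add: v_def; use e_6_27_3 in linarith)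
  have t_27_21: "F 27 21 = TT v 27 21" by (simp add: v_def; use e_27_27_15 in linarith)
  have t_27_22: "F 27 22 = TT v 27 22" by (simp add: v_def; use e_5_27_18 in linarith)
  have t_28_4: "F 28 4 = TT v 28 4" by (simp add: v_def; use e_6_28_3 in linarith)
  have t_28_21: "F 28 21 = TT v 28 21" by (simp add: v_def; use e_5_28_17 in linarith)
  have t_28_22: "F 28 22 = TT v 28 22" by (simp add: v_def; use e_28_28_16 in linarith)
  have sup: "\<forall>l. (31 \<le> l \<or> grd l \<noteq> 4) \<longrightarrow> v l = 0" by (auto simp: v_def)
  have tg: "\<forall>i<31. \<forall>n<31. grd i < 0 \<longrightarrow> grd n = grd i + 4 \<longrightarrow> F i n = TT v i n"
    by (simp only: all31) (simp del: ev add: t_3_7 t_3_29 t_3_30 t_5_4 t_5_21 t_5_22 t_6_2 t_6_10 t_6_19 t_6_20 t_8_7 t_8_29 t_8_30 t_12_0 t_12_1 t_12_14 t_12_15 t_12_16 t_12_17 t_12_18 t_13_3 t_13_8 t_13_25 t_13_26 t_23_2 t_23_10 t_23_19 t_23_20 t_24_2 t_24_10 t_24_19 t_24_20 t_25_7 t_25_29 t_25_30 t_26_7 t_26_29 t_26_30 t_27_4 t_27_21 t_27_22 t_28_4 t_28_21 t_28_22)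
  show ?thesis unfolding dd using sup tg by blast
qed



lemma core_5:
  fixes F :: "nat \<Rightarrow> nat \<Rightarrow> real"
  assumes dd: "d = 5"
    and G0: "\<And>i k. i < 31 \<Longrightarrow> grd i < 0 \<Longrightarrow> k < 31 \<Longrightarrow> grd k \<noteq> grd i + d \<Longrightarrow> F i k = 0"
    and C: "\<And>i j k. i < 31 \<Longrightarrow> grd i < 0 \<Longrightarrow> j < 31 \<Longrightarrow> grd j < 0 \<Longrightarrow> k < 31 \<Longrightarrow> DD F i j k = 0"
  shows "\<exists>v. (\<forall>l. (31 \<le> l \<or> grd l \<noteq> d) \<longrightarrow> v l = 0) \<and>
      (\<forall>i<31. \<forall>n<31. grd i < 0 \<longrightarrow> grd n = grd i + d \<longrightarrow> F i n = TT v i n)"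
proof -
  have G: "\<And>i k. i < 31 \<Longrightarrow> grd i < 0 \<Longrightarrow> k < 31 \<Longrightarrow> grd k \<noteq> grd i + 5 \<Longrightarrow> F i k = 0"
    using G0 dd by blast
  define v where "v = (\<lambda>l::nat. if l = 11 then (-1) * F 5 7 else (0::real))"
  note ev = DD_def TT_def rs_def rs2_def trow_3 trow_5 trow_6 trow_8 trow_12 trow_13 trow_23 trow_24 trow_25 trow_26 trow_27 trow_28
  note [simp] = ev G algebra_simps
  note e_3_5_4 = C[of 3 5 4, simplified]
  note e_3_6_10 = C[of 3 6 10, simplified]
  note e_3_6_19 = C[of 3 6 19, simplified]
  note e_3_6_20 = C[of 3 6 20, simplified]
  note e_3_8_7 = C[of 3 8 7, simplified]
  note e_3_8_29 = C[of 3 8 29, simplified]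
  note e_3_8_30 = C[of 3 8 30, simplified]
  note e_3_13_3 = C[of 3 13 3, simplified]
  note e_3_13_8 = C[of 3 13 8, simplified]
  note e_3_13_25 = C[of 3 13 25, simplified]
  note e_3_13_26 = C[of 3 13 26, simplified]
  note e_3_23_10 = C[of 3 23 10, simplified]
  note e_3_24_10 = C[of 3 24 10, simplified]
  note e_3_25_7 = C[of 3 25 7, simplified]
  note e_3_26_7 = C[of 3 26 7, simplified]
  note e_3_27_21 = C[of 3 27 21, simplified]
  note e_3_28_22 = C[of 3 28 22, simplified]
  note e_5_6_14 = C[of 5 6 14, simplified]
  note e_5_6_15 = C[of 5 6 15, simplified]
  note e_5_6_16 = C[of 5 6 16, simplified]
  note e_5_12_8 = C[of 5 12 8, simplified]
  note e_5_23_17 = C[of 5 23 17, simplified]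
  note e_5_23_18 = C[of 5 23 18, simplified]
  note e_5_24_17 = C[of 5 24 17, simplified]
  note e_5_24_18 = C[of 5 24 18, simplified]
  note e_5_27_20 = C[of 5 27 20, simplified]
  note e_5_28_19 = C[of 5 28 19, simplified]
  note e_6_8_19 = C[of 6 8 19, simplified]
  note e_6_8_20 = C[of 6 8 20, simplified]
  note e_6_13_6 = C[of 6 13 6, simplified]
  note e_8_25_7 = C[of 8 25 7, simplified]
  note e_8_26_7 = C[of 8 26 7, simplified]
  have t_3_9: "F 3 9 = TT v 3 9" by (simp add: v_def; use e_3_13_8 in linarith)
  have t_5_7: "F 5 7 = TT v 5 7" by (simp add: v_def; linarith)
  have t_5_29: "F 5 29 = TT v 5 29" by (simp add: v_def; use e_3_8_29 in linarith)
  have t_5_30: "F 5 30 = TT v 5 30" by (simp add: v_def; use e_3_8_30 in linarith)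
  have t_6_4: "F 6 4 = TT v 6 4" by (simp add: v_def; use e_3_5_4 in linarith)
  have t_6_21: "F 6 21 = TT v 6 21" by (simp add: v_def; use e_6_8_19 in linarith)
  have t_6_22: "F 6 22 = TT v 6 22" by (simp add: v_def; use e_6_8_20 in linarith)
  have t_8_9: "F 8 9 = TT v 8 9" by (simp add: v_def; use e_3_8_7 in linarith)
  have t_12_2: "F 12 2 = TT v 12 2" by (simp add: v_def; use e_5_12_8 in linarith)
  have t_12_10: "F 12 10 = TT v 12 10" by (simp add: v_def; use e_3_5_4 e_3_6_10 in linarith)
  have t_12_19: "F 12 19 = TT v 12 19" by (simp add: v_def; use e_3_6_19 in linarith)
  have t_12_20: "F 12 20 = TT v 12 20" by (simp add: v_def; use e_3_6_20 in linarith)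
  have t_13_0: "F 13 0 = TT v 13 0" by (simp add: v_def; use e_3_13_3 in linarith)
  have t_13_1: "F 13 (Suc 0) = TT v 13 (Suc 0)" by (simp add: v_def; use e_3_5_4 e_6_13_6 in linarith)
  have t_13_14: "F 13 14 = TT v 13 14" by (simp add: v_def; use e_5_6_14 in linarith)
  have t_13_15: "F 13 15 = TT v 13 15" by (simp add: v_def; use e_5_6_15 in linarith)
  have t_13_16: "F 13 16 = TT v 13 16" by (simp add: v_def; use e_5_6_16 in linarith)
  have t_13_17: "F 13 17 = TT v 13 17" by (simp add: v_def; use e_3_13_25 in linarith)
  have t_13_18: "F 13 18 = TT v 13 18" by (simp add: v_def; use e_3_13_26 in linarith)
  have t_23_4: "F 23 4 = TT v 23 4" by (simp add: v_def; use e_3_23_10 in linarith)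
  have t_23_21: "F 23 21 = TT v 23 21" by (simp add: v_def; use e_5_23_17 in linarith)
  have t_23_22: "F 23 22 = TT v 23 22" by (simp add: v_def; use e_5_23_18 in linarith)
  have t_24_4: "F 24 4 = TT v 24 4" by (simp add: v_def; use e_3_24_10 in linarith)
  have t_24_21: "F 24 21 = TT v 24 21" by (simp add: v_def; use e_5_24_17 in linarith)
  have t_24_22: "F 24 22 = TT v 24 22" by (simp add: v_def; use e_5_24_18 in linarith)
  have t_25_9: "F 25 9 = TT v 25 9" by (simp add: v_def; use e_3_25_7 in linarith)
  have t_26_9: "F 26 9 = TT v 26 9" by (simp add: v_def; use e_3_26_7 in linarith)
  have t_27_7: "F 27 7 = TT v 27 7" by (simp add: v_def; use e_8_25_7 in linarith)
  have t_27_29: "F 27 29 = TT v 27 29" by (simp add: v_def; use e_5_23_17 e_3_27_21 in linarith)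
  have t_27_30: "F 27 30 = TT v 27 30" by (simp add: v_def; use e_5_27_20 in linarith)
  have t_28_7: "F 28 7 = TT v 28 7" by (simp add: v_def; use e_8_26_7 in linarith)
  have t_28_29: "F 28 29 = TT v 28 29" by (simp add: v_def; use e_5_28_19 in linarith)
  have t_28_30: "F 28 30 = TT v 28 30" by (simp add: v_def; use e_5_24_18 e_3_28_22 in linarith)
  have sup: "\<forall>l. (31 \<le> l \<or> grd l \<noteq> 5) \<longrightarrow> v l = 0" by (auto simp: v_def)
  have tg: "\<forall>i<31. \<forall>n<31. grd i < 0 \<longrightarrow> grd n = grd i + 5 \<longrightarrow> F i n = TT v i n"
    by (simp only: all31) (simp del: ev add: t_3_9 t_5_7 t_5_29 t_5_30 t_6_4 t_6_21 t_6_22 t_8_9 t_12_2 t_12_10 t_12_19 t_12_20 t_13_0 t_13_1 t_13_14 t_13_15 t_13_16 t_13_17 t_13_18 t_23_4 t_23_21 t_23_22 t_24_4 t_24_21 t_24_22 t_25_9 t_26_9 t_27_7 t_27_29 t_27_30 t_28_7 t_28_29 t_28_30)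
  show ?thesis unfolding dd using sup tg by blast
qed



lemma core_6:
  fixes F :: "nat \<Rightarrow> nat \<Rightarrow> real"
  assumes dd: "d = 6"
    and G0: "\<And>i k. i < 31 \<Longrightarrow> grd i < 0 \<Longrightarrow> k < 31 \<Longrightarrow> grd k \<noteq> grd i + d \<Longrightarrow> F i k = 0"
    and C: "\<And>i j k. i < 31 \<Longrightarrow> grd i < 0 \<Longrightarrow> j < 31 \<Longrightarrow> grd j < 0 \<Longrightarrow> k < 31 \<Longrightarrow> DD F i j k = 0"
  shows "\<exists>v. (\<forall>l. (31 \<le> l \<or> grd l \<noteq> d) \<longrightarrow> v l = 0) \<and>
      (\<forall>i<31. \<forall>n<31. grd i < 0 \<longrightarrow> grd n = grd i + d \<longrightarrow> F i n = TT v i n)"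
proof -
  have G: "\<And>i k. i < 31 \<Longrightarrow> grd i < 0 \<Longrightarrow> k < 31 \<Longrightarrow> grd k \<noteq> grd i + 6 \<Longrightarrow> F i k = 0"
    using G0 dd by blast
  define v where "v = (\<lambda>l::nat. (0::real))"
  note ev = DD_def TT_def rs_def rs2_def trow_3 trow_5 trow_6 trow_8 trow_12 trow_13 trow_23 trow_24 trow_25 trow_26 trow_27 trow_28
  note [simp] = ev G algebra_simps
  note e_3_5_29 = C[of 3 5 29, simplified]
  note e_3_5_30 = C[of 3 5 30, simplified]
  note e_3_8_9 = C[of 3 8 9, simplified]
  note e_3_12_10 = C[of 3 12 10, simplified]
  note e_3_13_0 = C[of 3 13 0, simplified]
  note e_3_13_17 = C[of 3 13 17, simplified]
  note e_3_13_18 = C[of 3 13 18, simplified]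
  note e_3_23_4 = C[of 3 23 4, simplified]
  note e_3_23_22 = C[of 3 23 22, simplified]
  note e_3_24_4 = C[of 3 24 4, simplified]
  note e_3_24_21 = C[of 3 24 21, simplified]
  note e_3_27_7 = C[of 3 27 7, simplified]
  note e_3_28_7 = C[of 3 28 7, simplified]
  note e_5_6_10 = C[of 5 6 10, simplified]
  note e_5_8_7 = C[of 5 8 7, simplified]
  note e_5_12_17 = C[of 5 12 17, simplified]
  note e_5_12_18 = C[of 5 12 18, simplified]
  note e_5_25_7 = C[of 5 25 7, simplified]
  note e_5_26_7 = C[of 5 26 7, simplified]
  note e_6_25_21 = C[of 6 25 21, simplified]
  note e_12_27_17 = C[of 12 27 17, simplified]
  note e_23_23_15 = C[of 23 23 15, simplified]
  note e_24_24_16 = C[of 24 24 16, simplified]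
  have t_3_11: "F 3 11 = TT v 3 11" by (simp add: v_def; use e_3_12_10 e_12_27_17 in linarith)
  have t_5_9: "F 5 9 = TT v 5 9" by (simp add: v_def; use e_3_12_10 e_12_27_17 e_3_8_9 in linarith)
  have t_6_7: "F 6 7 = TT v 6 7" by (simp add: v_def; use e_6_25_21 in linarith)
  have t_6_29: "F 6 29 = TT v 6 29" by (simp add: v_def; use e_3_5_29 in linarith)
  have t_6_30: "F 6 30 = TT v 6 30" by (simp add: v_def; use e_3_5_30 in linarith)
  have t_8_11: "F 8 11 = TT v 8 11" by (simp add: v_def; use e_5_8_7 in linarith)
  have t_12_4: "F 12 4 = TT v 12 4" by (simp add: v_def; use e_12_27_17 in linarith)
  have t_12_21: "F 12 21 = TT v 12 21" by (simp add: v_def; use e_5_12_17 in linarith)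
  have t_12_22: "F 12 22 = TT v 12 22" by (simp add: v_def; use e_5_12_18 in linarith)
  have t_13_2: "F 13 2 = TT v 13 2" by (simp add: v_def; use e_3_13_0 in linarith)
  have t_13_10: "F 13 10 = TT v 13 10" by (simp add: v_def; use e_5_6_10 in linarith)
  have t_13_19: "F 13 19 = TT v 13 19" by (simp add: v_def; use e_3_13_17 in linarith)
  have t_13_20: "F 13 20 = TT v 13 20" by (simp add: v_def; use e_3_13_18 in linarith)
  have t_23_7: "F 23 7 = TT v 23 7" by (simp add: v_def; use e_3_23_4 in linarith)
  have t_23_29: "F 23 29 = TT v 23 29" by (simp add: v_def; use e_23_23_15 in linarith)
  have t_23_30: "F 23 30 = TT v 23 30" by (simp add: v_def; use e_3_23_22 in linarith)
  have t_24_7: "F 24 7 = TT v 24 7" by (simp add: v_def; use e_3_24_4 in linarith)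
  have t_24_29: "F 24 29 = TT v 24 29" by (simp add: v_def; use e_3_24_21 in linarith)
  have t_24_30: "F 24 30 = TT v 24 30" by (simp add: v_def; use e_24_24_16 in linarith)
  have t_25_11: "F 25 11 = TT v 25 11" by (simp add: v_def; use e_5_25_7 e_3_23_4 in linarith)
  have t_26_11: "F 26 11 = TT v 26 11" by (simp add: v_def; use e_5_26_7 e_3_24_4 in linarith)
  have t_27_9: "F 27 9 = TT v 27 9" by (simp add: v_def; use e_3_27_7 e_3_23_4 in linarith)
  have t_28_9: "F 28 9 = TT v 28 9" by (simp add: v_def; use e_3_28_7 e_3_24_4 in linarith)
  have sup: "\<forall>l. (31 \<le> l \<or> grd l \<noteq> 6) \<longrightarrow> v l = 0" by (auto simp: v_def)
  have tg: "\<forall>i<31. \<forall>n<31. grd i < 0 \<longrightarrow> grd n = grd i + 6 \<longrightarrow> F i n = TT v i n"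
    by (simp only: all31) (simp del: ev add: t_3_11 t_5_9 t_6_7 t_6_29 t_6_30 t_8_11 t_12_4 t_12_21 t_12_22 t_13_2 t_13_10 t_13_19 t_13_20 t_23_7 t_23_29 t_23_30 t_24_7 t_24_29 t_24_30 t_25_11 t_26_11 t_27_9 t_28_9)
  show ?thesis unfolding dd using sup tg by blast
qed



lemma core_7:
  fixes F :: "nat \<Rightarrow> nat \<Rightarrow> real"
  assumes dd: "d = 7"
    and G0: "\<And>i k. i < 31 \<Longrightarrow> grd i < 0 \<Longrightarrow> k < 31 \<Longrightarrow> grd k \<noteq> grd i + d \<Longrightarrow> F i k = 0"
    and C: "\<And>i j k. i < 31 \<Longrightarrow> grd i < 0 \<Longrightarrow> j < 31 \<Longrightarrow> grd j < 0 \<Longrightarrow> k < 31 \<Longrightarrow> DD F i j k = 0"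
  shows "\<exists>v. (\<forall>l. (31 \<le> l \<or> grd l \<noteq> d) \<longrightarrow> v l = 0) \<and>
      (\<forall>i<31. \<forall>n<31. grd i < 0 \<longrightarrow> grd n = grd i + d \<longrightarrow> F i n = TT v i n)"
proof -
  have G: "\<And>i k. i < 31 \<Longrightarrow> grd i < 0 \<Longrightarrow> k < 31 \<Longrightarrow> grd k \<noteq> grd i + 7 \<Longrightarrow> F i k = 0"
    using G0 dd by blast
  define v where "v = (\<lambda>l::nat. (0::real))"
  note ev = DD_def TT_def rs_def rs2_def trow_3 trow_5 trow_6 trow_8 trow_12 trow_13 trow_23 trow_24 trow_25 trow_26 trow_27 trow_28
  note [simp] = ev G algebra_simps
  note e_3_5_9 = C[of 3 5 9, simplified]
  note e_3_6_29 = C[of 3 6 29, simplified]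
  note e_3_6_30 = C[of 3 6 30, simplified]
  note e_3_8_11 = C[of 3 8 11, simplified]
  note e_3_12_4 = C[of 3 12 4, simplified]
  note e_3_13_10 = C[of 3 13 10, simplified]
  note e_3_23_7 = C[of 3 23 7, simplified]
  note e_3_24_7 = C[of 3 24 7, simplified]
  note e_5_6_21 = C[of 5 6 21, simplified]
  note e_5_6_22 = C[of 5 6 22, simplified]
  note e_5_27_7 = C[of 5 27 7, simplified]
  note e_5_28_7 = C[of 5 28 7, simplified]
  have t_5_11: "F 5 11 = TT v 5 11" by (simp add: v_def; use e_3_8_11 in linarith)
  have t_6_9: "F 6 9 = TT v 6 9" by (simp add: v_def; use e_3_5_9 in linarith)
  have t_12_7: "F 12 7 = TT v 12 7" by (simp add: v_def; use e_3_12_4 in linarith)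
  have t_12_29: "F 12 29 = TT v 12 29" by (simp add: v_def; use e_3_6_29 in linarith)
  have t_12_30: "F 12 30 = TT v 12 30" by (simp add: v_def; use e_3_6_30 in linarith)
  have t_13_4: "F 13 4 = TT v 13 4" by (simp add: v_def; use e_3_13_10 in linarith)
  have t_13_21: "F 13 21 = TT v 13 21" by (simp add: v_def; use e_5_6_21 in linarith)
  have t_13_22: "F 13 22 = TT v 13 22" by (simp add: v_def; use e_5_6_22 in linarith)
  have t_23_9: "F 23 9 = TT v 23 9" by (simp add: v_def; use e_3_23_7 in linarith)
  have t_24_9: "F 24 9 = TT v 24 9" by (simp add: v_def; use e_3_24_7 in linarith)
  have t_27_11: "F 27 11 = TT v 27 11" by (simp add: v_def; use e_5_27_7 in linarith)
  have t_28_11: "F 28 11 = TT v 28 11" by (simp add: v_def; use e_5_28_7 in linarith)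
  have sup: "\<forall>l. (31 \<le> l \<or> grd l \<noteq> 7) \<longrightarrow> v l = 0" by (auto simp: v_def)
  have tg: "\<forall>i<31. \<forall>n<31. grd i < 0 \<longrightarrow> grd n = grd i + 7 \<longrightarrow> F i n = TT v i n"
    by (simp only: all31) (simp del: ev add: t_5_11 t_6_9 t_12_7 t_12_29 t_12_30 t_13_4 t_13_21 t_13_22 t_23_9 t_24_9 t_27_11 t_28_11)
  show ?thesis unfolding dd using sup tg by blast
qed



lemma core_8:
  fixes F :: "nat \<Rightarrow> nat \<Rightarrow> real"
  assumes dd: "d = 8"
    and G0: "\<And>i k. i < 31 \<Longrightarrow> grd i < 0 \<Longrightarrow> k < 31 \<Longrightarrow> grd k \<noteq> grd i + d \<Longrightarrow> F i k = 0"
    and C: "\<And>i j k. i < 31 \<Longrightarrow> grd i < 0 \<Longrightarrow> j < 31 \<Longrightarrow> grd j < 0 \<Longrightarrow> k < 31 \<Longrightarrow> DD F i j k = 0"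
  shows "\<exists>v. (\<forall>l. (31 \<le> l \<or> grd l \<noteq> d) \<longrightarrow> v l = 0) \<and>
      (\<forall>i<31. \<forall>n<31. grd i < 0 \<longrightarrow> grd n = grd i + d \<longrightarrow> F i n = TT v i n)"
proof -
  have G: "\<And>i k. i < 31 \<Longrightarrow> grd i < 0 \<Longrightarrow> k < 31 \<Longrightarrow> grd k \<noteq> grd i + 8 \<Longrightarrow> F i k = 0"
    using G0 dd by blast
  define v where "v = (\<lambda>l::nat. (0::real))"
  note ev = DD_def TT_def rs_def rs2_def trow_3 trow_5 trow_6 trow_8 trow_12 trow_13 trow_23 trow_24 trow_25 trow_26 trow_27 trow_28
  note [simp] = ev G algebra_simps
  note e_3_5_11 = C[of 3 5 11, simplified]
  note e_3_6_9 = C[of 3 6 9, simplified]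
  note e_3_13_4 = C[of 3 13 4, simplified]
  note e_3_13_21 = C[of 3 13 21, simplified]
  note e_3_13_22 = C[of 3 13 22, simplified]
  note e_3_27_11 = C[of 3 27 11, simplified]
  note e_3_28_11 = C[of 3 28 11, simplified]
  have t_6_11: "F 6 11 = TT v 6 11" by (simp add: v_def; use e_3_5_11 in linarith)
  have t_12_9: "F 12 9 = TT v 12 9" by (simp add: v_def; use e_3_6_9 in linarith)
  have t_13_7: "F 13 7 = TT v 13 7" by (simp add: v_def; use e_3_13_4 in linarith)
  have t_13_29: "F 13 29 = TT v 13 29" by (simp add: v_def; use e_3_13_21 in linarith)
  have t_13_30: "F 13 30 = TT v 13 30" by (simp add: v_def; use e_3_13_22 in linarith)
  have t_23_11: "F 23 11 = TT v 23 11" by (simp add: v_def; use e_3_27_11 in linarith)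
  have t_24_11: "F 24 11 = TT v 24 11" by (simp add: v_def; use e_3_28_11 in linarith)
  have sup: "\<forall>l. (31 \<le> l \<or> grd l \<noteq> 8) \<longrightarrow> v l = 0" by (auto simp: v_def)
  have tg: "\<forall>i<31. \<forall>n<31. grd i < 0 \<longrightarrow> grd n = grd i + 8 \<longrightarrow> F i n = TT v i n"
    by (simp only: all31) (simp del: ev add: t_6_11 t_12_9 t_13_7 t_13_29 t_13_30 t_23_11 t_24_11)
  show ?thesis unfolding dd using sup tg by blast
qed



lemma core_9:
  fixes F :: "nat \<Rightarrow> nat \<Rightarrow> real"
  assumes dd: "d = 9"
    and G0: "\<And>i k. i < 31 \<Longrightarrow> grd i < 0 \<Longrightarrow> k < 31 \<Longrightarrow> grd k \<noteq> grd i + d \<Longrightarrow> F i k = 0"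
    and C: "\<And>i j k. i < 31 \<Longrightarrow> grd i < 0 \<Longrightarrow> j < 31 \<Longrightarrow> grd j < 0 \<Longrightarrow> k < 31 \<Longrightarrow> DD F i j k = 0"
  shows "\<exists>v. (\<forall>l. (31 \<le> l \<or> grd l \<noteq> d) \<longrightarrow> v l = 0) \<and>
      (\<forall>i<31. \<forall>n<31. grd i < 0 \<longrightarrow> grd n = grd i + d \<longrightarrow> F i n = TT v i n)"
proof -
  have G: "\<And>i k. i < 31 \<Longrightarrow> grd i < 0 \<Longrightarrow> k < 31 \<Longrightarrow> grd k \<noteq> grd i + 9 \<Longrightarrow> F i k = 0"
    using G0 dd by blast
  define v where "v = (\<lambda>l::nat. (0::real))"
  note ev = DD_def TT_def rs_def rs2_def trow_3 trow_5 trow_6 trow_8 trow_12 trow_13 trow_23 trow_24 trow_25 trow_26 trow_27 trow_28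
  note [simp] = ev G algebra_simps
  note e_3_6_11 = C[of 3 6 11, simplified]
  note e_3_13_7 = C[of 3 13 7, simplified]
  have t_12_11: "F 12 11 = TT v 12 11" by (simp add: v_def; use e_3_6_11 in linarith)
  have t_13_9: "F 13 9 = TT v 13 9" by (simp add: v_def; use e_3_13_7 in linarith)
  have sup: "\<forall>l. (31 \<le> l \<or> grd l \<noteq> 9) \<longrightarrow> v l = 0" by (auto simp: v_def)
  have tg: "\<forall>i<31. \<forall>n<31. grd i < 0 \<longrightarrow> grd n = grd i + 9 \<longrightarrow> F i n = TT v i n"
    by (simp only: all31) (simp del: ev add: t_12_11 t_13_9)
  show ?thesis unfolding dd using sup tg by blast
qed



lemma core_10:
  fixes F :: "nat \<Rightarrow> nat \<Rightarrow> real"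
  assumes dd: "d = 10"
    and G0: "\<And>i k. i < 31 \<Longrightarrow> grd i < 0 \<Longrightarrow> k < 31 \<Longrightarrow> grd k \<noteq> grd i + d \<Longrightarrow> F i k = 0"
    and C: "\<And>i j k. i < 31 \<Longrightarrow> grd i < 0 \<Longrightarrow> j < 31 \<Longrightarrow> grd j < 0 \<Longrightarrow> k < 31 \<Longrightarrow> DD F i j k = 0"
  shows "\<exists>v. (\<forall>l. (31 \<le> l \<or> grd l \<noteq> d) \<longrightarrow> v l = 0) \<and>
      (\<forall>i<31. \<forall>n<31. grd i < 0 \<longrightarrow> grd n = grd i + d \<longrightarrow> F i n = TT v i n)"
proof -
  have G: "\<And>i k. i < 31 \<Longrightarrow> grd i < 0 \<Longrightarrow> k < 31 \<Longrightarrow> grd k \<noteq> grd i + 10 \<Longrightarrow> F i k = 0"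
    using G0 dd by blast
  define v where "v = (\<lambda>l::nat. (0::real))"
  note ev = DD_def TT_def rs_def rs2_def trow_3 trow_5 trow_6 trow_8 trow_12 trow_13 trow_23 trow_24 trow_25 trow_26 trow_27 trow_28
  note [simp] = ev G algebra_simps
  note e_5_6_11 = C[of 5 6 11, simplified]
  have t_13_11: "F 13 11 = TT v 13 11" by (simp add: v_def; use e_5_6_11 in linarith)
  have sup: "\<forall>l. (31 \<le> l \<or> grd l \<noteq> 10) \<longrightarrow> v l = 0" by (auto simp: v_def)
  have tg: "\<forall>i<31. \<forall>n<31. grd i < 0 \<longrightarrow> grd n = grd i + 10 \<longrightarrow> F i n = TT v i n"
    by (simp only: all31) (simp del: ev add: t_13_11)
  show ?thesis unfolding dd using sup tg by blast
qed



lemma core: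
  fixes F :: "nat \<Rightarrow> nat \<Rightarrow> real"
  assumes d: "0 \<le> d"
    and G: "\<And>i k. i < 31 \<Longrightarrow> grd i < 0 \<Longrightarrow> k < 31 \<Longrightarrow> grd k \<noteq> grd i + d \<Longrightarrow> F i k = 0"
    and C: "\<And>i j k. i < 31 \<Longrightarrow> grd i < 0 \<Longrightarrow> j < 31 \<Longrightarrow> grd j < 0 \<Longrightarrow> k < 31 \<Longrightarrow> DD F i j k = 0"
  shows "\<exists>v. (\<forall>l. (31 \<le> l \<or> grd l \<noteq> d) \<longrightarrow> v l = 0) \<and>
      (\<forall>i<31. \<forall>n<31. grd i < 0 \<longrightarrow> grd n = grd i + d \<longrightarrow> F i n = TT v i n)"
proof -
  have "d = 0 \<or> d = 1 \<or> d = 2 \<or> d = 3 \<or> d = 4 \<or> d = 5 \<or> d = 6 \<or> d = 7 \<or> d = 8 \<or> d = 9 \<or> d = 10 \<or> 11 \<le> d" using d by presburger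
  then consider "d = 0" | "d = 1" | "d = 2" | "d = 3" | "d = 4" | "d = 5" | "d = 6" | "d = 7" | "d = 8" | "d = 9" | "d = 10" | "11 \<le> d" by blast
  then show ?thesis
  proof cases
    case 1
    show ?thesis by (rule core_0[OF 1 G C])
  next
    case 2
    show ?thesis by (rule core_1[OF 2 G C])
  next
    case 3
    show ?thesis by (rule core_2[OF 3 G C])
  next
    case 4
    show ?thesis by (rule core_3[OF 4 G C])
  next
    case 5
    show ?thesis by (rule core_4[OF 5 G C])
  next
    case 6
    show ?thesis by (rule core_5[OF 6 G C])
  next
    case 7
    show ?thesis by (rule core_6[OF 7 G C])
  next
    case 8
    show ?thesis by (rule core_7[OF 8 G C])
  next
    case 9
    show ?thesis by (rule core_8[OF 9 G C])
  next
    case 10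
    show ?thesis by (rule core_9[OF 10 G C])
  next
    case 11
    show ?thesis by (rule core_10[OF 11 G C])
  next
    case 12
    have "\<forall>i<31. \<forall>n<31. grd i < 0 \<longrightarrow> grd n = grd i + d \<longrightarrow> F i n = TT (\<lambda>_. 0) i n"
    proof (intro allI impI)
      fix i n :: nat assume "i < 31" "n < 31" "grd i < 0" "grd n = grd i + d"
      then show "F i n = TT (\<lambda>_. 0) i n" using grd_range[of i] grd_range[of n] 12 by linarith
    qed
    then have "(\<forall>l. (31 \<le> l \<or> grd l \<noteq> d) \<longrightarrow> (\<lambda>_::nat. 0::real) l = 0) \<and>
      (\<forall>i<31. \<forall>n<31. grd i < 0 \<longrightarrow> grd n = grd i + d \<longrightarrow> F i n = TT (\<lambda>_::nat. 0::real) i n)" by simp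
    then show ?thesis by (rule exI[of _ "\<lambda>_::nat. 0::real"])
  qed
qed


theorem corollaryA2:
  fixes d :: int
  assumes "0 \<le> d"
  shows "g3_Z1 d \<subseteq> g3_B1 d"
proof
  fix \<phi> assume phi: "\<phi> \<in> g3_Z1 d"
  have C1: "\<phi> \<in> g3_C1 d" using phi by (simp add: g3_Z1_def)
  have sp: "\<forall>x\<in>g3_m. \<phi> x \<in> g3_space" and gr: "\<forall>j<0. \<forall>x\<in>g3_grade j. \<phi> x \<in> g3_grade (j + d)"
    using C1 by (auto simp: g3_C1_def)
  define F where "F = (\<lambda>a b. \<phi> (ev a) b)"
  have G: "F i k = 0" if "i < 31" "grd i < 0" "k < 31" "grd k \<noteq> grd i + d" for i k :: nat
  proof -
    have "\<phi> (ev i) \<in> g3_grade (grd i + d)" using gr that(2) ev_grade[OF that(1)] by blast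
    then show ?thesis using that by (simp add: grade_iff F_def)
  qed
  have C: "DD F i j k = 0" if "i < 31" "grd i < 0" "j < 31" "grd j < 0" "k < 31" for i j k :: nat
    unfolding F_def using cocyc[OF phi that] .
  have "\<exists>v. (\<forall>l. (31 \<le> l \<or> grd l \<noteq> d) \<longrightarrow> v l = 0) \<and>
      (\<forall>i<31. \<forall>n<31. grd i < 0 \<longrightarrow> grd n = grd i + d \<longrightarrow> Re (F i n) = TT v i n)"
  proof (rule core[OF assms])
    fix i k :: nat assume "i < 31" "grd i < 0" "k < 31" "grd k \<noteq> grd i + d"
    then show "Re (F i k) = 0" using G by simp
  next
    fix i j k :: nat assume "i < 31" "grd i < 0" "j < 31" "grd j < 0" "k < 31"
    then have "Re (DD F i j k) = 0" using C by simp
    then show "DD (\<lambda>a b. Re (F a b)) i j k = 0" by (simp add: Re_DD)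
  qed
  then obtain vR where vR: "\<forall>l. (31 \<le> l \<or> grd l \<noteq> d) \<longrightarrow> vR l = 0"
      "\<forall>i<31. \<forall>n<31. grd i < 0 \<longrightarrow> grd n = grd i + d \<longrightarrow> Re (F i n) = TT vR i n" by blast
  have "\<exists>v. (\<forall>l. (31 \<le> l \<or> grd l \<noteq> d) \<longrightarrow> v l = 0) \<and>
      (\<forall>i<31. \<forall>n<31. grd i < 0 \<longrightarrow> grd n = grd i + d \<longrightarrow> Im (F i n) = TT v i n)"
  proof (rule core[OF assms])
    fix i k :: nat assume "i < 31" "grd i < 0" "k < 31" "grd k \<noteq> grd i + d"
    then show "Im (F i k) = 0" using G by simp
  next
    fix i j k :: nat assume "i < 31" "grd i < 0" "j < 31" "grd j < 0" "k < 31"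
    then have "Im (DD F i j k) = 0" using C by simp
    then show "DD (\<lambda>a b. Im (F a b)) i j k = 0" by (simp add: Im_DD)
  qed
  then obtain vI where vI: "\<forall>l. (31 \<le> l \<or> grd l \<noteq> d) \<longrightarrow> vI l = 0"
      "\<forall>i<31. \<forall>n<31. grd i < 0 \<longrightarrow> grd n = grd i + d \<longrightarrow> Im (F i n) = TT vI i n" by blast
  define v where "v = (\<lambda>l. Complex (vR l) (vI l))"
  have Rv: "(\<lambda>l. Re (v l)) = vR" and Iv: "(\<lambda>l. Im (v l)) = vI" by (simp_all add: v_def)
  have v0: "v l = 0" if "31 \<le> l \<or> grd l \<noteq> d" for l
  proof -
    have "vR l = 0" "vI l = 0" using vR(1) vI(1) that by blast+
    then show ?thesis by (simp add: v_def complex_eq_iff)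
  qed
  have vg: "v \<in> g3_grade d"
    unfolding grade_iff g3_space_def using v0 by auto
  have TTeq: "F i n = TT v i n" if "i \<in> Ms" "n < 31" for i n
  proof -
    have i: "i < 31" "grd i < 0" using that(1) by (auto simp: Ms_def)
    show ?thesis
    proof (cases "grd n = grd i + d")
      case True
      have "Re (F i n) = TT vR i n" using vR(2) i that(2) True by blast
      moreover have "Im (F i n) = TT vI i n" using vI(2) i that(2) True by blast
      ultimately show ?thesis by (simp add: complex_eq_iff Re_TT Im_TT Rv Iv)
    next
      case False
      have "F i n = 0" using G i that(2) False by blast
      moreover have "TT v i n = 0" by (rule TT_zero) (use v0 False in auto)
      ultimately show ?thesis by simp
    qed
  qed
  have "\<forall>a\<in>{0,1}. \<forall>x\<in>g3_m \<inter> g3_hom a. \<phi> x = g3_d0 v a x"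
  proof (intro ballI)
    fix a x assume a: "a \<in> {0::nat,1}" and x: "x \<in> g3_m \<inter> g3_hom a"
    show "\<phi> x = g3_d0 v a x"
    proof (rule ext)
      fix n show "\<phi> x n = g3_d0 v a x n"
      proof (cases "n < 31")
        case True
        have "\<phi> x n = (\<Sum>i\<in>Ms. x i * F i n)" using phi_lin[OF C1, of x] x by (simp add: F_def)
        also have "\<dots> = (\<Sum>i\<in>Ms. x i * TT v i n)" using TTeq True by simp
        also have "\<dots> = g3_d0 v a x n" using d0_expand[of x a n v] x True by simp
        finally show ?thesis .
      next
        case False
        have "\<phi> x \<in> g3_space" using sp x by blast
        then have "\<phi> x n = 0" using False by (simp add: g3_space_def)
        moreover have "g3_d0 v a x n = 0" using False by (simp add: g3_d0_def br_out)
        ultimately show ?thesis by simp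
      qed
    qed
  qed
  then show "\<phi> \<in> g3_B1 d" using C1 vg unfolding g3_B1_def by blast
qed

end
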